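(* Let $\alpha\in\mathbb{R}^n$ be a real vector and $\mu\in\mathbb{R}^n_+$ a non-negative vector such that the weights $\mu$ are monotone in the degrees $d$ (i.e., for all $i,j\in V$, $1<d_i<d_j$ implies $\mu_i\leqslant\mu_j$) and the matrix $\mathrm{diag}(\alpha)+\mu\mu^\top-A$ is positive semidefinite. Then for any tree $T\in\mathcal{T}(d)$ $$C_A(T)\geqslant LB(\alpha,\mu):=\frac{n-1}{2}\sum_{i,j=1}^n\mu_{ij}-\left(\frac{n-1}{2}\sum_{i=1}^n\alpha_i+\mu^\top P(H(\mu))\mu\right),$$ where $H(\mu)\in\mathcal{H}(\mu,d)$ is a Huffman tree for the weight sequence $\mu$ and degree sequence $d$. In other words, $LB(\alpha,\mu)$ is a lower bound for $\min_{T\in\mathcal{T}(d)}C_A(T)$.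
   Context: Let $V=\{1,\dots,n\}$ be a set of terminals and $A=(\mu_{ij})_{i,j=1}^n$ a symmetric non-negative flow matrix (the entries $\mu_{ij}$ of $A$ are distinct from the components $\mu_i$ of the weight vector $\mu$). Let $d=(d_1,\dots,d_n)$ be a generating degree sequence, i.e., a sequence of natural numbers with $\sum_{i=1}^n d_i=2(n-1)$, and let $\mathcal{T}(d)$ be the set of trees on vertex set $V$ in which vertex $i$ has degree $d_i$ for all $i$. For a tree $T$, $D(T)=(d_T(i,j))_{i,j=1}^n$ is its shortest-path distance matrix, and the cost is $C_A(T)=\sum_{\{i,j\}\subset V}\mu_{ij}d_T(i,j)=\frac12\mathrm{tr}\,D(T)A$ (the proof in the paper works with $C_A(T)=\mathrm{tr}\,D(T)A$). Let $J$ be the $n\times n$ all-ones matrix and $P(T):=\frac{n-1}{2}J-D(T)$; $P(T)$ is positive semidefinite for every tree $T$ of order $n$. For a weight vector $\mu$, the vertex-weighted Wiener index is $WI_\mu(T)=\mu^\top D(T)\mu$. $\mathcal{H}(\mu,d)$ denotes the set of trees produced by the generalized Huffman algorithm for weights $\mu$ and degrees $d$: starting from the set $W$ of pendent vertices ($d_i=1$) and the set $M$ of internal vertices, it repeatedly picks $m\in M$ of least current weight (ties broken by least degree), attaches to it the $d_m-1$ vertices of least weight in $W$, removes them from $W$, adds their weights to $\mu_m$, and moves $m$ from $M$ to $W$; when one internal vertex remains it is joined to all remaining vertices of $W$. It is known that if $\mu$ is monotone in $d$, every minimizer of $WI_\mu$ over $\mathcal{T}(d)$ is such a Huffman tree,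 and all Huffman trees in $\mathcal{H}(\mu,d)$ share the same value of $WI_\mu$. *)

theory Defs
  imports Complex_Main
begin

text \<open>Vertex set V = {1..n}; graphs are given by their edge sets (sets of 2-element sets).
Matrices are functions nat => nat => real, vectors nat => real, used on indices in {1..n}.\<close>

definition walk :: "nat set set \<Rightarrow> nat list \<Rightarrow> bool" where
  "walk E xs \<longleftrightarrow> (\<forall>k. Suc k < length xs \<longrightarrow> {xs ! k, xs ! Suc k} \<in> E)"

definition connects :: "nat set set \<Rightarrow> nat \<Rightarrow> nat \<Rightarrow> nat \<Rightarrow> bool" where
  "connects E i j k \<longleftrightarrow>
     (\<exists>xs. xs \<noteq> [] \<and> hd xs = i \<and> last xs = j \<and> length xs = Suc k \<and> walk E xs)"

definition tdist :: "nat set set \<Rightarrow> nat \<Rightarrow> nat \<Rightarrow> nat" where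
  "tdist E i j = (LEAST k. connects E i j k)"

definition is_tree :: "nat \<Rightarrow> nat set set \<Rightarrow> bool" where
  "is_tree n E \<longleftrightarrow>
     E \<subseteq> {{i, j} | i j. i \<in> {1..n} \<and> j \<in> {1..n} \<and> i \<noteq> j} \<and>
     card E = n - 1 \<and>
     (\<forall>i\<in>{1..n}. \<forall>j\<in>{1..n}. \<exists>k. connects E i j k)"

definition tree_deg :: "nat set set \<Rightarrow> nat \<Rightarrow> nat" where
  "tree_deg E i = card {e \<in> E. i \<in> e}"

definition generating_deg_seq :: "nat \<Rightarrow> (nat \<Rightarrow> nat) \<Rightarrow> bool" where
  "generating_deg_seq n d \<longleftrightarrow> (\<Sum>i=1..n. d i) = 2 * (n - 1)"

definition trees_deg :: "nat \<Rightarrow> (nat \<Rightarrow> nat) \<Rightarrow> nat set set set" where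
  "trees_deg n d = {E. is_tree n E \<and> (\<forall>i\<in>{1..n}. tree_deg E i = d i)}"

text \<open>Cost C_A(T) = tr D(T) A = sum over ordered pairs (the convention used in the proof).\<close>
definition cost :: "nat \<Rightarrow> (nat \<Rightarrow> nat \<Rightarrow> real) \<Rightarrow> nat set set \<Rightarrow> real" where
  "cost n A E = (\<Sum>i=1..n. \<Sum>j=1..n. A i j * real (tdist E i j))"

definition Pmat :: "nat \<Rightarrow> nat set set \<Rightarrow> nat \<Rightarrow> nat \<Rightarrow> real" where
  "Pmat n E i j = (real n - 1) / 2 - real (tdist E i j)"

definition psd_on :: "nat \<Rightarrow> (nat \<Rightarrow> nat \<Rightarrow> real) \<Rightarrow> bool" where
  "psd_on n M \<longleftrightarrow> (\<forall>x :: nat \<Rightarrow> real. (\<Sum>i=1..n. \<Sum>j=1..n. x i * M i j * x j) \<ge> 0)"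

definition quad_form :: "nat \<Rightarrow> (nat \<Rightarrow> real) \<Rightarrow> (nat \<Rightarrow> nat \<Rightarrow> real) \<Rightarrow> real" where
  "quad_form n x M = (\<Sum>i=1..n. \<Sum>j=1..n. x i * M i j * x j)"

text \<open>Generalized Huffman algorithm.  A state consists of the set W of available vertices,
the set M of unprocessed internal vertices, the current weights w and the edges built so far.\<close>
inductive huff_reach :: "nat \<Rightarrow> (nat \<Rightarrow> real) \<Rightarrow> (nat \<Rightarrow> nat)
    \<Rightarrow> nat set \<Rightarrow> nat set \<Rightarrow> (nat \<Rightarrow> real) \<Rightarrow> nat set set \<Rightarrow> bool"
  for n :: nat and mu :: "nat \<Rightarrow> real" and d :: "nat \<Rightarrow> nat" where
  init: "huff_reach n mu d {i \<in> {1..n}. d i = 1} {i \<in> {1..n}. d i \<ge> 2} mu {}"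
| step: "\<lbrakk> huff_reach n mu d W M w E; card M \<ge> 2; m \<in> M;
           \<forall>k\<in>M. w m \<le> w k;
           \<forall>k\<in>M. w k = w m \<longrightarrow> d m \<le> d k;
           S \<subseteq> W; card S = d m - 1;
           \<forall>s\<in>S. \<forall>x\<in>W - S. w s \<le> w x \<rbrakk>
         \<Longrightarrow> huff_reach n mu d (insert m (W - S)) (M - {m})
               (w(m := w m + sum w S)) (E \<union> (\<lambda>s. {m, s}) ` S)"

text \<open>When one internal vertex remains it is joined
to all remaining vertices of W; if there are no internal vertices at all (n = 2) the two
pendent vertices are joined.\<close>
definition huffman_trees :: "nat \<Rightarrow> (nat \<Rightarrow> real) \<Rightarrow> (nat \<Rightarrow> nat) \<Rightarrow> nat set set set" where
  "huffman_trees n mu d =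
     {E'. \<exists>W m w E. huff_reach n mu d W {m} w E \<and> E' = E \<union> (\<lambda>s. {m, s}) ` W}
   \<union> {E'. \<exists>W w E a b. huff_reach n mu d W {} w E \<and> W = {a, b} \<and> a \<noteq> b \<and> E' = insert {a, b} E}"

definition LB :: "nat \<Rightarrow> (nat \<Rightarrow> nat \<Rightarrow> real) \<Rightarrow> (nat \<Rightarrow> real) \<Rightarrow> (nat \<Rightarrow> real)
    \<Rightarrow> nat set set \<Rightarrow> real" where
  "LB n A alpha mu H =
     (real n - 1) / 2 * (\<Sum>i=1..n. \<Sum>j=1..n. A i j)
     - ((real n - 1) / 2 * (\<Sum>i=1..n. alpha i) + quad_form n mu (Pmat n H))"

end

theory Submission
  imports Defs
begin

lemma walk_Nil[simp]: "walk E []" by (simp add: walk_def)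
lemma walk_single[simp]: "walk E [x]" by (simp add: walk_def)

lemma walk_Cons2: "walk E (x # y # xs) \<longleftrightarrow> {x, y} \<in> E \<and> walk E (y # xs)"
proof
  assume h: "walk E (x # y # xs)"
  have "{x,y} \<in> E" using h[unfolded walk_def, rule_format, of 0] by simp
  moreover have "walk E (y # xs)" unfolding walk_def
  proof (intro allI impI)
    fix k assume "Suc k < length (y # xs)"
    then show "{(y # xs) ! k, (y # xs) ! Suc k} \<in> E"
      using h[unfolded walk_def, rule_format, of "Suc k"] by simp
  qed
  ultimately show "{x, y} \<in> E \<and> walk E (y # xs)" by simp
next
  assume h: "{x, y} \<in> E \<and> walk E (y # xs)"
  show "walk E (x # y # xs)" unfolding walk_def
  proof (intro allI impI)
    fix k assume k: "Suc k < length (x # y # xs)"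
    show "{(x # y # xs) ! k, (x # y # xs) ! Suc k} \<in> E"
    proof (cases k)
      case 0 then show ?thesis using h by simp
    next
      case (Suc k')
      then show ?thesis using h k unfolding walk_def by auto
    qed
  qed
qed

lemma walk_rev: "walk E xs \<Longrightarrow> walk E (rev xs)"
proof (induction xs rule: rev_induct)
  case Nil then show ?case by simp
next
  case (snoc x xs)
  show ?case
  proof (cases xs rule: rev_cases)
    case Nil then show ?thesis by simp
  next
    case (snoc ys y)
    have w: "walk E (ys @ [y, x])" using snoc.prems snoc by simp
    have e: "{y, x} \<in> E"
      using w[unfolded walk_def, rule_format, of "length ys"] by (simp add: nth_append)
    have "walk E (ys @ [y])" unfolding walk_def
    proof (intro allI impI)
      fix k assume "Suc k < length (ys @ [y])"
      then show "{(ys @ [y]) ! k, (ys @ [y]) ! Suc k} \<in> E"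
        using w[unfolded walk_def, rule_format, of k] by (simp add: nth_append split: if_splits)
    qed
    then have "walk E (rev (ys @ [y]))" using snoc.IH snoc by simp
    then have "walk E (y # rev ys)" by simp
    then have "walk E (x # y # rev ys)" using e by (simp add: walk_Cons2 insert_commute)
    then show ?thesis using snoc by simp
  qed
qed

lemma connects_refl: "connects E i i 0"
  unfolding connects_def by (rule exI[of _ "[i]"]) simp

lemma connects_sym: "connects E i j k \<Longrightarrow> connects E j i k"
  unfolding connects_def
  apply clarify
  subgoal for xs by (rule exI[of _ "rev xs"]) (simp add: walk_rev hd_rev last_rev)
  done

lemma connects_Cons: "{i, x} \<in> E \<Longrightarrow> connects E x j k \<Longrightarrow> connects E i j (Suc k)"
  unfolding connects_def
  apply clarify
  subgoal for xs
    apply (rule exI[of _ "i # xs"])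
    apply (cases xs) apply simp
    apply (auto simp: walk_Cons2)
    done
  done

lemma connects_0: "connects E i j 0 \<Longrightarrow> i = j"
  unfolding connects_def by (auto simp: length_Suc_conv)

lemma connects_SucD: "connects E i j (Suc k) \<Longrightarrow> \<exists>x. {i, x} \<in> E \<and> connects E x j k"
  unfolding connects_def
  apply clarify
  subgoal for xs
    apply (cases xs) apply simp
    subgoal for a ys
      apply (cases ys) apply simp
      subgoal for b zs
        apply (rule exI[of _ b])
        apply (auto simp: walk_Cons2)
        done
      done
    done
  done

lemma tdist_eqI: "connects E i j k \<Longrightarrow> (\<And>k'. connects E i j k' \<Longrightarrow> k \<le> k') \<Longrightarrow> tdist E i j = k"
  unfolding tdist_def by (rule Least_equality) auto

lemma tdist_conn: "connects E i j k \<Longrightarrow> connects E i j (tdist E i j)"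
  unfolding tdist_def by (rule LeastI)

lemma tdist_le: "connects E i j k \<Longrightarrow> tdist E i j \<le> k"
  unfolding tdist_def by (rule Least_le)

lemma tdist_self[simp]: "tdist E i i = 0"
  using tdist_le[OF connects_refl[of E i]] by simp

section \<open>Trees on general vertex sets and rooted representations\<close>

definition tree :: "nat set \<Rightarrow> nat set set \<Rightarrow> bool" where
  "tree V E \<longleftrightarrow> finite V \<and> E \<subseteq> {{i, j} | i j. i \<in> V \<and> j \<in> V \<and> i \<noteq> j} \<and>
     card E = card V - 1 \<and> (\<forall>i\<in>V. \<forall>j\<in>V. \<exists>k. connects E i j k)"

definition rooted :: "nat set \<Rightarrow> (nat \<Rightarrow> nat) \<Rightarrow> nat \<Rightarrow> (nat \<Rightarrow> nat set) \<Rightarrow> bool" where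
  "rooted V par r A \<longleftrightarrow> finite V \<and> r \<in> V \<and> A r = {} \<and> (\<forall>v\<in>V. A v \<subseteq> V) \<and>
     (\<forall>v\<in>V - {r}. par v \<in> V \<and> A v = insert v (A (par v)) \<and> v \<notin> A (par v))"

definition edges :: "nat set \<Rightarrow> (nat \<Rightarrow> nat) \<Rightarrow> nat \<Rightarrow> nat set set" where
  "edges V par r = (\<lambda>v. {v, par v}) ` (V - {r})"

definition pdeg :: "nat set \<Rightarrow> (nat \<Rightarrow> nat) \<Rightarrow> nat \<Rightarrow> nat \<Rightarrow> nat" where
  "pdeg V par r v = card {u \<in> V - {r}. par u = v} + (if v = r then 0 else 1)"

locale rt =
  fixes V par r A
  assumes R: "rooted V par r A"
begin

lemma finV[simp]: "finite V" using R by (simp add: rooted_def)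
lemma rV[simp]: "r \<in> V" using R by (simp add: rooted_def)
lemma Ar[simp]: "A r = {}" using R by (simp add: rooted_def)
lemma A_sub: "v \<in> V \<Longrightarrow> A v \<subseteq> V" using R by (simp add: rooted_def)
lemma finA[simp]: "v \<in> V \<Longrightarrow> finite (A v)" using A_sub finite_subset finV by blast
lemma parV: "v \<in> V \<Longrightarrow> v \<noteq> r \<Longrightarrow> par v \<in> V" using R by (simp add: rooted_def)
lemma A_rec: "v \<in> V \<Longrightarrow> v \<noteq> r \<Longrightarrow> A v = insert v (A (par v))" using R by (simp add: rooted_def)
lemma notin_Apar: "v \<in> V \<Longrightarrow> v \<noteq> r \<Longrightarrow> v \<notin> A (par v)" using R by (simp add: rooted_def)

definition h :: "nat \<Rightarrow> nat" where "h v = card (A v)"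

lemma h_r[simp]: "h r = 0" by (simp add: h_def)
lemma h_rec: "v \<in> V \<Longrightarrow> v \<noteq> r \<Longrightarrow> h v = Suc (h (par v))"
  unfolding h_def using A_rec notin_Apar parV finA by simp

lemma induct_h[consumes 1, case_names root step]:
  assumes "v \<in> V" and "P r" and "\<And>v. v \<in> V \<Longrightarrow> v \<noteq> r \<Longrightarrow> P (par v) \<Longrightarrow> P v"
  shows "P v"
proof -
  have "\<forall>v. v \<in> V \<and> h v = n \<longrightarrow> P v" for n
  proof (induction n)
    case 0
    then show ?case
    proof (intro allI impI)
      fix v assume "v \<in> V \<and> h v = 0"
      then show "P v" using assms h_rec[of v] by (cases "v = r") auto
    qed
  next
    case (Suc n)
    show ?case
    proof (intro allI impI)
      fix v assume v: "v \<in> V \<and> h v = Suc n"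
      then have "v \<noteq> r" by auto
      then have "h (par v) = n" "par v \<in> V" using v h_rec[of v] parV[of v] by auto
      then show "P v" using v \<open>v \<noteq> r\<close> Suc.IH assms(3)[of v] by blast
    qed
  qed
  then show ?thesis using assms(1) by blast
qed

lemma r_notin: "v \<in> V \<Longrightarrow> r \<notin> A v"
proof (induction v rule: induct_h)
  case root then show ?case by simp
next
  case (step v)
  have "A v = insert v (A (par v))" using A_rec step(1,2) by blast
  then show ?case using step(2,3) by auto
qed

lemma self_in: "v \<in> V \<Longrightarrow> v \<noteq> r \<Longrightarrow> v \<in> A v" using A_rec by simp

lemma A_sub': "v \<in> V \<Longrightarrow> A v \<subseteq> V - {r}" using A_sub r_notin by blast

lemma A_trans: "v \<in> V \<Longrightarrow> z \<in> A v \<Longrightarrow> A z \<subseteq> A v"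
proof (induction v rule: induct_h)
  case root then show ?case by simp
next
  case (step v)
  then show ?case using A_rec[of v] by auto
qed

lemma A_chain: "v \<in> V \<Longrightarrow> z1 \<in> A v \<Longrightarrow> z2 \<in> A v \<Longrightarrow> z1 \<in> A z2 \<or> z2 \<in> A z1 \<or> z1 = z2"
proof (induction v rule: induct_h)
  case root then show ?case by simp
next
  case (step v)
  have Av: "A v = insert v (A (par v))" using A_rec step by simp
  show ?case
  proof (cases "z1 = v")
    case True
    then show ?thesis using step Av by auto
  next
    case f1: False
    show ?thesis
    proof (cases "z2 = v")
      case True then show ?thesis using step Av by auto
    next
      case False then show ?thesis using f1 step Av by auto
    qed
  qed
qed

lemma h_mono: "v \<in> V \<Longrightarrow> z \<in> A v \<Longrightarrow> h z \<le> h v"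
  unfolding h_def using A_trans by (simp add: card_mono)

lemma h_strict: "v \<in> V \<Longrightarrow> z \<in> A v \<Longrightarrow> z \<noteq> v \<Longrightarrow> h z < h v"
proof (induction v rule: induct_h)
  case root then show ?case by simp
next
  case (step v)
  then have "z \<in> A (par v)" using A_rec[of v] by auto
  then have "h z \<le> h (par v)" using h_mono[of "par v" z] parV[of v] step by auto
  then show ?case using h_rec[of v] step by simp
qed

lemma A_inj: "u \<in> V \<Longrightarrow> v \<in> V \<Longrightarrow> A u = A v \<Longrightarrow> u = v"
proof (rule ccontr)
  assume u: "u \<in> V" and v: "v \<in> V" and e: "A u = A v" and ne: "u \<noteq> v"
  show False
  proof (cases "u = r")
    case True
    then have "A v = {}" using e by simp
    moreover have "v \<noteq> r" using True ne by simp
    ultimately show False using self_in v by auto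
  next
    case False
    then have "u \<in> A v" using self_in u e by auto
    then have "h u < h v" using h_strict v ne by auto
    then show False using e h_def by simp
  qed
qed

lemma child_exists: "v \<in> V \<Longrightarrow> z \<in> A v \<Longrightarrow> z \<noteq> v \<Longrightarrow> \<exists>u\<in>A v. u \<in> V \<and> u \<noteq> r \<and> par u = z"
proof (induction v rule: induct_h)
  case root then show ?case by simp
next
  case (step v)
  have Av: "A v = insert v (A (par v))" using A_rec step by simp
  then have z: "z \<in> A (par v)" using step by auto
  show ?case
  proof (cases "z = par v")
    case True then show ?thesis using step Av by auto
  next
    case False
    then obtain u where "u \<in> A (par v)" "u \<in> V" "u \<noteq> r" "par u = z"
      using step.IH z by auto
    then show ?thesis using Av by auto
  qed
qed

lemma top_exists: "v \<in> V \<Longrightarrow> v \<noteq> r \<Longrightarrow> \<exists>c\<in>A v. c \<in> V \<and> c \<noteq> r \<and> par c = r"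
proof (induction v rule: induct_h)
  case root then show ?case by simp
next
  case (step v)
  show ?case
  proof (cases "par v = r")
    case True then show ?thesis using step self_in by auto
  next
    case False
    then obtain c where "c \<in> A (par v)" "c \<in> V" "c \<noteq> r" "par c = r" using step by auto
    then show ?thesis using A_rec[of v] step by auto
  qed
qed

lemma par_ne: "v \<in> V \<Longrightarrow> v \<noteq> r \<Longrightarrow> par v \<noteq> v"
  using notin_Apar self_in by metis

lemma par_in_A: "v \<in> V \<Longrightarrow> v \<noteq> r \<Longrightarrow> par v \<noteq> r \<Longrightarrow> par v \<in> A v"
  using A_rec[of v] self_in[of "par v"] parV[of v] by auto

lemma h_par_lt: "v \<in> V \<Longrightarrow> v \<noteq> r \<Longrightarrow> h (par v) < h v" using h_rec by simp

lemma edge_inj: "inj_on (\<lambda>v. {v, par v}) (V - {r})"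
proof (rule inj_onI)
  fix u v assume u: "u \<in> V - {r}" and v: "v \<in> V - {r}" and e: "{u, par u} = {v, par v}"
  show "u = v"
  proof (rule ccontr)
    assume "u \<noteq> v"
    then have "u = par v" "v = par u" using e by (auto simp: doubleton_eq_iff)
    then have "h u = Suc (h v)" "h v = Suc (h u)" using h_rec[of u] h_rec[of v] u v by auto
    then show False by simp
  qed
qed

lemma card_edges: "card (edges V par r) = card V - 1"
  unfolding edges_def using card_image[OF edge_inj] by (simp add: card_Diff_singleton)

lemma edges_sub: "edges V par r \<subseteq> {{i, j} | i j. i \<in> V \<and> j \<in> V \<and> i \<noteq> j}"
  unfolding edges_def using parV par_ne by fastforce

lemma finite_edges: "finite (edges V par r)" unfolding edges_def by simp

end


definition sd :: "'a set \<Rightarrow> 'a set \<Rightarrow> 'a set" where "sd X Y = (X - Y) \<union> (Y - X)"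

lemma card_sd_tri:
  assumes "finite X" "finite Y" "finite Z"
  shows "card (sd X Z) \<le> card (sd X Y) + card (sd Y Z)"
proof -
  have "sd X Z \<subseteq> sd X Y \<union> sd Y Z" unfolding sd_def by blast
  then have "card (sd X Z) \<le> card (sd X Y \<union> sd Y Z)"
    by (rule card_mono[rotated]) (simp add: sd_def assms)
  also have "\<dots> \<le> card (sd X Y) + card (sd Y Z)" by (rule card_Un_le)
  finally show ?thesis .
qed

context rt
begin

lemma edge_mem: "e \<in> edges V par r \<Longrightarrow> e = {x, y} \<Longrightarrow> x \<in> V \<and> y \<in> V \<and> card (sd (A x) (A y)) = 1"
proof -
  assume e: "e \<in> edges V par r" and xy: "e = {x, y}"
  then obtain v where v: "v \<in> V" "v \<noteq> r" "e = {v, par v}" unfolding edges_def by auto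
  have sd1: "sd (A v) (A (par v)) = {v}" using A_rec[of v] notin_Apar[of v] v unfolding sd_def by auto
  have sd2: "sd (A (par v)) (A v) = {v}" using sd1 unfolding sd_def by auto
  from xy v have "(x = v \<and> y = par v) \<or> (x = par v \<and> y = v)" by (auto simp: doubleton_eq_iff)
  then show ?thesis using sd1 sd2 v parV[of v] by auto
qed

lemma conn_lower: "connects (edges V par r) i j k \<Longrightarrow> i \<in> V \<Longrightarrow> card (sd (A i) (A j)) \<le> k \<and> j \<in> V"
proof (induction k arbitrary: i)
  case 0
  then have "i = j" using connects_0 by blast
  then show ?case using 0 by (simp add: sd_def)
next
  case (Suc k)
  obtain x where x: "{i, x} \<in> edges V par r" "connects (edges V par r) x j k"
    using connects_SucD[OF Suc.prems(1)] by blast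
  have xi: "x \<in> V" "card (sd (A i) (A x)) = 1" using edge_mem[OF x(1), of i x] by auto
  have IH: "card (sd (A x) (A j)) \<le> k" "j \<in> V" using Suc.IH[OF x(2) xi(1)] by auto
  have "card (sd (A i) (A j)) \<le> card (sd (A i) (A x)) + card (sd (A x) (A j))"
    by (rule card_sd_tri) (use Suc.prems xi IH in auto)
  then show ?case using xi IH by simp
qed

lemma edge_in: "v \<in> V \<Longrightarrow> v \<noteq> r \<Longrightarrow> {v, par v} \<in> edges V par r"
  unfolding edges_def by auto

lemma conn_upper: "i \<in> V \<Longrightarrow> j \<in> V \<Longrightarrow> card (sd (A i) (A j)) = n \<Longrightarrow> connects (edges V par r) i j n"
proof (induction n arbitrary: i j)
  case 0
  then have "A i = A j" using finA unfolding sd_def by auto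
  then have "i = j" using A_inj 0 by blast
  then show ?case using connects_refl by simp
next
  case (Suc n)
  show ?case
  proof (cases "i \<noteq> r \<and> i \<notin> A j")
    case True
    have Ai: "A i = insert i (A (par i))" "i \<notin> A (par i)" using A_rec[of i] notin_Apar[of i] True Suc.prems by auto
    then have "sd (A i) (A j) = insert i (sd (A (par i)) (A j))" "i \<notin> sd (A (par i)) (A j)"
      using True unfolding sd_def by auto
    then have "card (sd (A (par i)) (A j)) = n"
      using Suc.prems finA parV[of i] True unfolding sd_def by (auto simp: card_insert_if)
    then have "connects (edges V par r) (par i) j n" using Suc.IH parV[of i] True Suc.prems by auto
    then show ?thesis using connects_Cons edge_in[of i] True Suc.prems by blast
  next
    case F1: False
    show ?thesis
    proof (cases "j \<noteq> r \<and> j \<notin> A i")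
      case True
      have Aj: "A j = insert j (A (par j))" "j \<notin> A (par j)" using A_rec[of j] notin_Apar[of j] True Suc.prems by auto
      then have "sd (A j) (A i) = insert j (sd (A (par j)) (A i))" "j \<notin> sd (A (par j)) (A i)"
        using True unfolding sd_def by auto
      moreover have "sd (A j) (A i) = sd (A i) (A j)" unfolding sd_def by auto
      ultimately have "card (sd (A (par j)) (A i)) = n"
        using Suc.prems finA parV[of j] True unfolding sd_def by (auto simp: card_insert_if)
      then have "card (sd (A i) (A (par j))) = n" unfolding sd_def by (simp add: Un_commute)
      then have "connects (edges V par r) i (par j) n" using Suc.IH parV[of j] True Suc.prems by auto
      then have "connects (edges V par r) (par j) i n" by (rule connects_sym)
      then have "connects (edges V par r) j i (Suc n)" using connects_Cons edge_in[of j] True Suc.prems by blast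
      then show ?thesis by (rule connects_sym)
    next
      case False
      have "A i = A j"
      proof -
        have c1: "i = r \<or> i \<in> A j" using F1 by auto
        have c2: "j = r \<or> j \<in> A i" using False by auto
        show ?thesis
          using c1 c2 A_trans[of j i] A_trans[of i j] Suc.prems by auto
      qed
      then show ?thesis using Suc.prems unfolding sd_def by simp
    qed
  qed
qed

lemma tdist_rt:
  assumes "i \<in> V" "j \<in> V" shows "tdist (edges V par r) i j = card (sd (A i) (A j))"
proof (rule tdist_eqI)
  show "connects (edges V par r) i j (card (sd (A i) (A j)))" using conn_upper assms by blast
  fix k' assume "connects (edges V par r) i j k'"
  then show "card (sd (A i) (A j)) \<le> k'" using conn_lower assms by blast
qed

lemma tree_edges: "tree V (edges V par r)"
  unfolding tree_def
proof (intro conjI ballI)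
  fix i j assume "i \<in> V" "j \<in> V"
  then show "\<exists>k. connects (edges V par r) i j k" using conn_upper by blast
qed (auto simp only: card_edges edges_sub finV)

lemma tree_deg_rt: "v \<in> V \<Longrightarrow> tree_deg (edges V par r) v = pdeg V par r v"
proof -
  assume v: "v \<in> V"
  have "{e \<in> edges V par r. v \<in> e} = (\<lambda>u. {u, par u}) ` {u \<in> V - {r}. u = v \<or> par u = v}"
    unfolding edges_def by auto
  moreover have "inj_on (\<lambda>u. {u, par u}) {u \<in> V - {r}. u = v \<or> par u = v}"
    by (rule inj_on_subset[OF edge_inj]) auto
  ultimately have "tree_deg (edges V par r) v = card {u \<in> V - {r}. u = v \<or> par u = v}"
    unfolding tree_deg_def by (simp only: card_image)
  also have "{u \<in> V - {r}. u = v \<or> par u = v} = {u \<in> V - {r}. par u = v} \<union> (if v = r then {} else {v})"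
    using v by auto
  also have "card \<dots> = card {u \<in> V - {r}. par u = v} + (if v = r then 0 else 1)"
    using par_ne[of v] v by (auto simp: card_insert_if)
  finally show ?thesis unfolding pdeg_def .
qed

end

lemma tree_rooted:
  assumes T: "tree V E" and rV: "r \<in> V"
  shows "\<exists>par A. rooted V par r A \<and> E = edges V par r"
proof -
  define \<delta> where "\<delta> v = tdist E v r" for v
  have fin: "finite V" using T tree_def by auto
  have Esub: "E \<subseteq> {{i, j} | i j. i \<in> V \<and> j \<in> V \<and> i \<noteq> j}" using T tree_def by auto
  have conn: "connects E v r (\<delta> v)" if "v \<in> V" for v
    using T rV that unfolding tree_def \<delta>_def by (meson tdist_conn)
  have dmin: "\<delta> v \<le> k" if "connects E v r k" for v k using tdist_le that \<delta>_def by simp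
  have dr: "\<delta> r = 0" by (simp add: \<delta>_def)
  have ex: "\<exists>x. {v, x} \<in> E \<and> x \<in> V \<and> Suc (\<delta> x) = \<delta> v" if v: "v \<in> V" "v \<noteq> r" for v
  proof -
    have "\<delta> v \<noteq> 0" using conn[OF v(1)] connects_0[of E v r] v by metis
    then obtain k where k: "\<delta> v = Suc k" by (cases "\<delta> v") auto
    then obtain x where x: "{v, x} \<in> E" "connects E x r k" using connects_SucD conn[OF v(1)] by metis
    have xV: "x \<in> V" using x(1) Esub by (auto simp: doubleton_eq_iff)
    have "\<delta> x \<le> k" using dmin x by simp
    moreover have "\<delta> v \<le> Suc (\<delta> x)" using dmin connects_Cons[OF x(1) conn[OF xV]] by simp
    ultimately show ?thesis using x xV k by auto
  qed
  define par where "par v = (SOME x. {v, x} \<in> E \<and> x \<in> V \<and> Suc (\<delta> x) = \<delta> v)" for v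
  have par: "{v, par v} \<in> E \<and> par v \<in> V \<and> Suc (\<delta> (par v)) = \<delta> v" if "v \<in> V" "v \<noteq> r" for v
    unfolding par_def by (rule someI_ex) (rule ex[OF that])
  have iter: "(par ^^ i) v \<in> V \<and> \<delta> ((par ^^ i) v) = \<delta> v - i" if "v \<in> V" "i \<le> \<delta> v" for v i
    using that(2)
  proof (induction i)
    case 0 then show ?case using that by simp
  next
    case (Suc i)
    then have w: "(par ^^ i) v \<in> V" "\<delta> ((par ^^ i) v) = \<delta> v - i" by auto
    then have "(par ^^ i) v \<noteq> r" using Suc.prems dr by auto
    then show ?case using par[of "(par ^^ i) v"] w Suc.prems by auto
  qed
  define A where "A v = {(par ^^ i) v | i. i < \<delta> v}" for v
  have R: "rooted V par r A"
    unfolding rooted_def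
  proof (intro conjI ballI)
    show "finite V" by fact
    show "r \<in> V" by fact
    show "A r = {}" using dr A_def by simp
    fix v assume v: "v \<in> V"
    show "A v \<subseteq> V" using iter[OF v] unfolding A_def by auto
  next
    fix v assume v: "v \<in> V - {r}"
    then have p: "{v, par v} \<in> E" "par v \<in> V" "Suc (\<delta> (par v)) = \<delta> v" using par by auto
    show "par v \<in> V" by fact
    show "A v = insert v (A (par v))"
    proof
      show "A v \<subseteq> insert v (A (par v))"
      proof
        fix z assume "z \<in> A v"
        then obtain i where i: "z = (par ^^ i) v" "i < \<delta> v" unfolding A_def by auto
        show "z \<in> insert v (A (par v))"
        proof (cases i)
          case 0 then show ?thesis using i by simp
        next
          case (Suc i')
          then have "z = (par ^^ i') (par v)" using i by (simp add: funpow_Suc_right del: funpow.simps)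
          then show ?thesis using i Suc p unfolding A_def by auto
        qed
      qed
    next
      show "insert v (A (par v)) \<subseteq> A v"
      proof
        fix z assume "z \<in> insert v (A (par v))"
        then show "z \<in> A v"
        proof
          assume "z = v" then show ?thesis unfolding A_def using p by (auto intro!: exI[of _ 0])
        next
          assume "z \<in> A (par v)"
          then obtain i where i: "z = (par ^^ i) (par v)" "i < \<delta> (par v)" unfolding A_def by auto
          then have "z = (par ^^ Suc i) v" by (simp add: funpow_Suc_right del: funpow.simps)
          moreover have "Suc i < \<delta> v" using i p by simp
          ultimately show ?thesis unfolding A_def by blast
        qed
      qed
    qed
    show "v \<notin> A (par v)"
    proof
      assume "v \<in> A (par v)"
      then obtain i where i: "v = (par ^^ i) (par v)" "i < \<delta> (par v)" unfolding A_def by auto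
      then have "\<delta> v = \<delta> (par v) - i" using iter[of "par v" i] p by auto
      then show False using p by simp
    qed
  qed
  interpret rt V par r A by (rule rt.intro[OF R])
  have sub: "edges V par r \<subseteq> E" unfolding edges_def using par by auto
  have finE: "finite E"
  proof -
    have "E \<subseteq> Pow V" using Esub by auto
    then show ?thesis using fin finite_subset by blast
  qed
  have "card (edges V par r) = card E" using card_edges T tree_def by simp
  then have "edges V par r = E" using card_subset_eq[OF finE sub] by simp
  then show ?thesis using R by auto
qed

definition sw :: "nat set \<Rightarrow> (nat \<Rightarrow> nat set) \<Rightarrow> (nat \<Rightarrow> real) \<Rightarrow> nat \<Rightarrow> real" where
  "sw V A \<mu> p = (\<Sum>v\<in>V. \<mu> v * of_bool (p \<in> A v))"

definition cst :: "nat set \<Rightarrow> nat \<Rightarrow> (nat \<Rightarrow> nat set) \<Rightarrow> (nat \<Rightarrow> real) \<Rightarrow> real" where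
  "cst V r A \<mu> = (\<Sum>p\<in>V - {r}. sw V A \<mu> p * (sum \<mu> V - sw V A \<mu> p))"

definition WIE :: "nat set \<Rightarrow> (nat \<Rightarrow> real) \<Rightarrow> nat set set \<Rightarrow> real" where
  "WIE V \<mu> E = (\<Sum>i\<in>V. \<Sum>j\<in>V. \<mu> i * \<mu> j * real (tdist E i j))"

context rt
begin

lemma card_sd_sum:
  assumes "i \<in> V" "j \<in> V"
  shows "real (card (sd (A i) (A j))) =
    (\<Sum>p\<in>V - {r}. of_bool (p \<in> A i) + of_bool (p \<in> A j) - 2 * of_bool (p \<in> A i) * of_bool (p \<in> A j))"
proof -
  have sub: "sd (A i) (A j) \<subseteq> V - {r}" using A_sub' assms unfolding sd_def by auto
  have "real (card (sd (A i) (A j))) = (\<Sum>p\<in>V - {r}. (of_bool (p \<in> sd (A i) (A j)) :: real))"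
    using sub by (simp add: Int_absorb1 sum_of_bool_eq)
  also have "\<dots> = (\<Sum>p\<in>V - {r}. of_bool (p \<in> A i) + of_bool (p \<in> A j) - 2 * of_bool (p \<in> A i) * of_bool (p \<in> A j))"
    by (rule sum.cong) (auto simp: sd_def)
  finally show ?thesis .
qed

lemma WIE_rt: "WIE V \<mu> (edges V par r) = 2 * cst V r A \<mu>"
proof -
  define a where "a p v = (of_bool (p \<in> A v) :: real)" for p v
  define W where "W = sum \<mu> V"
  have s: "sw V A \<mu> p = (\<Sum>v\<in>V. \<mu> v * a p v)" for p unfolding sw_def a_def by simp
  have "WIE V \<mu> (edges V par r) = (\<Sum>i\<in>V. \<Sum>j\<in>V. \<mu> i * \<mu> j *
      (\<Sum>p\<in>V - {r}. a p i + a p j - 2 * a p i * a p j))"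
    unfolding WIE_def a_def by (intro sum.cong refl) (simp add: tdist_rt card_sd_sum)
  also have "\<dots> = (\<Sum>i\<in>V. \<Sum>j\<in>V. \<Sum>p\<in>V - {r}. \<mu> i * \<mu> j * (a p i + a p j - 2 * a p i * a p j))"
    by (simp only: sum_distrib_left)
  also have "\<dots> = (\<Sum>i\<in>V. \<Sum>p\<in>V - {r}. \<Sum>j\<in>V. \<mu> i * \<mu> j * (a p i + a p j - 2 * a p i * a p j))"
    by (rule sum.cong[OF refl], rule sum.swap)
  also have "\<dots> = (\<Sum>p\<in>V - {r}. \<Sum>i\<in>V. \<Sum>j\<in>V. \<mu> i * \<mu> j * (a p i + a p j - 2 * a p i * a p j))"
    by (rule sum.swap)
  also have "\<dots> = (\<Sum>p\<in>V - {r}. 2 * (sw V A \<mu> p * (W - sw V A \<mu> p)))"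
  proof (rule sum.cong[OF refl])
    fix p
    have "(\<Sum>i\<in>V. \<Sum>j\<in>V. \<mu> i * \<mu> j * (a p i + a p j - 2 * a p i * a p j)) =
       (\<Sum>i\<in>V. \<Sum>j\<in>V. (\<mu> i * a p i) * \<mu> j + \<mu> i * (\<mu> j * a p j) - 2 * (\<mu> i * a p i) * (\<mu> j * a p j))"
      by (intro sum.cong refl) (simp add: algebra_simps)
    also have "\<dots> = (\<Sum>i\<in>V. \<Sum>j\<in>V. (\<mu> i * a p i) * \<mu> j) + (\<Sum>i\<in>V. \<Sum>j\<in>V. \<mu> i * (\<mu> j * a p j))
        - 2 * (\<Sum>i\<in>V. \<Sum>j\<in>V. (\<mu> i * a p i) * (\<mu> j * a p j))"
      by (simp only: sum.distrib sum_subtractf sum_distrib_left mult.assoc)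
    also have "\<dots> = (\<Sum>v\<in>V. \<mu> v * a p v) * W + W * (\<Sum>v\<in>V. \<mu> v * a p v) - 2 * ((\<Sum>v\<in>V. \<mu> v * a p v) * (\<Sum>v\<in>V. \<mu> v * a p v))"
      unfolding W_def by (simp only: sum_product)
    finally show "(\<Sum>i\<in>V. \<Sum>j\<in>V. \<mu> i * \<mu> j * (a p i + a p j - 2 * a p i * a p j)) =
        2 * (sw V A \<mu> p * (W - sw V A \<mu> p))" unfolding s by (simp add: algebra_simps)
  qed
  finally show ?thesis unfolding cst_def W_def by (simp add: sum_distrib_left)
qed

end


definition Pot :: "nat set \<Rightarrow> (nat \<Rightarrow> nat set) \<Rightarrow> (nat \<Rightarrow> real) \<Rightarrow> nat \<Rightarrow> real" where
  "Pot V A \<mu> p = (\<Sum>z\<in>A p. sw V A \<mu> z)"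

definition tr :: "nat \<Rightarrow> nat \<Rightarrow> nat \<Rightarrow> nat" where
  "tr a b v = (if v = a then b else if v = b then a else v)"

lemma tr_invol[simp]: "tr a b (tr a b v) = v" by (simp add: tr_def)
lemma tr_a[simp]: "tr a b a = b" by (simp add: tr_def)
lemma tr_b[simp]: "tr a b b = a" by (simp add: tr_def)
lemma tr_other[simp]: "v \<noteq> a \<Longrightarrow> v \<noteq> b \<Longrightarrow> tr a b v = v" by (simp add: tr_def)
lemma tr_in: "a \<in> V \<Longrightarrow> b \<in> V \<Longrightarrow> v \<in> V \<Longrightarrow> tr a b v \<in> V" by (simp add: tr_def)

lemma card_int_ineq:
  assumes "finite X" "finite Y" "finite Z"
  shows "card (X \<inter> Y) + card (Y \<inter> Z) \<le> card Y + card (X \<inter> Z)"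
proof -
  have "card (X \<inter> Y) \<le> card (X \<inter> Y \<inter> Z) + card (Y - Z)"
  proof -
    have "X \<inter> Y \<subseteq> (X \<inter> Y \<inter> Z) \<union> (Y - Z)" by blast
    then have "card (X \<inter> Y) \<le> card ((X \<inter> Y \<inter> Z) \<union> (Y - Z))" by (rule card_mono[rotated]) (use assms in auto)
    also have "\<dots> \<le> card (X \<inter> Y \<inter> Z) + card (Y - Z)" by (rule card_Un_le)
    finally show ?thesis .
  qed
  moreover have "card (X \<inter> Y \<inter> Z) \<le> card (X \<inter> Z)" by (rule card_mono) (use assms in auto)
  moreover have "card Y = card (Y \<inter> Z) + card (Y - Z)"
    using assms card_Int_Diff[of Y Z] by simp
  ultimately show ?thesis by linarith
qed

lemma sum_neg_ne:
  fixes f :: "'a \<Rightarrow> real"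
  assumes "finite X" "X \<noteq> {}" "\<And>x. x \<in> X \<Longrightarrow> f x < 0"
  shows "sum f X < 0"
proof -
  have "0 < sum (\<lambda>x. - f x) X" by (rule sum_pos) (use assms in auto)
  then show ?thesis by (simp add: sum_negf)
qed

context rt
begin

abbreviation s where "s \<mu> \<equiv> sw V A \<mu>"

lemma sw_nonneg: "\<forall>v\<in>V. 0 \<le> \<mu> v \<Longrightarrow> 0 \<le> sw V A \<mu> p"
  unfolding sw_def by (intro sum_nonneg) auto

lemma sw_mono:
  assumes mu: "\<forall>v\<in>V. 0 \<le> \<mu> v" and p: "p \<in> V" and z: "z \<in> A p"
  shows "sw V A \<mu> p \<le> sw V A \<mu> z"
  unfolding sw_def
proof (rule sum_mono)
  fix v assume v: "v \<in> V"
  have "p \<in> A v \<Longrightarrow> z \<in> A v" using A_trans[of v p] v z by blast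
  then show "\<mu> v * of_bool (p \<in> A v) \<le> \<mu> v * of_bool (z \<in> A v)" using mu v by auto
qed


lemma leaf_only: "u \<in> V \<Longrightarrow> (\<forall>w\<in>V - {r}. par w \<noteq> u) \<Longrightarrow> v \<in> V \<Longrightarrow> u \<in> A v \<Longrightarrow> v = u"
  using child_exists[of v u] by auto

lemma sw_leaf:
  assumes u: "u \<in> V" "u \<noteq> r" and nc: "\<forall>w\<in>V - {r}. par w \<noteq> u"
  shows "sw V A \<mu> u = \<mu> u"
proof -
  have "sw V A \<mu> u = (\<Sum>v\<in>V. if v = u then \<mu> v else 0)"
    unfolding sw_def
  proof (rule sum.cong[OF refl])
    fix v assume v: "v \<in> V"
    show "\<mu> v * of_bool (u \<in> A v) = (if v = u then \<mu> v else 0)"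
      using leaf_only[OF u(1) nc v] self_in[OF u] by auto
  qed
  also have "\<dots> = \<mu> u" using u by (simp add: sum.delta)
  finally show ?thesis .
qed

lemma sw_weights_diff:
  "sw V A \<mu>' z = sw V A \<mu> z + (\<Sum>v\<in>V. (\<mu>' v - \<mu> v) * of_bool (z \<in> A v))"
proof -
  have "sw V A \<mu>' z = (\<Sum>v\<in>V. \<mu> v * of_bool (z \<in> A v) + (\<mu>' v - \<mu> v) * of_bool (z \<in> A v))"
    unfolding sw_def by (rule sum.cong[OF refl]) (simp add: algebra_simps)
  then show ?thesis unfolding sw_def by (simp only: sum.distrib)
qed

lemma sw_tr:
  assumes a: "a \<in> V" and b: "b \<in> V"
  shows "sw V A (\<mu> \<circ> tr a b) z = sw V A \<mu> z + (\<mu> b - \<mu> a) * (of_bool (z \<in> A a) - of_bool (z \<in> A b))"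
proof (cases "a = b")
  case True
  then have "\<mu> \<circ> tr a b = \<mu>" by (auto simp: tr_def fun_eq_iff)
  then show ?thesis using True by simp
next
  case False
  have "(\<Sum>v\<in>V. ((\<mu> \<circ> tr a b) v - \<mu> v) * of_bool (z \<in> A v))
     = (\<Sum>v\<in>V. (if v = a then (\<mu> b - \<mu> a) * of_bool (z \<in> A a) else 0) + (if v = b then (\<mu> a - \<mu> b) * of_bool (z \<in> A b) else 0))"
    by (rule sum.cong[OF refl]) (auto simp: tr_def False)
  also have "\<dots> = (\<mu> b - \<mu> a) * of_bool (z \<in> A a) + (\<mu> a - \<mu> b) * of_bool (z \<in> A b)"
    using a b by (simp add: sum.distrib sum.delta)
  finally show ?thesis using sw_weights_diff[where \<mu>'="\<mu> \<circ> tr a b" and \<mu>=\<mu> and z=z] by (simp add: algebra_simps)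
qed

lemma sum_tr: "a \<in> V \<Longrightarrow> b \<in> V \<Longrightarrow> sum (\<mu> \<circ> tr a b) V = sum \<mu> V"
proof -
  assume ab: "a \<in> V" "b \<in> V"
  show ?thesis
    by (rule sum.reindex_bij_witness[of V "tr a b" "tr a b"]) (use ab tr_in in auto)
qed

text \<open>Cost difference under a transfer of weight between two chains.\<close>

lemma sum_transfer:
  fixes F :: "real \<Rightarrow> real"
  assumes a: "a \<in> V" and b: "b \<in> V"
    and s': "\<And>z. z \<in> V \<Longrightarrow> s' z = g z + \<epsilon> * (of_bool (z \<in> A b) - of_bool (z \<in> A a))"
  shows "(\<Sum>z\<in>V - {r}. F (s' z)) - (\<Sum>z\<in>V - {r}. F (g z)) =
     (\<Sum>z\<in>A b - A a. F (g z + \<epsilon>) - F (g z)) + (\<Sum>z\<in>A a - A b. F (g z - \<epsilon>) - F (g z))"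
proof -
  have sub: "A b - A a \<subseteq> V - {r}" "A a - A b \<subseteq> V - {r}" using A_sub' a b by auto
  have disj: "(A b - A a) \<inter> (A a - A b) = {}" by auto
  have "(\<Sum>z\<in>V - {r}. F (s' z)) - (\<Sum>z\<in>V - {r}. F (g z)) = (\<Sum>z\<in>V - {r}. F (s' z) - F (g z))"
    by (rule sum_subtractf[symmetric])
  also have "\<dots> = (\<Sum>z\<in>V - {r}. (if z \<in> A b - A a then F (g z + \<epsilon>) - F (g z) else 0) +
         (if z \<in> A a - A b then F (g z - \<epsilon>) - F (g z) else 0))"
  proof (rule sum.cong[OF refl])
    fix z assume "z \<in> V - {r}"
    then have e: "s' z = g z + \<epsilon> * (of_bool (z \<in> A b) - of_bool (z \<in> A a))" using s' by simp
    show "F (s' z) - F (g z) = (if z \<in> A b - A a then F (g z + \<epsilon>) - F (g z) else 0) +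
         (if z \<in> A a - A b then F (g z - \<epsilon>) - F (g z) else 0)"
      by (cases "z \<in> A a"; cases "z \<in> A b") (simp_all add: e)
  qed
  also have "\<dots> = (\<Sum>z\<in>A b - A a. F (g z + \<epsilon>) - F (g z)) + (\<Sum>z\<in>A a - A b. F (g z - \<epsilon>) - F (g z))"
  proof -
    have i1: "(V - {r}) \<inter> {z. z \<in> A b - A a} = A b - A a" using sub by blast
    have i2: "(V - {r}) \<inter> {z. z \<in> A a - A b} = A a - A b" using sub by blast
    show ?thesis by (simp only: sum.distrib sum.If_cases i1 i2 finite_Diff finV) simp
  qed
  finally show ?thesis .
qed

lemma card_eq_diffs:
  assumes "a \<in> V" "b \<in> V" "h a = h b"
  shows "card (A a - A b) = card (A b - A a)"
proof -
  have "card (A a - A b) = card (A a) - card (A a \<inter> A b)" using assms by (simp add: card_Diff_subset_Int)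
  moreover have "card (A b - A a) = card (A b) - card (A b \<inter> A a)" using assms by (simp add: card_Diff_subset_Int)
  ultimately show ?thesis using assms unfolding h_def by (simp add: Int_commute)
qed

lemma quad_transfer_eq:
  assumes a: "a \<in> V" and b: "b \<in> V" and hab: "h a = h b"
  shows "(\<Sum>z\<in>A b - A a. (g z + \<epsilon>) * (W - (g z + \<epsilon>)) - g z * (W - g z)) +
         (\<Sum>z\<in>A a - A b. (g z - \<epsilon>) * (W - (g z - \<epsilon>)) - g z * (W - g z))
       = 2 * \<epsilon> * ((\<Sum>z\<in>A a - A b. g z) - (\<Sum>z\<in>A b - A a. g z)) - 2 * real (card (A a - A b)) * \<epsilon>^2"
proof -
  have k: "card (A b - A a) = card (A a - A b)" using card_eq_diffs[OF a b hab] by simp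
  have "(\<Sum>z\<in>A b - A a. (g z + \<epsilon>) * (W - (g z + \<epsilon>)) - g z * (W - g z))
      = (\<Sum>z\<in>A b - A a. \<epsilon> * W - \<epsilon>^2 - 2 * \<epsilon> * g z)"
    by (rule sum.cong) (auto simp: algebra_simps power2_eq_square)
  also have "\<dots> = real (card (A b - A a)) * (\<epsilon> * W - \<epsilon>^2) - 2 * \<epsilon> * (\<Sum>z\<in>A b - A a. g z)"
    by (simp only: sum_subtractf sum_constant sum_distrib_left[symmetric] of_nat_mult) (simp add: algebra_simps)
  finally have 1: "(\<Sum>z\<in>A b - A a. (g z + \<epsilon>) * (W - (g z + \<epsilon>)) - g z * (W - g z))
     = real (card (A b - A a)) * (\<epsilon> * W - \<epsilon>^2) - 2 * \<epsilon> * (\<Sum>z\<in>A b - A a. g z)" .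
  have "(\<Sum>z\<in>A a - A b. (g z - \<epsilon>) * (W - (g z - \<epsilon>)) - g z * (W - g z))
      = (\<Sum>z\<in>A a - A b. 2 * \<epsilon> * g z - \<epsilon> * W - \<epsilon>^2)"
    by (rule sum.cong) (auto simp: algebra_simps power2_eq_square)
  also have "\<dots> = (\<Sum>z\<in>A a - A b. 2 * \<epsilon> * g z - (\<epsilon> * W + \<epsilon>^2))"
    by (rule sum.cong) (auto simp: algebra_simps)
  also have "\<dots> = 2 * \<epsilon> * (\<Sum>z\<in>A a - A b. g z) - real (card (A a - A b)) * (\<epsilon> * W + \<epsilon>^2)"
    by (simp only: sum_subtractf sum_constant sum_distrib_left[symmetric])
  finally have 2: "(\<Sum>z\<in>A a - A b. (g z - \<epsilon>) * (W - (g z - \<epsilon>)) - g z * (W - g z))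
     = 2 * \<epsilon> * (\<Sum>z\<in>A a - A b. g z) - real (card (A a - A b)) * (\<epsilon> * W + \<epsilon>^2)" .
  show ?thesis unfolding 1 2 k by (simp add: algebra_simps)
qed

lemma sum_diff_Pot:
  fixes g :: "nat \<Rightarrow> real"
  assumes "a \<in> V" "b \<in> V"
  shows "(\<Sum>z\<in>A a - A b. g z) - (\<Sum>z\<in>A b - A a. g z) = (\<Sum>z\<in>A a. g z) - (\<Sum>z\<in>A b. g z)"
proof -
  have e1: "A a - (A a \<inter> A b) = A a - A b" by blast
  have e2: "A b - (A a \<inter> A b) = A b - A a" by blast
  have "(\<Sum>z\<in>A a. g z) = (\<Sum>z\<in>A a - (A a \<inter> A b). g z) + (\<Sum>z\<in>A a \<inter> A b. g z)"
    by (rule sum.subset_diff) (use assms in auto)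
  then have 1: "(\<Sum>z\<in>A a. g z) = (\<Sum>z\<in>A a - A b. g z) + (\<Sum>z\<in>A a \<inter> A b. g z)" unfolding e1 .
  have "(\<Sum>z\<in>A b. g z) = (\<Sum>z\<in>A b - (A a \<inter> A b). g z) + (\<Sum>z\<in>A a \<inter> A b. g z)"
    by (rule sum.subset_diff) (use assms in auto)
  then have 2: "(\<Sum>z\<in>A b. g z) = (\<Sum>z\<in>A b - A a. g z) + (\<Sum>z\<in>A a \<inter> A b. g z)" unfolding e2 .
  show ?thesis using 1 2 by linarith
qed

lemma pairing:
  assumes p: "p \<in> V" and q: "q \<in> V" and hq: "h q = h p + t"
    and pair: "\<And>y z. y \<in> A p - A q \<Longrightarrow> z \<in> A q - A p \<Longrightarrow> h z = h y + t \<Longrightarrow> \<phi> y + \<psi> z \<le> (0::real)"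
    and single: "\<And>z. z \<in> A q - A p \<Longrightarrow> \<psi> z \<le> 0"
  shows "sum \<phi> (A p - A q) + sum \<psi> (A q - A p) \<le> 0"
  using p q hq pair single
proof (induction p arbitrary: q rule: induct_h)
  case root
  then show ?case by (simp add: sum_nonpos)
next
  case (step p)
  show ?case
  proof (cases "A p \<subseteq> A q")
    case True
    then have e: "A p - A q = {}" by auto
    have "sum \<psi> (A q - A p) \<le> 0" by (rule sum_nonpos) (use step.prems(4) in auto)
    then show ?thesis unfolding e by simp
  next
    case False
    have pq: "p \<notin> A q" using A_trans[of q p] step.prems False by blast
    have qr: "q \<noteq> r" using step.prems step.hyps h_rec[of p] by auto
    have qp: "q \<notin> A p"
    proof
      assume "q \<in> A p"
      then have "A q \<subseteq> A p" using A_trans step.hyps by blast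
      moreover have "card (A q) \<ge> card (A p)" using step.prems unfolding h_def by simp
      ultimately have "A q = A p" using card_subset_eq finA step.hyps by (metis le_antisym card_mono)
      then show False using pq self_in step.hyps by blast
    qed
    have Ap: "A p = insert p (A (par p))" "p \<notin> A (par p)" using A_rec[of p] notin_Apar[of p] step.hyps by auto
    have Aq: "A q = insert q (A (par q))" "q \<notin> A (par q)" using A_rec[of q] notin_Apar[of q] step.prems qr by auto
    have q_np: "q \<notin> A (par p)" using qp Ap by auto
    have p_nq: "p \<notin> A (par q)" using pq Aq by auto
    have D1: "A p - A q = insert p (A (par p) - A (par q))" "p \<notin> A (par p) - A (par q)"
      using Ap Aq pq q_np by auto
    have D2: "A q - A p = insert q (A (par q) - A (par p))" "q \<notin> A (par q) - A (par p)"
      using Ap Aq qp p_nq by auto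
    have fin1: "finite (A (par p) - A (par q))" using finA parV step.hyps by auto
    have fin2: "finite (A (par q) - A (par p))" using finA parV step.prems qr by auto
    have hpar: "h (par q) = h (par p) + t" using h_rec[of p] h_rec[of q] step.prems step.hyps qr by auto
    have IH: "sum \<phi> (A (par p) - A (par q)) + sum \<psi> (A (par q) - A (par p)) \<le> 0"
    proof (rule step.IH)
      show "par q \<in> V" using parV step.prems qr by auto
      show "h (par q) = h (par p) + t" by fact
      show "\<And>y z. y \<in> A (par p) - A (par q) \<Longrightarrow> z \<in> A (par q) - A (par p) \<Longrightarrow> h z = h y + t \<Longrightarrow> \<phi> y + \<psi> z \<le> 0"
        using step.prems(3) D1 D2 by blast
      show "\<And>z. z \<in> A (par q) - A (par p) \<Longrightarrow> \<psi> z \<le> 0" using step.prems(4) D2 by blast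
    qed
    have "\<phi> p + \<psi> q \<le> 0" using step.prems(3)[of p q] D1 D2 step.prems(2) by auto
    then show ?thesis using IH D1 D2 fin1 fin2 by simp
  qed
qed

lemma pairing_strict:
  assumes p: "p \<in> V" and q: "q \<in> V" and hq: "h q = h p + t"
    and pair: "\<And>y z. y \<in> A p - A q \<Longrightarrow> z \<in> A q - A p \<Longrightarrow> h z = h y + t \<Longrightarrow> \<phi> y + \<psi> z < (0::real)"
    and single: "\<And>z. z \<in> A q - A p \<Longrightarrow> \<psi> z < 0"
    and ne: "A q - A p \<noteq> {}"
  shows "sum \<phi> (A p - A q) + sum \<psi> (A q - A p) < 0"
  using p q hq pair single ne
proof (induction p arbitrary: q rule: induct_h)
  case root
  then have "sum \<psi> (A q) < 0" using finA sum_neg_ne[of "A q" \<psi>] by auto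
  then show ?case by simp
next
  case (step p)
  show ?case
  proof (cases "A p \<subseteq> A q")
    case True
    then have e: "A p - A q = {}" by auto
    have "sum \<psi> (A q - A p) < 0" using step.prems finA sum_neg_ne[of "A q - A p" \<psi>] by auto
    then show ?thesis unfolding e by simp
  next
    case False
    have pq: "p \<notin> A q" using A_trans[of q p] step.prems False by blast
    have qr: "q \<noteq> r" using step.prems step.hyps h_rec[of p] by auto
    have qp: "q \<notin> A p"
    proof
      assume "q \<in> A p"
      then have "A q \<subseteq> A p" using A_trans step.hyps by blast
      moreover have "card (A q) \<ge> card (A p)" using step.prems unfolding h_def by simp
      ultimately have "A q = A p" using card_subset_eq finA step.hyps by (metis le_antisym card_mono)
      then show False using pq self_in step.hyps by blast
    qed
    have Ap: "A p = insert p (A (par p))" "p \<notin> A (par p)" using A_rec[of p] notin_Apar[of p] step.hyps by auto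
    have Aq: "A q = insert q (A (par q))" "q \<notin> A (par q)" using A_rec[of q] notin_Apar[of q] step.prems qr by auto
    have q_np: "q \<notin> A (par p)" using qp Ap by auto
    have p_nq: "p \<notin> A (par q)" using pq Aq by auto
    have D1: "A p - A q = insert p (A (par p) - A (par q))" "p \<notin> A (par p) - A (par q)"
      using Ap Aq pq q_np by auto
    have D2: "A q - A p = insert q (A (par q) - A (par p))" "q \<notin> A (par q) - A (par p)"
      using Ap Aq qp p_nq by auto
    have fin1: "finite (A (par p) - A (par q))" using finA parV step.hyps by auto
    have fin2: "finite (A (par q) - A (par p))" using finA parV step.prems qr by auto
    have hpar: "h (par q) = h (par p) + t" using h_rec[of p] h_rec[of q] step.prems step.hyps qr by auto
    have IH: "sum \<phi> (A (par p) - A (par q)) + sum \<psi> (A (par q) - A (par p)) \<le> 0"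
    proof (rule pairing)
      show "par p \<in> V" "par q \<in> V" using parV step.prems step.hyps qr by auto
      show "h (par q) = h (par p) + t" by fact
      fix y z assume "y \<in> A (par p) - A (par q)" "z \<in> A (par q) - A (par p)" "h z = h y + t"
      then have "\<phi> y + \<psi> z < 0" using step.prems(3)[of y z] D1 D2 by blast
      then show "\<phi> y + \<psi> z \<le> 0" by simp
    next
      fix z assume "z \<in> A (par q) - A (par p)"
      then have "\<psi> z < 0" using step.prems(4)[of z] D2 by blast
      then show "\<psi> z \<le> 0" by simp
    qed
    have "\<phi> p + \<psi> q < 0" using step.prems(3)[of p q] D1 D2 step.prems(2) by auto
    then show ?thesis using IH D1 D2 fin1 fin2 by simp
  qed
qed

end


context rt
begin

section \<open>Relabelling by an involution\<close>

lemma conj_rooted: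
  assumes tau: "\<forall>v\<in>V. \<tau> v \<in> V \<and> \<tau> (\<tau> v) = v"
  shows "rooted V (\<lambda>v. \<tau> (par (\<tau> v))) (\<tau> r) (\<lambda>v. \<tau> ` A (\<tau> v))"
  unfolding rooted_def
proof (intro conjI ballI)
  show "finite V" by simp
  show "\<tau> r \<in> V" using tau by simp
  show "\<tau> ` A (\<tau> (\<tau> r)) = {}" using tau by simp
  fix v assume v: "v \<in> V"
  show "\<tau> ` A (\<tau> v) \<subseteq> V" using A_sub[of "\<tau> v"] tau v by auto
next
  fix v assume v: "v \<in> V - {\<tau> r}"
  have tv1: "\<tau> v \<in> V" using v tau by blast
  have tv2: "\<tau> v \<noteq> r"
  proof
    assume "\<tau> v = r"
    then have "\<tau> (\<tau> v) = \<tau> r" by simp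
    then show False using v tau by simp
  qed
  note tv = tv1 tv2
  have pv: "par (\<tau> v) \<in> V" using parV tv by blast
  show "\<tau> (par (\<tau> v)) \<in> V" using tau pv by blast
  have tt: "\<tau> (\<tau> (par (\<tau> v))) = par (\<tau> v)" using tau pv by blast
  show "\<tau> ` A (\<tau> v) = insert v (\<tau> ` A (\<tau> (\<tau> (par (\<tau> v)))))"
    unfolding tt using A_rec[OF tv] tau v by auto
  show "v \<notin> \<tau> ` A (\<tau> (\<tau> (par (\<tau> v))))"
  proof
    assume "v \<in> \<tau> ` A (\<tau> (\<tau> (par (\<tau> v))))"
    then obtain z where z: "z \<in> A (par (\<tau> v))" "v = \<tau> z" unfolding tt by auto
    have "z \<in> V" using A_sub pv z by blast
    then have "\<tau> v = z" using z tau by auto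
    then show False using notin_Apar[OF tv] z by simp
  qed
qed

lemma conj_mem:
  assumes tau: "\<forall>v\<in>V. \<tau> v \<in> V \<and> \<tau> (\<tau> v) = v" and z: "z \<in> V" and v: "v \<in> V"
  shows "z \<in> \<tau> ` A (\<tau> v) \<longleftrightarrow> \<tau> z \<in> A (\<tau> v)"
proof
  assume "z \<in> \<tau> ` A (\<tau> v)"
  then obtain y where y: "y \<in> A (\<tau> v)" "z = \<tau> y" by auto
  have "y \<in> V" using A_sub[of "\<tau> v"] tau v y by auto
  then show "\<tau> z \<in> A (\<tau> v)" using y tau by auto
next
  assume "\<tau> z \<in> A (\<tau> v)"
  then show "z \<in> \<tau> ` A (\<tau> v)" using tau z by (metis image_eqI)
qed

lemma conj_h:
  assumes tau: "\<forall>v\<in>V. \<tau> v \<in> V \<and> \<tau> (\<tau> v) = v" and v: "v \<in> V"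
  shows "card (\<tau> ` A (\<tau> v)) = h (\<tau> v)"
proof -
  have "inj_on \<tau> V" using tau by (metis inj_onI)
  moreover have "A (\<tau> v) \<subseteq> V" using A_sub tau v by auto
  ultimately show ?thesis unfolding h_def by (meson card_image inj_on_subset)
qed

lemma conj_sw:
  assumes tau: "\<forall>v\<in>V. \<tau> v \<in> V \<and> \<tau> (\<tau> v) = v" and p: "p \<in> V"
  shows "sw V (\<lambda>v. \<tau> ` A (\<tau> v)) \<mu> p = sw V A (\<mu> \<circ> \<tau>) (\<tau> p)"
proof -
  have "sw V (\<lambda>v. \<tau> ` A (\<tau> v)) \<mu> p = (\<Sum>v\<in>V. \<mu> v * of_bool (\<tau> p \<in> A (\<tau> v)))"
    unfolding sw_def by (rule sum.cong[OF refl]) (simp add: conj_mem[OF tau p])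
  also have "\<dots> = (\<Sum>u\<in>V. (\<mu> \<circ> \<tau>) u * of_bool (\<tau> p \<in> A u))"
    by (rule sum.reindex_bij_witness[of V \<tau> \<tau>]) (use tau in auto)
  finally show ?thesis unfolding sw_def .
qed

lemma conj_sum:
  assumes tau: "\<forall>v\<in>V. \<tau> v \<in> V \<and> \<tau> (\<tau> v) = v"
  shows "sum (f \<circ> \<tau>) V = sum f V"
  by (rule sum.reindex_bij_witness[of V \<tau> \<tau>]) (use tau in auto)

lemma conj_cst:
  assumes tau: "\<forall>v\<in>V. \<tau> v \<in> V \<and> \<tau> (\<tau> v) = v"
  shows "cst V (\<tau> r) (\<lambda>v. \<tau> ` A (\<tau> v)) \<mu> = cst V r A (\<mu> \<circ> \<tau>)"
proof -
  have W: "sum (\<mu> \<circ> \<tau>) V = sum \<mu> V" by (rule conj_sum[OF tau])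
  have "cst V (\<tau> r) (\<lambda>v. \<tau> ` A (\<tau> v)) \<mu> =
      (\<Sum>p\<in>V - {\<tau> r}. sw V A (\<mu> \<circ> \<tau>) (\<tau> p) * (sum (\<mu> \<circ> \<tau>) V - sw V A (\<mu> \<circ> \<tau>) (\<tau> p)))"
    unfolding cst_def W by (rule sum.cong[OF refl]) (simp add: conj_sw[OF tau])
  also have "\<dots> = (\<Sum>q\<in>V - {r}. sw V A (\<mu> \<circ> \<tau>) q * (sum (\<mu> \<circ> \<tau>) V - sw V A (\<mu> \<circ> \<tau>) q))"
  proof (rule sum.reindex_bij_witness[of _ \<tau> \<tau>])
    fix q assume q: "q \<in> V - {r}"
    show "\<tau> (\<tau> q) = q" using q tau by auto
    show "\<tau> q \<in> V - {\<tau> r}"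
    proof -
      have "\<tau> q \<noteq> \<tau> r"
      proof
        assume "\<tau> q = \<tau> r"
        then have "\<tau> (\<tau> q) = \<tau> (\<tau> r)" by simp
        then show False using q tau by simp
      qed
      then show ?thesis using q tau by auto
    qed
  next
    fix p assume p: "p \<in> V - {\<tau> r}"
    show "\<tau> (\<tau> p) = p" using p tau by auto
    show "\<tau> p \<in> V - {r}"
    proof -
      have "\<tau> p \<noteq> r"
      proof
        assume "\<tau> p = r"
        then have "\<tau> (\<tau> p) = \<tau> r" by simp
        then show False using p tau by simp
      qed
      then show ?thesis using p tau by auto
    qed
    show "sw V A (\<mu> \<circ> \<tau>) (\<tau> p) * (sum (\<mu> \<circ> \<tau>) V - sw V A (\<mu> \<circ> \<tau>) (\<tau> p)) =
       sw V A (\<mu> \<circ> \<tau>) (\<tau> p) * (sum (\<mu> \<circ> \<tau>) V - sw V A (\<mu> \<circ> \<tau>) (\<tau> p))" ..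
  qed
  finally show ?thesis unfolding cst_def .
qed

lemma conj_children:
  assumes tau: "\<forall>v\<in>V. \<tau> v \<in> V \<and> \<tau> (\<tau> v) = v" and v: "v \<in> V"
  shows "{u \<in> V - {\<tau> r}. \<tau> (par (\<tau> u)) = v} = \<tau> ` {u \<in> V - {r}. par u = \<tau> v}"
proof
  show "{u \<in> V - {\<tau> r}. \<tau> (par (\<tau> u)) = v} \<subseteq> \<tau> ` {u \<in> V - {r}. par u = \<tau> v}"
  proof
    fix u assume u: "u \<in> {u \<in> V - {\<tau> r}. \<tau> (par (\<tau> u)) = v}"
    then have uV: "u \<in> V" "u \<noteq> \<tau> r" "\<tau> (par (\<tau> u)) = v" by auto
    have t1: "\<tau> u \<in> V" using uV tau by blast
    have t2: "\<tau> u \<noteq> r"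
    proof
      assume "\<tau> u = r"
      then have "\<tau> (\<tau> u) = \<tau> r" by simp
      then show False using uV tau by simp
    qed
    have t3: "par (\<tau> u) \<in> V" using parV t1 t2 by blast
    have "par (\<tau> u) = \<tau> v" using uV(3) tau t3 by (metis)
    then have "\<tau> u \<in> {u \<in> V - {r}. par u = \<tau> v}" using t1 t2 by simp
    moreover have "u = \<tau> (\<tau> u)" using tau uV by simp
    ultimately show "u \<in> \<tau> ` {u \<in> V - {r}. par u = \<tau> v}" by (rule rev_image_eqI)
  qed
next
  show "\<tau> ` {u \<in> V - {r}. par u = \<tau> v} \<subseteq> {u \<in> V - {\<tau> r}. \<tau> (par (\<tau> u)) = v}"
  proof
    fix x assume "x \<in> \<tau> ` {u \<in> V - {r}. par u = \<tau> v}"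
    then obtain u where u: "u \<in> V" "u \<noteq> r" "par u = \<tau> v" "x = \<tau> u" by auto
    have "x \<in> V" using u tau by blast
    moreover have "x \<noteq> \<tau> r"
    proof
      assume "x = \<tau> r"
      then have "\<tau> x = \<tau> (\<tau> r)" by simp
      then show False using u tau by simp
    qed
    moreover have "\<tau> (par (\<tau> x)) = v" using u tau v by simp
    ultimately show "x \<in> {u \<in> V - {\<tau> r}. \<tau> (par (\<tau> u)) = v}" by simp
  qed
qed

lemma conj_pdeg:
  assumes tau: "\<forall>v\<in>V. \<tau> v \<in> V \<and> \<tau> (\<tau> v) = v" and v: "v \<in> V"
  shows "pdeg V (\<lambda>v. \<tau> (par (\<tau> v))) (\<tau> r) v = pdeg V par r (\<tau> v)"
proof -
  have "inj_on \<tau> V" using tau by (metis inj_onI)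
  then have "card (\<tau> ` {u \<in> V - {r}. par u = \<tau> v}) = card {u \<in> V - {r}. par u = \<tau> v}"
    by (rule card_image[OF inj_on_subset]) auto
  moreover have "(v = \<tau> r) = (\<tau> v = r)" using tau v by auto
  ultimately show ?thesis unfolding pdeg_def conj_children[OF tau v] by simp
qed

end


section \<open>Swapping two incomparable subtrees\<close>

locale swp = rt +
  fixes u v
  assumes u: "u \<in> V" "u \<noteq> r" and v: "v \<in> V" "v \<noteq> r"
    and uv: "u \<notin> A v" and vu: "v \<notin> A u"
begin

definition par' where "par' = par(u := par v, v := par u)"
definition A' where "A' w = (if u \<in> A w then (A w - A (par u)) \<union> A (par v)
    else if v \<in> A w then (A w - A (par v)) \<union> A (par u) else A w)"

lemma u_ne_v: "u \<noteq> v" using uv self_in u by auto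

lemma pu: "par u \<in> V" using parV u by auto
lemma pv: "par v \<in> V" using parV v by auto

lemma Apar_sub: "w \<in> V \<Longrightarrow> x \<in> A w \<Longrightarrow> x \<noteq> r \<Longrightarrow> x \<in> V \<Longrightarrow> A (par x) \<subseteq> A w"
proof -
  assume w: "w \<in> V" and x: "x \<in> A w" "x \<noteq> r" "x \<in> V"
  have "A (par x) \<subseteq> A x" using A_rec[of x] x by auto
  also have "A x \<subseteq> A w" using A_trans w x by auto
  finally show ?thesis .
qed

lemma not_both: "w \<in> V \<Longrightarrow> u \<in> A w \<Longrightarrow> v \<in> A w \<Longrightarrow> False"
  using A_chain[of w u v] uv vu u_ne_v by auto

lemma u_notin_pv: "u \<notin> A (par v)" using uv A_rec[of v] v by auto
lemma v_notin_pu: "v \<notin> A (par u)" using vu A_rec[of u] u by auto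
lemma u_notin_pu: "u \<notin> A (par u)" using notin_Apar u by auto
lemma v_notin_pv: "v \<notin> A (par v)" using notin_Apar v by auto

lemma desc_u: "w \<in> V \<Longrightarrow> u \<in> A w \<Longrightarrow> y \<in> A w \<Longrightarrow> y \<notin> A (par u) \<Longrightarrow> u \<in> A y"
proof -
  assume w: "w \<in> V" and uw: "u \<in> A w" and y: "y \<in> A w" "y \<notin> A (par u)"
  have "y \<in> A u \<or> u \<in> A y \<or> y = u" using A_chain[OF w y(1) uw] by auto
  then show "u \<in> A y"
  proof (elim disjE)
    assume "y \<in> A u" then have "y = u" using A_rec[of u] u y by auto
    then show ?thesis using self_in u by auto
  qed (use self_in u in auto)
qed

lemma desc_v: "w \<in> V \<Longrightarrow> v \<in> A w \<Longrightarrow> y \<in> A w \<Longrightarrow> y \<notin> A (par v) \<Longrightarrow> v \<in> A y"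
proof -
  assume w: "w \<in> V" and uw: "v \<in> A w" and y: "y \<in> A w" "y \<notin> A (par v)"
  have "y \<in> A v \<or> v \<in> A y \<or> y = v" using A_chain[OF w y(1) uw] by auto
  then show "v \<in> A y"
  proof (elim disjE)
    assume "y \<in> A v" then have "y = v" using A_rec[of v] v y by auto
    then show ?thesis using self_in v by auto
  qed (use self_in v in auto)
qed

lemma disj_u: "w \<in> V \<Longrightarrow> u \<in> A w \<Longrightarrow> (A w - A (par u)) \<inter> A (par v) = {}"
proof (rule ccontr)
  assume w: "w \<in> V" and uw: "u \<in> A w" and "(A w - A (par u)) \<inter> A (par v) \<noteq> {}"
  then obtain y where y: "y \<in> A w" "y \<notin> A (par u)" "y \<in> A (par v)" by auto
  have "u \<in> A y" using desc_u[OF w uw y(1,2)] .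
  moreover have "A y \<subseteq> A (par v)" using A_trans[OF pv y(3)] .
  ultimately show False using u_notin_pv by auto
qed

lemma disj_v: "w \<in> V \<Longrightarrow> v \<in> A w \<Longrightarrow> (A w - A (par v)) \<inter> A (par u) = {}"
proof (rule ccontr)
  assume w: "w \<in> V" and uw: "v \<in> A w" and "(A w - A (par v)) \<inter> A (par u) \<noteq> {}"
  then obtain y where y: "y \<in> A w" "y \<notin> A (par v)" "y \<in> A (par u)" by auto
  have "v \<in> A y" using desc_v[OF w uw y(1,2)] .
  moreover have "A y \<subseteq> A (par u)" using A_trans[OF pu y(3)] .
  ultimately show False using v_notin_pu by auto
qed

lemma Apu_sub: "w \<in> V \<Longrightarrow> u \<in> A w \<Longrightarrow> A (par u) \<subseteq> A w"
  using Apar_sub[of w u] u by auto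
lemma Apv_sub: "w \<in> V \<Longrightarrow> v \<in> A w \<Longrightarrow> A (par v) \<subseteq> A w"
  using Apar_sub[of w v] v by auto

lemma A'_pv: "A' (par v) = A (par v)"
proof -
  have "u \<notin> A (par v)" by (rule u_notin_pv)
  moreover have "v \<notin> A (par v)" by (rule v_notin_pv)
  ultimately show ?thesis unfolding A'_def by simp
qed

lemma A'_pu: "A' (par u) = A (par u)"
proof -
  have "u \<notin> A (par u)" by (rule u_notin_pu)
  moreover have "v \<notin> A (par u)" by (rule v_notin_pu)
  ultimately show ?thesis unfolding A'_def by simp
qed

lemma rooted': "rooted V par' r A'"
  unfolding rooted_def
proof (intro conjI ballI)
  show "finite V" by simp
  show "r \<in> V" by simp
  show "A' r = {}" unfolding A'_def by simp
  fix w assume w: "w \<in> V"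
  show "A' w \<subseteq> V" unfolding A'_def using A_sub w pu pv by auto
next
  fix w assume w: "w \<in> V - {r}"
  then have wV: "w \<in> V" "w \<noteq> r" by auto
  show "par' w \<in> V" unfolding par'_def using parV wV pu pv by auto
  have Aw: "A w = insert w (A (par w))" "w \<notin> A (par w)" using A_rec[OF wV] notin_Apar[OF wV] by auto
  have pw: "par w \<in> V" using parV wV by auto
  have goal: "A' w = insert w (A' (par' w)) \<and> w \<notin> A' (par' w)"
  proof (cases "w = u")
    case True
    have "A u - A (par u) = {u}" using A_rec[of u] u u_notin_pu by auto
    then have "A' u = insert u (A (par v))" unfolding A'_def using self_in u by auto
    moreover have "par' u = par v" unfolding par'_def using u_ne_v by simp
    moreover have "u \<notin> A (par v)" by (rule u_notin_pv)
    ultimately show ?thesis using True A'_pv by simp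
  next
    case nu: False
    show ?thesis
    proof (cases "w = v")
      case True
      have "A v - A (par v) = {v}" using A_rec[of v] v v_notin_pv by auto
      then have "A' v = insert v (A (par u))" unfolding A'_def using self_in v uv by auto
      moreover have "par' v = par u" unfolding par'_def by simp
      moreover have "v \<notin> A (par u)" by (rule v_notin_pu)
      ultimately show ?thesis using True A'_pu by simp
    next
      case nv: False
      have pw': "par' w = par w" unfolding par'_def using nu nv by simp
      show ?thesis
      proof (cases "u \<in> A w")
        case True
        have uw: "u \<in> A (par w)" using True Aw nu by auto
        have "A' w = (A w - A (par u)) \<union> A (par v)" unfolding A'_def using True by simp
        moreover have "A' (par w) = (A (par w) - A (par u)) \<union> A (par v)" unfolding A'_def using uw by simp
        moreover have "w \<notin> A (par u)"
        proof
          assume "w \<in> A (par u)"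
          then have "A w \<subseteq> A (par u)" using A_trans pu by blast
          then show False using True u_notin_pu by auto
        qed
        moreover have "w \<notin> A (par v)"
        proof
          assume "w \<in> A (par v)"
          then have "A w \<subseteq> A (par v)" using A_trans pv by blast
          then show False using True u_notin_pv by auto
        qed
        ultimately show ?thesis using Aw pw' by auto
      next
        case nuw: False
        show ?thesis
        proof (cases "v \<in> A w")
          case True
          have vw: "v \<in> A (par w)" using True Aw nv by auto
          have uw': "u \<notin> A (par w)" using nuw Aw by auto
          have "A' w = (A w - A (par v)) \<union> A (par u)" unfolding A'_def using True nuw by simp
          moreover have "A' (par w) = (A (par w) - A (par v)) \<union> A (par u)" unfolding A'_def using vw uw' by simp
          moreover have "w \<notin> A (par u)"
          proof
            assume "w \<in> A (par u)"
            then have "A w \<subseteq> A (par u)" using A_trans pu by blast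
            then show False using True v_notin_pu by auto
          qed
          moreover have "w \<notin> A (par v)"
          proof
            assume "w \<in> A (par v)"
            then have "A w \<subseteq> A (par v)" using A_trans pv by blast
            then show False using True v_notin_pv by auto
          qed
          ultimately show ?thesis using Aw pw' by auto
        next
          case False
          have "u \<notin> A (par w)" "v \<notin> A (par w)" using nuw False Aw by auto
          then have "A' (par w) = A (par w)" unfolding A'_def by simp
          moreover have "A' w = A w" unfolding A'_def using nuw False by simp
          ultimately show ?thesis using Aw pw' by simp
        qed
      qed
    qed
  qed
  then show "A' w = insert w (A' (par' w))" "w \<notin> A' (par' w)" by auto
qed

lemma ind_u:
  assumes w: "w \<in> V" and uw: "u \<in> A w" and z: "z \<in> V"
  shows "(of_bool (z \<in> A' w) :: real) = of_bool (z \<in> A w) + of_bool (z \<in> A (par v)) - of_bool (z \<in> A (par u))"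
proof -
  have A'w: "A' w = (A w - A (par u)) \<union> A (par v)" unfolding A'_def using uw by simp
  have d: "(A w - A (par u)) \<inter> A (par v) = {}" using disj_u[OF w uw] .
  have s: "A (par u) \<subseteq> A w" using Apu_sub[OF w uw] .
  show ?thesis unfolding A'w using d s by (cases "z \<in> A (par v)"; cases "z \<in> A w"; cases "z \<in> A (par u)") auto
qed

lemma ind_v:
  assumes w: "w \<in> V" and vw: "v \<in> A w" and z: "z \<in> V"
  shows "(of_bool (z \<in> A' w) :: real) = of_bool (z \<in> A w) + of_bool (z \<in> A (par u)) - of_bool (z \<in> A (par v))"
proof -
  have A'w: "A' w = (A w - A (par v)) \<union> A (par u)" unfolding A'_def using vw not_both[OF w] by auto
  have d: "(A w - A (par v)) \<inter> A (par u) = {}" using disj_v[OF w vw] .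
  have s: "A (par v) \<subseteq> A w" using Apv_sub[OF w vw] .
  show ?thesis unfolding A'w using d s by (cases "z \<in> A (par u)"; cases "z \<in> A w"; cases "z \<in> A (par v)") auto
qed

lemma sw':
  assumes z: "z \<in> V"
  shows "sw V A' \<mu> z = sw V A \<mu> z + (sw V A \<mu> v - sw V A \<mu> u) * (of_bool (z \<in> A (par u)) - of_bool (z \<in> A (par v)))"
proof -
  define a where "a = (of_bool (z \<in> A (par u)) :: real)"
  define b where "b = (of_bool (z \<in> A (par v)) :: real)"
  have pt: "\<mu> w * of_bool (z \<in> A' w) = \<mu> w * of_bool (z \<in> A w)
       + (\<mu> w * of_bool (u \<in> A w)) * (b - a) + (\<mu> w * of_bool (v \<in> A w)) * (a - b)" if w: "w \<in> V" for w
  proof (cases "u \<in> A w")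
    case True
    then have nv: "v \<notin> A w" using not_both w by blast
    have e: "of_bool (z \<in> A' w) = of_bool (z \<in> A w) + b - a" using ind_u[OF w True z] unfolding a_def b_def .
    show ?thesis unfolding e using True nv by (simp add: algebra_simps)
  next
    case False
    show ?thesis
    proof (cases "v \<in> A w")
      case True
      have e: "of_bool (z \<in> A' w) = of_bool (z \<in> A w) + a - b" using ind_v[OF w True z] unfolding a_def b_def .
      show ?thesis unfolding e using True False by (simp add: algebra_simps)
    next
      case F2: False
      then have "A' w = A w" unfolding A'_def using False by simp
      then show ?thesis using False F2 by simp
    qed
  qed
  have "sw V A' \<mu> z = (\<Sum>w\<in>V. \<mu> w * of_bool (z \<in> A w)
       + (\<mu> w * of_bool (u \<in> A w)) * (b - a) + (\<mu> w * of_bool (v \<in> A w)) * (a - b))"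
    unfolding sw_def by (rule sum.cong[OF refl]) (rule pt)
  also have "\<dots> = sw V A \<mu> z + sw V A \<mu> u * (b - a) + sw V A \<mu> v * (a - b)"
    unfolding sw_def by (simp only: sum.distrib sum_distrib_right)
  finally show ?thesis unfolding a_def b_def by (simp add: algebra_simps)
qed

lemma par'_eq: "w \<in> V \<Longrightarrow> par' w = par (tr u v w)"
  unfolding par'_def tr_def by auto

lemma pdeg': "x \<in> V \<Longrightarrow> pdeg V par' r x = pdeg V par r x"
proof -
  assume x: "x \<in> V"
  have "{w \<in> V - {r}. par' w = x} = tr u v ` {w \<in> V - {r}. par w = x}"
  proof
    show "{w \<in> V - {r}. par' w = x} \<subseteq> tr u v ` {w \<in> V - {r}. par w = x}"
    proof
      fix w assume w: "w \<in> {w \<in> V - {r}. par' w = x}"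
      then have "tr u v w \<in> {w \<in> V - {r}. par w = x}" using par'_eq[of w] u v tr_in[of u V v w]
        by (auto simp: tr_def split: if_splits)
      then show "w \<in> tr u v ` {w \<in> V - {r}. par w = x}" by (metis tr_invol image_eqI)
    qed
  next
    show "tr u v ` {w \<in> V - {r}. par w = x} \<subseteq> {w \<in> V - {r}. par' w = x}"
    proof
      fix y assume "y \<in> tr u v ` {w \<in> V - {r}. par w = x}"
      then obtain w where w: "w \<in> V" "w \<noteq> r" "par w = x" "y = tr u v w" by auto
      have "tr u v w \<in> V" using tr_in[of u V v w] u v w by simp
      moreover have "tr u v w \<noteq> r" using w u v by (auto simp: tr_def)
      moreover have "par' (tr u v w) = x" using par'_eq[of "tr u v w"] calculation w by simp
      ultimately show "y \<in> {w \<in> V - {r}. par' w = x}" using w by simp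
    qed
  qed
  moreover have "inj_on (tr u v) {w \<in> V - {r}. par w = x}" by (rule inj_onI) (metis tr_invol)
  ultimately show ?thesis unfolding pdeg_def by (simp add: card_image)
qed

end


section \<open>Re-attaching leaves\<close>

locale lrp = rt +
  fixes R p0 y
  assumes R: "R \<subseteq> V - {r}" and leaves: "\<forall>w\<in>V - {r}. par w \<notin> R"
    and Rp0: "\<forall>x\<in>R. par x = p0" and y: "y \<in> V" "y \<notin> R"
begin

definition par'' where "par'' w = (if w \<in> R then y else par w)"
definition A'' where "A'' w = (if w \<in> R then insert w (A y) else A w)"

lemma finR: "finite R" using R finite_subset finV by blast

lemma R_notin: "x \<in> R \<Longrightarrow> w \<in> V \<Longrightarrow> x \<in> A w \<Longrightarrow> w = x"
  using leaf_only[of x w] R leaves by auto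

lemma x_notin_Ay: "x \<in> R \<Longrightarrow> x \<notin> A y"
  using R_notin[of x y] y by auto

lemma rooted'': "rooted V par'' r A''"
  unfolding rooted_def
proof (intro conjI ballI)
  show "finite V" by simp
  show "r \<in> V" by simp
  show "A'' r = {}" unfolding A''_def using R by auto
  fix w assume w: "w \<in> V"
  show "A'' w \<subseteq> V" unfolding A''_def using A_sub w y by auto
next
  fix w assume w: "w \<in> V - {r}"
  have gl: "par'' w \<in> V \<and> A'' w = insert w (A'' (par'' w)) \<and> w \<notin> A'' (par'' w)"
  proof (cases "w \<in> R")
    case True
    have "A'' y = A y" unfolding A''_def using y by simp
    then show ?thesis unfolding par''_def A''_def using True y x_notin_Ay by simp
  next
    case False
    have "par w \<notin> R" using leaves w by auto
    then have "A'' (par w) = A (par w)" unfolding A''_def by simp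
    moreover have "A w = insert w (A (par w))" "w \<notin> A (par w)" "par w \<in> V"
      using A_rec[of w] notin_Apar[of w] parV[of w] w by auto
    ultimately show ?thesis unfolding par''_def using False \<open>par w \<notin> R\<close> \<open>A'' (par w) = A (par w)\<close>
      by (simp add: A''_def)
  qed
  then show "par'' w \<in> V" "A'' w = insert w (A'' (par'' w))" "w \<notin> A'' (par'' w)" by auto
qed

lemma p0V: "x \<in> R \<Longrightarrow> p0 \<in> V" using Rp0 parV R by force

lemma sw'':
  assumes z: "z \<in> V"
  shows "sw V A'' \<mu> z = sw V A \<mu> z + sum \<mu> R * (of_bool (z \<in> A y) - of_bool (z \<in> A p0))"
proof -
  define c where "c = (of_bool (z \<in> A y) - of_bool (z \<in> A p0) :: real)"
  have pt: "\<mu> w * of_bool (z \<in> A'' w) = \<mu> w * of_bool (z \<in> A w) + (\<mu> w * of_bool (w \<in> R)) * c"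
    if w: "w \<in> V" for w
  proof (cases "w \<in> R")
    case True
    have Aw: "A w = insert w (A p0)" "w \<notin> A p0" using A_rec[of w] notin_Apar[of w] Rp0 True R by auto
    have "w \<notin> A y" using x_notin_Ay True by simp
    then have "(of_bool (z \<in> A'' w) :: real) = of_bool (z \<in> A w) + c"
      unfolding A''_def c_def using True Aw by (cases "z = w"; cases "z \<in> A y"; cases "z \<in> A p0") auto
    then show ?thesis using True by (simp add: algebra_simps)
  next
    case False
    then show ?thesis unfolding A''_def by simp
  qed
  have "sw V A'' \<mu> z = (\<Sum>w\<in>V. \<mu> w * of_bool (z \<in> A w) + (\<mu> w * of_bool (w \<in> R)) * c)"
    unfolding sw_def by (rule sum.cong[OF refl]) (rule pt)
  also have "\<dots> = sw V A \<mu> z + (\<Sum>w\<in>V. \<mu> w * of_bool (w \<in> R)) * c"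
    unfolding sw_def by (simp only: sum.distrib sum_distrib_right)
  also have "(\<Sum>w\<in>V. \<mu> w * of_bool (w \<in> R)) = sum \<mu> R"
  proof -
    have "(\<Sum>w\<in>V. \<mu> w * of_bool (w \<in> R)) = (\<Sum>w\<in>V. if w \<in> R then \<mu> w else 0)"
      by (rule sum.cong) auto
    also have "\<dots> = sum \<mu> (V \<inter> R)" by (simp add: sum.If_cases Int_def)
    also have "V \<inter> R = R" using R by auto
    finally show ?thesis .
  qed
  finally show ?thesis unfolding c_def .
qed

lemma pdeg'':
  assumes x: "x \<in> V"
  shows "pdeg V par'' r x + (if x = p0 \<and> R \<noteq> {} then card R else 0) = pdeg V par r x + (if x = y then card R else 0)"
proof -
  define C0 where "C0 = {w \<in> V - {r} - R. par w = x}"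
  have c1: "{w \<in> V - {r}. par'' w = x} = C0 \<union> (if x = y then R else {})"
    unfolding C0_def par''_def using R by auto
  have c2: "{w \<in> V - {r}. par w = x} = C0 \<union> (if x = p0 \<and> R \<noteq> {} then R else {})"
    unfolding C0_def using R Rp0 by auto
  have fC0: "finite C0" unfolding C0_def by simp
  have d: "C0 \<inter> R = {}" unfolding C0_def by auto
  have e1: "card {w \<in> V - {r}. par'' w = x} = card C0 + (if x = y then card R else 0)"
    unfolding c1 using fC0 finR d by (auto simp: card_Un_disjoint)
  have e2: "card {w \<in> V - {r}. par w = x} = card C0 + (if x = p0 \<and> R \<noteq> {} then card R else 0)"
    unfolding c2 using fC0 finR d by (auto simp: card_Un_disjoint)
  show ?thesis unfolding pdeg_def e1 e2 by simp
qed

end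

section \<open>Centroid\<close>

lemma card_sd_single:
  assumes "finite X"
  shows "real (card (sd X {a})) = real (card X) + 1 - 2 * of_bool (a \<in> X)"
proof (cases "a \<in> X")
  case True
  then have "sd X {a} = X - {a}" unfolding sd_def by auto
  moreover have "card X \<ge> 1" using True assms by (metis One_nat_def Suc_leI card_gt_0_iff empty_iff)
  moreover have "card (X - {a}) = card X - 1" using True assms by (simp add: card_Diff_singleton)
  ultimately show ?thesis using True by (simp add: of_nat_diff)
next
  case False
  then have "sd X {a} = insert a X" unfolding sd_def by auto
  then show ?thesis using False assms by simp
qed

lemma centroid:
  assumes T: "tree V E" and ne: "V \<noteq> {}" and mu: "\<forall>v\<in>V. 0 \<le> \<mu> v"
  shows "\<exists>c par A. rooted V par c A \<and> E = edges V par c \<and> (\<forall>p\<in>V - {c}. 2 * sw V A \<mu> p \<le> sum \<mu> V)"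
proof -
  have fin: "finite V" using T tree_def by auto
  define F where "F c = (\<Sum>v\<in>V. \<mu> v * real (tdist E v c))" for c
  define m where "m = Min (F ` V)"
  have "m \<in> F ` V" unfolding m_def using fin ne by (intro Min_in) auto
  then obtain c where c: "c \<in> V" "F c = m" by auto
  have cmin: "F c \<le> F c'" if "c' \<in> V" for c' using c fin that unfolding m_def by (metis Min_le finite_imageI image_eqI)
  obtain par A where R: "rooted V par c A" and E: "E = edges V par c" using tree_rooted[OF T c(1)] by blast
  interpret rt V par c A by (rule rt.intro[OF R])
  have Fx: "F x = (\<Sum>v\<in>V. \<mu> v * real (card (sd (A v) (A x))))" if "x \<in> V" for x
    unfolding F_def E using that by (intro sum.cong refl) (simp add: tdist_rt)
  have all: "2 * sw V A \<mu> p \<le> sum \<mu> V" if p: "p \<in> V - {c}" for p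
  proof -
    obtain ch where ch: "ch \<in> A p" "ch \<in> V" "ch \<noteq> c" "par ch = c" using top_exists[of p] p by auto
    have Ach: "A ch = {ch}" using A_rec[of ch] ch by simp
    have "F ch = (\<Sum>v\<in>V. \<mu> v * (real (card (A v)) + 1 - 2 * of_bool (ch \<in> A v)))"
      unfolding Fx[OF ch(2)] Ach by (intro sum.cong refl) (simp add: card_sd_single)
    also have "\<dots> = (\<Sum>v\<in>V. \<mu> v * real (card (A v))) + sum \<mu> V - 2 * sw V A \<mu> ch"
    proof -
      have "(\<Sum>v\<in>V. \<mu> v * (real (card (A v)) + 1 - 2 * of_bool (ch \<in> A v)))
          = (\<Sum>v\<in>V. \<mu> v * real (card (A v)) + \<mu> v - 2 * (\<mu> v * of_bool (ch \<in> A v)))"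
        by (rule sum.cong[OF refl]) (simp add: algebra_simps)
      also have "\<dots> = (\<Sum>v\<in>V. \<mu> v * real (card (A v))) + sum \<mu> V - 2 * (\<Sum>v\<in>V. \<mu> v * of_bool (ch \<in> A v))"
        by (simp only: sum.distrib sum_subtractf sum_distrib_left[symmetric])
      finally show ?thesis unfolding sw_def .
    qed
    finally have Fch: "F ch = (\<Sum>v\<in>V. \<mu> v * real (card (A v))) + sum \<mu> V - 2 * sw V A \<mu> ch" .
    have "F c = (\<Sum>v\<in>V. \<mu> v * real (card (A v)))"
      unfolding Fx[OF c(1)] by (intro sum.cong refl) (simp add: sd_def)
    then have "2 * sw V A \<mu> ch \<le> sum \<mu> V" using cmin[OF ch(2)] Fch by simp
    moreover have "sw V A \<mu> p \<le> sw V A \<mu> ch" using sw_mono[OF mu _ ch(1)] p by auto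
    ultimately show ?thesis by simp
  qed
  show ?thesis
    apply (rule exI[of _ c], rule exI[of _ par], rule exI[of _ A])
    using R E all by simp
qed


context rt
begin

lemma AM:
  assumes mu: "\<forall>v\<in>V. 0 \<le> \<mu> v"
    and cent: "\<forall>p\<in>V - {r}. 2 * sw V A \<mu> p \<le> sum \<mu> V"
    and opt: "\<And>par' A'. rooted V par' r A' \<Longrightarrow> (\<forall>x\<in>V. pdeg V par' r x = pdeg V par r x) \<Longrightarrow> cst V r A \<mu> \<le> cst V r A' \<mu>"
  shows "\<forall>u\<in>V - {r}. \<forall>v\<in>V - {r}. h u < h v \<longrightarrow> sw V A \<mu> v \<le> sw V A \<mu> u"
proof (rule ccontr)
  define W where "W = sum \<mu> V"
  define B where "B = {v \<in> V - {r}. \<exists>u\<in>V - {r}. h u < h v \<and> sw V A \<mu> u < sw V A \<mu> v}"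
  assume "\<not> (\<forall>u\<in>V - {r}. \<forall>v\<in>V - {r}. h u < h v \<longrightarrow> sw V A \<mu> v \<le> sw V A \<mu> u)"
  then obtain v0 where "v0 \<in> B" unfolding B_def by force
  then obtain v where vB: "v \<in> B" and vmin: "\<And>v'. v' \<in> B \<Longrightarrow> h v \<le> h v'"
    using ex_has_least_nat[of "\<lambda>v. v \<in> B" v0 h] by blast
  then obtain u where u: "u \<in> V" "u \<noteq> r" and huv: "h u < h v" and suv: "sw V A \<mu> u < sw V A \<mu> v"
    and v: "v \<in> V" "v \<noteq> r" unfolding B_def by blast
  have noviol: "sw V A \<mu> z \<le> sw V A \<mu> y" if "y \<in> V - {r}" "z \<in> V - {r}" "h y < h z" "h z < h v" for y z
  proof (rule ccontr)
    assume "\<not> ?thesis"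
    then have "z \<in> B" unfolding B_def using that by force
    then show False using vmin that by fastforce
  qed
  have hu1: "h u = Suc (h (par u))" using h_rec u by auto
  have hv1: "h v = Suc (h (par v))" using h_rec v by auto
  have pvV: "par v \<in> V" using parV v by auto
  have puV: "par u \<in> V" using parV u by auto
  have pvr: "par v \<noteq> r"
  proof
    assume "par v = r"
    then have "h v = 1" using hv1 by simp
    then show False using huv hu1 by simp
  qed
  have spv: "sw V A \<mu> v \<le> sw V A \<mu> (par v)" using sw_mono[OF mu v(1) par_in_A[OF v pvr]] .
  have hpv: "h (par v) = h u"
  proof (rule ccontr)
    assume "h (par v) \<noteq> h u"
    then have "h u < h (par v)" using huv hv1 by simp
    then have "par v \<in> B" unfolding B_def using u pvV pvr suv spv by force
    then show False using vmin hv1 by fastforce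
  qed
  have uv: "u \<notin> A v"
  proof
    assume "u \<in> A v"
    then have "sw V A \<mu> v \<le> sw V A \<mu> u" using sw_mono[OF mu v(1)] by blast
    then show False using suv by simp
  qed
  have vu: "v \<notin> A u"
  proof
    assume "v \<in> A u"
    then have "h v \<le> h u" using h_mono u by blast
    then show False using huv by simp
  qed
  have swp_inst: "swp V par r A u v" unfolding swp_def swp_axioms_def using rt_axioms u v uv vu by blast
  interpret swp V par r A u v by (rule swp_inst)
  define \<delta> where "\<delta> = sw V A \<mu> v - sw V A \<mu> u"
  have dpos: "\<delta> > 0" unfolding \<delta>_def using suv by simp
  define F where "F x = x * (W - x)" for x :: real
  have c1: "cst V r A \<mu> = (\<Sum>z\<in>V - {r}. F (sw V A \<mu> z))" unfolding cst_def F_def W_def ..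
  have c2: "cst V r A' \<mu> = (\<Sum>z\<in>V - {r}. F (sw V A' \<mu> z))" unfolding cst_def F_def W_def ..
  have diff: "cst V r A' \<mu> - cst V r A \<mu> =
     (\<Sum>z\<in>A (par u) - A (par v). F (sw V A \<mu> z + \<delta>) - F (sw V A \<mu> z)) +
     (\<Sum>z\<in>A (par v) - A (par u). F (sw V A \<mu> z - \<delta>) - F (sw V A \<mu> z))"
    unfolding c1 c2
    by (rule sum_transfer[OF pvV puV]) (simp add: sw' \<delta>_def)
  have neg: "(\<Sum>z\<in>A (par u) - A (par v). F (sw V A \<mu> z + \<delta>) - F (sw V A \<mu> z)) +
     (\<Sum>z\<in>A (par v) - A (par u). F (sw V A \<mu> z - \<delta>) - F (sw V A \<mu> z)) < 0"
  proof (rule pairing_strict[OF puV pvV, of 1])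
    show "h (par v) = h (par u) + 1" using hpv hu1 by simp
  next
    fix y z assume y: "y \<in> A (par u) - A (par v)" and z: "z \<in> A (par v) - A (par u)" and hz: "h z = h y + 1"
    have yV: "y \<in> V - {r}" using y A_sub' puV by auto
    have zV: "z \<in> V - {r}" using z A_sub' pvV by auto
    have "h z \<le> h (par v)" using h_mono pvV z by blast
    then have "h z < h v" using hv1 by simp
    then have "sw V A \<mu> z \<le> sw V A \<mu> y" using noviol[OF yV zV] hz by simp
    moreover have "F (sw V A \<mu> y + \<delta>) - F (sw V A \<mu> y) + (F (sw V A \<mu> z - \<delta>) - F (sw V A \<mu> z))
        = (2 * \<delta>) * (sw V A \<mu> z - sw V A \<mu> y - \<delta>)" unfolding F_def by (simp add: algebra_simps)
    ultimately show "F (sw V A \<mu> y + \<delta>) - F (sw V A \<mu> y) + (F (sw V A \<mu> z - \<delta>) - F (sw V A \<mu> z)) < 0"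
      using dpos mult_pos_neg[of "2 * \<delta>" "sw V A \<mu> z - sw V A \<mu> y - \<delta>"] by simp
  next
    fix z assume z: "z \<in> A (par v) - A (par u)"
    have zV: "z \<in> V - {r}" using z A_sub' pvV by auto
    have "2 * sw V A \<mu> z \<le> W" using cent zV unfolding W_def by blast
    moreover have "F (sw V A \<mu> z - \<delta>) - F (sw V A \<mu> z) = - (\<delta> * (W - 2 * sw V A \<mu> z + \<delta>))"
      unfolding F_def by (simp add: algebra_simps)
    ultimately show "F (sw V A \<mu> z - \<delta>) - F (sw V A \<mu> z) < 0"
      using dpos mult_pos_pos[of \<delta> "W - 2 * sw V A \<mu> z + \<delta>"] by simp
  next
    have "par v \<in> A (par v)" using self_in pvV pvr by blast
    moreover have "par v \<notin> A (par u)"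
    proof
      assume "par v \<in> A (par u)"
      then have "h (par v) \<le> h (par u)" using h_mono puV by blast
      then show False using hpv hu1 by simp
    qed
    ultimately show "A (par v) - A (par u) \<noteq> {}" by blast
  qed
  have "cst V r A \<mu> \<le> cst V r A' \<mu>" using opt[OF rooted'] pdeg' by blast
  then show False using diff neg by simp
qed

end


context rt
begin

lemma nochild_pdeg1:
  assumes "v \<in> V" "v \<noteq> r" "pdeg V par r v = 1"
  shows "\<forall>w\<in>V - {r}. par w \<noteq> v"
proof -
  have "card {u \<in> V - {r}. par u = v} = 0" using assms unfolding pdeg_def by simp
  then have "{u \<in> V - {r}. par u = v} = {}" by simp
  then show ?thesis by blast
qed

lemma pdeg_nochild:
  assumes "v \<in> V" "v \<noteq> r" "\<forall>w\<in>V - {r}. par w \<noteq> v"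
  shows "pdeg V par r v = 1"
proof -
  have "{u \<in> V - {r}. par u = v} = {}" using assms by blast
  then show ?thesis unfolding pdeg_def using assms by simp
qed

lemma pdeg_child:
  assumes "v \<in> V" "v \<noteq> r" "w \<in> V" "w \<noteq> r" "par w = v"
  shows "pdeg V par r v \<ge> 2"
proof -
  have "w \<in> {u \<in> V - {r}. par u = v}" using assms by simp
  then have "card {u \<in> V - {r}. par u = v} \<ge> 1"
    by (metis (no_types, lifting) One_nat_def Suc_leI card_gt_0_iff empty_iff finV finite_Diff finite_subset mem_Collect_eq subsetI)
  then show ?thesis unfolding pdeg_def using assms by simp
qed

lemma maxh_nochild:
  assumes hD: "\<forall>v\<in>V. h v \<le> D" and v: "v \<in> V" "h v = D"
  shows "\<forall>w\<in>V - {r}. par w \<noteq> v"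
proof (intro ballI notI)
  fix w assume w: "w \<in> V - {r}" and pw: "par w = v"
  then have "h w = Suc D" using h_rec[of w] v by simp
  then show False using hD w by fastforce
qed

lemma Pot_leaf:
  assumes x: "x \<in> V" "x \<noteq> r" and nc: "\<forall>w\<in>V - {r}. par w \<noteq> x"
  shows "Pot V A \<mu> x = Pot V A \<mu> (par x) + \<mu> x"
proof -
  have "A x = insert x (A (par x))" "x \<notin> A (par x)" using A_rec notin_Apar x by auto
  moreover have "finite (A (par x))" using finA parV x by auto
  ultimately have "Pot V A \<mu> x = sw V A \<mu> x + Pot V A \<mu> (par x)" unfolding Pot_def by simp
  then show ?thesis using sw_leaf[OF x nc] by simp
qed

lemma Pot_conj:
  assumes tau: "\<forall>v\<in>V. \<tau> v \<in> V \<and> \<tau> (\<tau> v) = v" and q: "q \<in> V"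
  shows "Pot V (\<lambda>v. \<tau> ` A (\<tau> v)) \<mu> q = (\<Sum>z\<in>A (\<tau> q). sw V A (\<mu> \<circ> \<tau>) z)"
proof -
  have tq: "\<tau> q \<in> V" using tau q by auto
  have sub: "A (\<tau> q) \<subseteq> V" using A_sub tq by auto
  have inj: "inj_on \<tau> (A (\<tau> q))" using tau sub by (metis inj_onI subsetD)
  have "Pot V (\<lambda>v. \<tau> ` A (\<tau> v)) \<mu> q = (\<Sum>z'\<in>\<tau> ` A (\<tau> q). sw V A (\<mu> \<circ> \<tau>) (\<tau> z'))"
    unfolding Pot_def
  proof (rule sum.cong[OF refl])
    fix z' assume "z' \<in> \<tau> ` A (\<tau> q)"
    then have "z' \<in> V" using sub tau by auto
    then show "sw V (\<lambda>v. \<tau> ` A (\<tau> v)) \<mu> z' = sw V A (\<mu> \<circ> \<tau>) (\<tau> z')" by (rule conj_sw[OF tau])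
  qed
  also have "\<dots> = (\<Sum>z\<in>A (\<tau> q). sw V A (\<mu> \<circ> \<tau>) (\<tau> (\<tau> z)))"
    by (simp add: sum.reindex[OF inj])
  also have "\<dots> = (\<Sum>z\<in>A (\<tau> q). sw V A (\<mu> \<circ> \<tau>) z)"
    by (rule sum.cong[OF refl]) (use sub tau in auto)
  finally show ?thesis .
qed

lemma Pot_transfer:
  assumes q: "q \<in> V" and s': "\<And>z. z \<in> V \<Longrightarrow> s' z = sw V A \<mu> z + \<eta> * (of_bool (z \<in> A b) - of_bool (z \<in> A a))"
  shows "(\<Sum>z\<in>A q. s' z) = Pot V A \<mu> q + \<eta> * (real (card (A q \<inter> A b)) - real (card (A q \<inter> A a)))"
proof -
  have sub: "A q \<subseteq> V" using A_sub q by auto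
  have "(\<Sum>z\<in>A q. s' z) = (\<Sum>z\<in>A q. sw V A \<mu> z + \<eta> * (of_bool (z \<in> A b) - of_bool (z \<in> A a)))"
    by (rule sum.cong[OF refl]) (use sub s' in auto)
  also have "\<dots> = Pot V A \<mu> q + \<eta> * ((\<Sum>z\<in>A q. of_bool (z \<in> A b)) - (\<Sum>z\<in>A q. of_bool (z \<in> A a)))"
    unfolding Pot_def by (simp only: sum.distrib sum_distrib_left[symmetric] sum_subtractf)
  also have "(\<Sum>z\<in>A q. (of_bool (z \<in> A b) :: real)) = real (card (A q \<inter> A b))"
    using finA[OF q] by (simp add: sum_of_bool_eq Int_def)
  also have "(\<Sum>z\<in>A q. (of_bool (z \<in> A a) :: real)) = real (card (A q \<inter> A a))"
    using finA[OF q] by (simp add: sum_of_bool_eq Int_def)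
  finally show ?thesis .
qed

end


definition S4inv :: "nat set \<Rightarrow> (nat \<Rightarrow> nat) \<Rightarrow> (nat \<Rightarrow> real) \<Rightarrow> nat \<Rightarrow> nat \<Rightarrow> nat set
    \<Rightarrow> (nat \<Rightarrow> nat) \<Rightarrow> nat \<Rightarrow> (nat \<Rightarrow> nat set) \<Rightarrow> bool" where
  "S4inv V d \<mu> m D S par r A \<longleftrightarrow> rooted V par r A \<and> (\<forall>v\<in>V. pdeg V par r v = d v) \<and> m \<in> V \<and> m \<noteq> r \<and>
     (\<forall>v\<in>V. card (A v) \<le> D) \<and> card (A m) + 1 = D \<and> card {u \<in> V - {r}. par u = m} = card S \<and>
     S \<subseteq> V \<and> (\<forall>s\<in>S. d s = 1) \<and> (\<forall>s\<in>S. \<forall>x\<in>V. d x = 1 \<and> x \<notin> S \<longrightarrow> \<mu> s \<le> \<mu> x) \<and>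
     (\<forall>s\<in>S. \<not> (s \<noteq> r \<and> par s = m) \<longrightarrow> (s \<noteq> r \<and> card (A s) = D) \<or>
         (\<forall>x\<in>V - {r}. par x = m \<and> x \<notin> S \<longrightarrow> \<mu> s = \<mu> x)) \<and>
     (\<forall>p\<in>V. card (A p) + 1 = D \<and> (\<exists>w\<in>V - {r}. par w = p) \<longrightarrow> Pot V A \<mu> m \<le> Pot V A \<mu> p)"

definition misp :: "nat set \<Rightarrow> nat \<Rightarrow> (nat \<Rightarrow> nat) \<Rightarrow> nat \<Rightarrow> nat set" where
  "misp S m par r = {s \<in> S. \<not> (s \<noteq> r \<and> par s = m)}"

lemma S4_step0:
  assumes R: "rooted V par r A" and deg: "\<forall>v\<in>V. pdeg V par r v = d v" and m: "m \<in> V" "m \<noteq> r"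
    and hD0: "\<forall>v\<in>V. card (A v) \<le> D" and hm0: "card (A m) + 1 = D"
    and cm: "card {u \<in> V - {r}. par u = m} = card S" and S: "S \<subseteq> V" "\<forall>s\<in>S. d s = 1"
    and light: "\<forall>s\<in>S. \<forall>x\<in>V. d x = 1 \<and> x \<notin> S \<longrightarrow> \<mu> s \<le> \<mu> x"
    and mis0: "\<forall>s\<in>S. \<not> (s \<noteq> r \<and> par s = m) \<longrightarrow> (s \<noteq> r \<and> card (A s) = D) \<or>
         (\<forall>x\<in>V - {r}. par x = m \<and> x \<notin> S \<longrightarrow> \<mu> s = \<mu> x)"
    and pot0: "\<forall>p\<in>V. card (A p) + 1 = D \<and> (\<exists>w\<in>V - {r}. par w = p) \<longrightarrow> Pot V A \<mu> m \<le> Pot V A \<mu> p"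
    and s: "s \<in> misp S m par r"
  shows "\<exists>par' r' A'. S4inv V d \<mu> m D S par' r' A' \<and> cst V r' A' \<mu> \<le> cst V r A \<mu> \<and>
           card (misp S m par' r') < card (misp S m par r)"
proof -
  interpret rt V par r A by (rule rt.intro[OF R])
  have hD: "\<forall>v\<in>V. h v \<le> D" using hD0 unfolding h_def .
  have hm: "h m + 1 = D" using hm0 unfolding h_def .
  have mis: "\<forall>s\<in>S. \<not> (s \<noteq> r \<and> par s = m) \<longrightarrow> (s \<noteq> r \<and> h s = D) \<or>
         (\<forall>x\<in>V - {r}. par x = m \<and> x \<notin> S \<longrightarrow> \<mu> s = \<mu> x)" using mis0 unfolding h_def .
  have pot: "\<forall>p\<in>V. h p + 1 = D \<and> (\<exists>w\<in>V - {r}. par w = p) \<longrightarrow> Pot V A \<mu> m \<le> Pot V A \<mu> p"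
    using pot0 unfolding h_def .
  have sS: "s \<in> S" and smis: "\<not> (s \<noteq> r \<and> par s = m)" using s unfolding misp_def by auto
  have sV: "s \<in> V" using sS S by auto
  define Cm where "Cm = {u \<in> V - {r}. par u = m}"
  have finCm: "finite Cm" unfolding Cm_def by simp
  have finS: "finite S" by (rule finite_subset[OF S(1) finV])
  obtain x where xC: "x \<in> Cm" and xS: "x \<notin> S"
  proof -
    have "\<not> Cm \<subseteq> S"
    proof
      assume sub: "Cm \<subseteq> S"
      have "card Cm = card S" using cm Cm_def by simp
      then have "Cm = S" using card_subset_eq[OF finS sub] by simp
      then show False using sS smis Cm_def by auto
    qed
    then show ?thesis using that by blast
  qed
  have xV: "x \<in> V" "x \<noteq> r" "par x = m" using xC Cm_def by auto
  have hx: "h x = D" using h_rec[of x] xV hm by simp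
  have xnc: "\<forall>w\<in>V - {r}. par w \<noteq> x" using maxh_nochild[OF hD xV(1) hx] .
  have dx: "d x = 1" using pdeg_nochild[OF xV(1,2) xnc] deg xV by simp
  have ds: "d s = 1" using S sS by auto
  have dm: "d m \<ge> 2" using pdeg_child[OF m xV] deg m by simp
  have sx: "s \<noteq> x" using sS xS by auto
  have sm: "s \<noteq> m" using ds dm by auto
  have mux: "\<mu> s \<le> \<mu> x" using light sS xV dx xS by blast
  define \<tau> where "\<tau> = tr s x"
  have tau: "\<forall>v\<in>V. \<tau> v \<in> V \<and> \<tau> (\<tau> v) = v" unfolding \<tau>_def using tr_in sV xV by auto
  have mx: "m \<noteq> x" using par_ne[of x] xV by auto
  have tm: "\<tau> m = m" unfolding \<tau>_def using sm mx by (simp add: tr_def)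
  define par1 where "par1 v = \<tau> (par (\<tau> v))" for v
  define r1 where "r1 = \<tau> r"
  define A1 where "A1 v = \<tau> ` A (\<tau> v)" for v
  have R1: "rooted V par1 r1 A1" unfolding par1_def r1_def A1_def by (rule conj_rooted[OF tau])
  define \<eta> where "\<eta> = \<mu> x - \<mu> s"
  have eta: "\<eta> \<ge> 0" unfolding \<eta>_def using mux by simp
  have swt: "sw V A (\<mu> \<circ> \<tau>) z = sw V A \<mu> z + \<eta> * (of_bool (z \<in> A s) - of_bool (z \<in> A x))" for z
    unfolding \<tau>_def \<eta>_def using sw_tr[OF sV xV(1)] by simp
  have deg1: "\<forall>v\<in>V. pdeg V par1 r1 v = d v"
  proof
    fix v assume v: "v \<in> V"
    have "pdeg V par1 r1 v = pdeg V par r (\<tau> v)" unfolding par1_def r1_def by (rule conj_pdeg[OF tau v])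
    also have "\<dots> = d (\<tau> v)" using deg tau v by auto
    also have "\<dots> = d v" unfolding \<tau>_def tr_def using ds dx by auto
    finally show "pdeg V par1 r1 v = d v" .
  qed
  have mr1: "m \<noteq> r1"
  proof
    assume "m = r1"
    then have "\<tau> m = r" unfolding r1_def using tau by simp
    then show False using tm m by simp
  qed
  have hA1: "card (A1 v) = h (\<tau> v)" if "v \<in> V" for v unfolding A1_def using conj_h[OF tau that] .
  have hD1: "\<forall>v\<in>V. card (A1 v) \<le> D" using hA1 hD tau by auto
  have hm1: "card (A1 m) + 1 = D" using hA1[OF m(1)] tm hm by simp
  have ch1: "{u \<in> V - {r1}. par1 u = m} = \<tau> ` Cm"
    unfolding par1_def r1_def Cm_def using conj_children[OF tau m(1)] tm by simp
  have injV: "inj_on \<tau> V" using tau by (metis inj_onI)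
  have cm1: "card {u \<in> V - {r1}. par1 u = m} = card S"
  proof -
    have "card (\<tau> ` Cm) = card Cm" using injV by (rule card_image[OF inj_on_subset]) (auto simp: Cm_def)
    then show ?thesis using ch1 cm Cm_def by simp
  qed
  have s_new: "s \<noteq> r1 \<and> par1 s = m"
  proof
    show "s \<noteq> r1"
    proof
      assume "s = r1"
      then have "\<tau> s = r" unfolding r1_def using tau sV by auto
      then show False using xV unfolding \<tau>_def by simp
    qed
    show "par1 s = m" unfolding par1_def \<tau>_def using xV tm[unfolded \<tau>_def] by simp
  qed
  have tS: "\<tau> s' = s'" if "s' \<in> S" "s' \<noteq> s" for s'
    unfolding \<tau>_def using that xS by (auto simp: tr_def)
  have r_iff: "(s' \<noteq> r1) = (s' \<noteq> r)" if "s' \<in> S" "s' \<noteq> s" for s'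
  proof -
    have "s' = r1 \<longleftrightarrow> \<tau> s' = r" unfolding r1_def using tau S that by auto
    then show ?thesis using tS[OF that] by simp
  qed
  have p_iff: "(par1 s' = m) = (par s' = m)" if "s' \<in> S" "s' \<noteq> s" for s'
  proof -
    have "par1 s' = \<tau> (par s')" unfolding par1_def using tS[OF that] by simp
    moreover have "\<tau> (par s') = m \<longleftrightarrow> par s' = m" using tm unfolding \<tau>_def by (metis tr_invol)
    ultimately show ?thesis by simp
  qed
  have mis_sub: "misp S m par1 r1 \<subseteq> misp S m par r - {s}"
  proof
    fix s' assume "s' \<in> misp S m par1 r1"
    then have s': "s' \<in> S" "\<not> (s' \<noteq> r1 \<and> par1 s' = m)" unfolding misp_def by auto
    then have "s' \<noteq> s" using s_new by auto
    then show "s' \<in> misp S m par r - {s}" using s' r_iff p_iff unfolding misp_def by auto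
  qed
  have card_lt: "card (misp S m par1 r1) < card (misp S m par r)"
  proof -
    have "finite (misp S m par r)" unfolding misp_def using finS by simp
    moreover have "misp S m par1 r1 \<subset> misp S m par r" using mis_sub s by auto
    ultimately show ?thesis by (rule psubset_card_mono)
  qed
  have mis1: "\<forall>s'\<in>S. \<not> (s' \<noteq> r1 \<and> par1 s' = m) \<longrightarrow> (s' \<noteq> r1 \<and> card (A1 s') = D) \<or>
         (\<forall>x'\<in>V - {r1}. par1 x' = m \<and> x' \<notin> S \<longrightarrow> \<mu> s' = \<mu> x')"
  proof (intro ballI impI)
    fix s' assume s'S: "s' \<in> S" and nm: "\<not> (s' \<noteq> r1 \<and> par1 s' = m)"
    then have s's: "s' \<noteq> s" using s_new by auto
    have s'V: "s' \<in> V" using s'S S by auto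
    have old: "\<not> (s' \<noteq> r \<and> par s' = m)" using nm r_iff[OF s'S s's] p_iff[OF s'S s's] by simp
    from mis s'S old
    have "(s' \<noteq> r \<and> h s' = D) \<or> (\<forall>x\<in>V - {r}. par x = m \<and> x \<notin> S \<longrightarrow> \<mu> s' = \<mu> x)" by blast
    then show "(s' \<noteq> r1 \<and> card (A1 s') = D) \<or> (\<forall>x'\<in>V - {r1}. par1 x' = m \<and> x' \<notin> S \<longrightarrow> \<mu> s' = \<mu> x')"
    proof
      assume a: "s' \<noteq> r \<and> h s' = D"
      then show ?thesis using r_iff[OF s'S s's] hA1[OF s'V] tS[OF s'S s's] by simp
    next
      assume a: "\<forall>x\<in>V - {r}. par x = m \<and> x \<notin> S \<longrightarrow> \<mu> s' = \<mu> x"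
      have "\<forall>x'\<in>V - {r1}. par1 x' = m \<and> x' \<notin> S \<longrightarrow> \<mu> s' = \<mu> x'"
      proof (intro ballI impI)
        fix x' assume x': "x' \<in> V - {r1}" and px': "par1 x' = m \<and> x' \<notin> S"
        have "x' \<in> \<tau> ` Cm" using ch1 x' px' by auto
        then obtain u where u: "u \<in> Cm" "x' = \<tau> u" by auto
        have us: "u \<noteq> s" using u(1) smis Cm_def by auto
        have "u \<noteq> x"
        proof
          assume "u = x"
          then have "x' = s" using u unfolding \<tau>_def by simp
          then show False using px' sS by simp
        qed
        then have "x' = u" using u us unfolding \<tau>_def by (simp add: tr_def)
        then show "\<mu> s' = \<mu> x'" using a u Cm_def px' by auto
      qed
      then show ?thesis by blast
    qed
  qed
  have Pot1: "Pot V A1 \<mu> q = Pot V A \<mu> q + \<eta> * (real (card (A q \<inter> A s)) - real (card (A q \<inter> A x)))"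
    if q: "q \<in> V" "\<tau> q = q" for q
  proof -
    have "Pot V A1 \<mu> q = (\<Sum>z\<in>A q. sw V A (\<mu> \<circ> \<tau>) z)"
      unfolding A1_def using Pot_conj[OF tau q(1)] q(2) by simp
    also have "\<dots> = Pot V A \<mu> q + \<eta> * (real (card (A q \<inter> A s)) - real (card (A q \<inter> A x)))"
      by (rule Pot_transfer[OF q(1)]) (simp add: swt)
    finally show ?thesis .
  qed
  have Amx: "A m \<inter> A x = A m" using A_rec[of x] xV by auto
  have pot1: "\<forall>p\<in>V. card (A1 p) + 1 = D \<and> (\<exists>w\<in>V - {r1}. par1 w = p) \<longrightarrow> Pot V A1 \<mu> m \<le> Pot V A1 \<mu> p"
  proof (intro ballI impI)
    fix p assume p: "p \<in> V" and hp: "card (A1 p) + 1 = D \<and> (\<exists>w\<in>V - {r1}. par1 w = p)"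
    obtain w where w: "w \<in> V" "w \<noteq> r1" "\<tau> (par (\<tau> w)) = p" using hp par1_def by auto
    have tinv: "\<tau> (\<tau> y) = y" for y unfolding \<tau>_def by simp
    have tw1: "\<tau> w \<in> V" using tau w by auto
    have tw2: "\<tau> w \<noteq> r"
    proof
      assume "\<tau> w = r"
      then have "w = r1" unfolding r1_def using tinv[of w] by simp
      then show False using w by simp
    qed
    note tw = tw1 tw2
    have ptw: "par (\<tau> w) = \<tau> p" using arg_cong[OF w(3), of \<tau>] tinv by simp
    have htp: "h (\<tau> p) + 1 = D" using hp hA1[OF p] by simp
    have tpV: "\<tau> p \<in> V" using tau p by auto
    have hm1': "h m \<ge> 1" using h_rec[of m] m by simp
    have tpr: "\<tau> p \<noteq> r"
    proof
      assume "\<tau> p = r"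
      then have "h (\<tau> p) = 0" by simp
      then show False using htp hm hm1' by simp
    qed
    have "pdeg V par r (\<tau> p) \<ge> 2" using pdeg_child[OF tpV tpr tw ptw] .
    then have dtp: "d (\<tau> p) \<ge> 2" using deg tpV by simp
    have tpsx: "\<tau> p \<noteq> s" "\<tau> p \<noteq> x" using dtp ds dx by auto
    have tpp: "\<tau> p = p"
    proof -
      have "p \<noteq> s"
      proof
        assume "p = s" then have "\<tau> p = x" unfolding \<tau>_def by simp
        then show False using tpsx by simp
      qed
      moreover have "p \<noteq> x"
      proof
        assume "p = x" then have "\<tau> p = s" unfolding \<tau>_def by simp
        then show False using tpsx by simp
      qed
      ultimately show ?thesis unfolding \<tau>_def by simp
    qed
    have ex: "\<exists>w\<in>V - {r}. par w = p" using tw ptw tpp by auto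
    have old: "Pot V A \<mu> m \<le> Pot V A \<mu> p"
      using pot p htp tpp ex by simp
    have xp: "x \<notin> A p"
    proof
      assume "x \<in> A p"
      then have "p = x" using leaf_only[OF xV(1) xnc p] by simp
      then show False using tpsx tpp by simp
    qed
    have Apx: "A p \<inter> A x = A p \<inter> A m" using A_rec[of x] xV xp by auto
    have ci: "card (A p \<inter> A m) + card (A m \<inter> A s) \<le> card (A m) + card (A p \<inter> A s)"
      by (rule card_int_ineq) (use p m sV in auto)
    have "\<eta> * (real (card (A m \<inter> A s)) - real (card (A m \<inter> A x))) \<le>
          \<eta> * (real (card (A p \<inter> A s)) - real (card (A p \<inter> A x)))"
      unfolding Amx Apx using ci eta by (intro mult_left_mono) linarith+
    then show "Pot V A1 \<mu> m \<le> Pot V A1 \<mu> p" using Pot1[OF m(1) tm] Pot1[OF p tpp] old by linarith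
  qed
  define W where "W = sum \<mu> V"
  define F where "F y = y * (W - y)" for y :: real
  have cst1: "cst V r1 A1 \<mu> = (\<Sum>z\<in>V - {r}. F (sw V A (\<mu> \<circ> \<tau>) z))"
  proof -
    have "cst V r1 A1 \<mu> = cst V r A (\<mu> \<circ> \<tau>)" unfolding r1_def A1_def by (rule conj_cst[OF tau])
    moreover have "sum (\<mu> \<circ> \<tau>) V = sum \<mu> V" by (rule conj_sum[OF tau])
    ultimately show ?thesis unfolding cst_def F_def W_def by simp
  qed
  have cst0: "cst V r A \<mu> = (\<Sum>z\<in>V - {r}. F (sw V A \<mu> z))" unfolding cst_def F_def W_def ..
  have diff: "cst V r1 A1 \<mu> - cst V r A \<mu> =
     (\<Sum>z\<in>A s - A x. F (sw V A \<mu> z + \<eta>) - F (sw V A \<mu> z)) +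
     (\<Sum>z\<in>A x - A s. F (sw V A \<mu> z - \<eta>) - F (sw V A \<mu> z))"
    unfolding cst1 cst0 by (rule sum_transfer[OF xV(1) sV]) (simp add: swt)
  have cle: "cst V r1 A1 \<mu> \<le> cst V r A \<mu>"
  proof (cases "\<eta> = 0")
    case True
    then show ?thesis using diff by simp
  next
    case False
    then have "\<mu> s \<noteq> \<mu> x" unfolding \<eta>_def by simp
    have alt: "(s \<noteq> r \<and> h s = D) \<or> (\<forall>x\<in>V - {r}. par x = m \<and> x \<notin> S \<longrightarrow> \<mu> s = \<mu> x)"
      using mis sS smis by blast
    have "\<not> (\<forall>x\<in>V - {r}. par x = m \<and> x \<notin> S \<longrightarrow> \<mu> s = \<mu> x)"
    proof
      assume "\<forall>x\<in>V - {r}. par x = m \<and> x \<notin> S \<longrightarrow> \<mu> s = \<mu> x"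
      then have "\<mu> s = \<mu> x" using xV xS by blast
      then show False using \<open>\<mu> s \<noteq> \<mu> x\<close> by simp
    qed
    then have sD: "s \<noteq> r \<and> h s = D" using alt by blast
    have snc: "\<forall>w\<in>V - {r}. par w \<noteq> s" using maxh_nochild[OF hD sV] sD by simp
    have psV: "par s \<in> V" using parV sV sD by auto
    have hps: "h (par s) + 1 = D" using h_rec[of s] sV sD by simp
    have "Pot V A \<mu> m \<le> Pot V A \<mu> (par s)" using pot psV hps sV sD by auto
    moreover have "Pot V A \<mu> x = Pot V A \<mu> m + \<mu> x" using Pot_leaf[OF xV(1,2) xnc] xV by simp
    moreover have "Pot V A \<mu> s = Pot V A \<mu> (par s) + \<mu> s" using Pot_leaf[OF sV _ snc] sD by simp
    ultimately have pdiff: "Pot V A \<mu> x - Pot V A \<mu> s \<le> \<eta>" unfolding \<eta>_def by simp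
    have k1: "card (A x - A s) \<ge> 1"
    proof -
      have "x \<in> A x" using self_in xV by auto
      moreover have "x \<notin> A s" using leaf_only[OF xV(1) xnc sV] sx by auto
      ultimately have "A x - A s \<noteq> {}" by blast
      then show ?thesis using finA[OF xV(1)] by (simp add: Suc_leI card_gt_0_iff)
    qed
    have hxs: "h x = h s" using hx sD by simp
    have "cst V r1 A1 \<mu> - cst V r A \<mu> =
        2 * \<eta> * ((\<Sum>z\<in>A x - A s. sw V A \<mu> z) - (\<Sum>z\<in>A s - A x. sw V A \<mu> z)) - 2 * real (card (A x - A s)) * \<eta>^2"
      unfolding diff F_def by (rule quad_transfer_eq[OF xV(1) sV hxs])
    also have "(\<Sum>z\<in>A x - A s. sw V A \<mu> z) - (\<Sum>z\<in>A s - A x. sw V A \<mu> z) = Pot V A \<mu> x - Pot V A \<mu> s"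
      unfolding Pot_def by (rule sum_diff_Pot[OF xV(1) sV])
    finally have d2: "cst V r1 A1 \<mu> - cst V r A \<mu> = 2 * \<eta> * (Pot V A \<mu> x - Pot V A \<mu> s) - 2 * real (card (A x - A s)) * \<eta>^2" .
    have "2 * \<eta> * (Pot V A \<mu> x - Pot V A \<mu> s) \<le> 2 * \<eta> * \<eta>" using pdiff eta by (intro mult_left_mono) auto
    moreover have "2 * \<eta> * \<eta> \<le> 2 * real (card (A x - A s)) * \<eta>^2"
    proof -
      have "real (card (A x - A s)) \<ge> 1" using k1 by simp
      then have "1 * \<eta>^2 \<le> real (card (A x - A s)) * \<eta>^2" by (intro mult_right_mono) auto
      then show ?thesis by (simp add: power2_eq_square)
    qed
    ultimately show ?thesis using d2 by linarith
  qed
  have inv1: "S4inv V d \<mu> m D S par1 r1 A1"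
    unfolding S4inv_def using R1 deg1 m(1) mr1 hD1 hm1 cm1 S light mis1 pot1 by (intro conjI) assumption+
  show ?thesis using inv1 cle card_lt by blast
qed

lemma S4_step:
  assumes inv: "S4inv V d \<mu> m D S par r A" and s: "s \<in> misp S m par r"
  shows "\<exists>par' r' A'. S4inv V d \<mu> m D S par' r' A' \<and> cst V r' A' \<mu> \<le> cst V r A \<mu> \<and>
           card (misp S m par' r') < card (misp S m par r)"
proof -
  from inv[unfolded S4inv_def] show ?thesis
    apply (elim conjE)
    apply (rule S4_step0)
    apply assumption+
    apply (rule s)
    done
qed

lemma S4:
  assumes "S4inv V d \<mu> m D S par r A"
  shows "\<exists>par' r' A'. S4inv V d \<mu> m D S par' r' A' \<and> cst V r' A' \<mu> \<le> cst V r A \<mu> \<and> misp S m par' r' = {}"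
proof -
  have "\<forall>par r A. S4inv V d \<mu> m D S par r A \<and> card (misp S m par r) = n \<longrightarrow>
      (\<exists>par' r' A'. S4inv V d \<mu> m D S par' r' A' \<and> cst V r' A' \<mu> \<le> cst V r A \<mu> \<and> misp S m par' r' = {})" for n
  proof (induction n rule: less_induct)
    case (less n)
    show ?case
    proof (intro allI impI)
      fix par r A assume a: "S4inv V d \<mu> m D S par r A \<and> card (misp S m par r) = n"
      show "\<exists>par' r' A'. S4inv V d \<mu> m D S par' r' A' \<and> cst V r' A' \<mu> \<le> cst V r A \<mu> \<and> misp S m par' r' = {}"
      proof (cases "misp S m par r = {}")
        case True then show ?thesis using a by blast
      next
        case False
        then obtain s where "s \<in> misp S m par r" by blast
        then obtain par1 r1 A1 where 1: "S4inv V d \<mu> m D S par1 r1 A1" "cst V r1 A1 \<mu> \<le> cst V r A \<mu>"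
            "card (misp S m par1 r1) < card (misp S m par r)"
          using S4_step[of V d \<mu> m D S par r A s] a by blast
        then obtain par' r' A' where "S4inv V d \<mu> m D S par' r' A'" "cst V r' A' \<mu> \<le> cst V r1 A1 \<mu>" "misp S m par' r' = {}"
          using less.IH[of "card (misp S m par1 r1)"] a by blast
        then show ?thesis using 1 by (meson order.trans)
      qed
    qed
  qed
  then show ?thesis using assms by blast
qed


context rt
begin

lemma root_leaf_big:
  assumes mu: "\<forall>v\<in>V. 0 \<le> \<mu> v" and cent: "\<forall>p\<in>V - {r}. 2 * sw V A \<mu> p \<le> sum \<mu> V"
    and pr: "pdeg V par r r = 1" and z: "z \<in> V - {r}"
  shows "sw V A \<mu> z \<le> \<mu> r"
proof -
  have "card {u \<in> V - {r}. par u = r} = 1" using pr unfolding pdeg_def by simp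
  then obtain ch where chs: "{u \<in> V - {r}. par u = r} = {ch}" using card_1_singletonE by blast
  then have ch: "ch \<in> V" "ch \<noteq> r" "par ch = r" by auto
  have inA: "ch \<in> A v" if "v \<in> V - {r}" for v
  proof -
    have vv: "v \<in> V" "v \<noteq> r" using that by auto
    obtain t where t: "t \<in> A v" "t \<in> V" "t \<noteq> r" "par t = r" using top_exists[OF vv] by blast
    then have "t = ch" using chs by auto
    then show ?thesis using t by simp
  qed
  have "sw V A \<mu> ch = (\<Sum>v\<in>V. if v = r then 0 else \<mu> v)"
    unfolding sw_def by (rule sum.cong[OF refl]) (use inA in auto)
  also have "\<dots> = sum \<mu> V - \<mu> r"
  proof -
    have "(\<Sum>v\<in>V. if v = r then 0 else \<mu> v) = (\<Sum>v\<in>V. \<mu> v - (if v = r then \<mu> v else 0))"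
      by (rule sum.cong) auto
    also have "\<dots> = sum \<mu> V - \<mu> r" by (simp add: sum_subtractf sum.delta)
    finally show ?thesis .
  qed
  finally have swch: "sw V A \<mu> ch = sum \<mu> V - \<mu> r" .
  have "2 * sw V A \<mu> ch \<le> sum \<mu> V" using cent ch by auto
  moreover have "2 * sw V A \<mu> z \<le> sum \<mu> V" using cent z by auto
  ultimately show ?thesis using swch by linarith
qed

lemma leaf_nochild:
  assumes "v \<in> V" "v \<noteq> r" "d v = 1" "\<forall>v\<in>V. pdeg V par r v = d v"
  shows "\<forall>w\<in>V - {r}. par w \<noteq> v"
  using nochild_pdeg1[of v] assms by auto

lemma has_child:
  assumes "v \<in> V" "2 \<le> pdeg V par r v"
  shows "\<exists>w\<in>V - {r}. par w = v"
proof (rule ccontr)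
  assume "\<not> ?thesis"
  then have e: "{u \<in> V - {r}. par u = v} = {}" by auto
  have "pdeg V par r v \<le> 1" unfolding pdeg_def e by simp
  then show False using assms by simp
qed

lemma reindex_tau:
  assumes tau: "\<forall>v\<in>V. \<tau> v \<in> V \<and> \<tau> (\<tau> v) = v"
  shows "(\<Sum>p\<in>V - {\<tau> r}. G (\<tau> p)) = (\<Sum>z\<in>V - {r}. (G z :: real))"
proof (rule sum.reindex_bij_witness[of _ \<tau> \<tau>])
  fix q assume q: "q \<in> V - {r}"
  show "\<tau> (\<tau> q) = q" using q tau by auto
  show "\<tau> q \<in> V - {\<tau> r}"
  proof -
    have "\<tau> q \<noteq> \<tau> r"
    proof
      assume "\<tau> q = \<tau> r"
      then have "\<tau> (\<tau> q) = \<tau> (\<tau> r)" by simp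
      then show False using q tau by simp
    qed
    then show ?thesis using q tau by auto
  qed
next
  fix p assume p: "p \<in> V - {\<tau> r}"
  show "\<tau> (\<tau> p) = p" using p tau by auto
  show "\<tau> p \<in> V - {r}"
  proof -
    have "\<tau> p \<noteq> r"
    proof
      assume "\<tau> p = r"
      then have "\<tau> (\<tau> p) = \<tau> r" by simp
      then show False using p tau by simp
    qed
    then show ?thesis using p tau by auto
  qed
  show "G (\<tau> p) = G (\<tau> p)" ..
qed

lemma sum_conj_image:
  assumes tau: "\<forall>v\<in>V. \<tau> v \<in> V \<and> \<tau> (\<tau> v) = v" and q: "q \<in> V"
  shows "(\<Sum>z'\<in>\<tau> ` A (\<tau> q). G (\<tau> z')) = (\<Sum>z\<in>A (\<tau> q). (G z :: real))"
proof -
  have tq: "\<tau> q \<in> V" using tau q by auto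
  have sub: "A (\<tau> q) \<subseteq> V" using A_sub tq by auto
  have inj: "inj_on \<tau> (A (\<tau> q))" using tau sub by (metis inj_onI subsetD)
  have "(\<Sum>z'\<in>\<tau> ` A (\<tau> q). G (\<tau> z')) = (\<Sum>z\<in>A (\<tau> q). G (\<tau> (\<tau> z)))"
    by (simp add: sum.reindex[OF inj])
  also have "\<dots> = (\<Sum>z\<in>A (\<tau> q). G z)"
    by (rule sum.cong[OF refl]) (use sub tau in auto)
  finally show ?thesis .
qed

end

lemma exchange:
  assumes mu: "\<forall>v\<in>V. 0 \<le> \<mu> v"
    and M2: "2 \<le> card {v\<in>V. 2 \<le> d v}" and m: "m \<in> V" "2 \<le> d m"
    and mmin: "\<forall>k\<in>V. 2 \<le> d k \<longrightarrow> \<mu> m \<le> \<mu> k \<and> d m \<le> d k"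
    and S: "S \<subseteq> V" "\<forall>s\<in>S. d s = 1" "card S = d m - 1"
    and light: "\<forall>s\<in>S. \<forall>x\<in>V. d x = 1 \<and> x \<notin> S \<longrightarrow> \<mu> s \<le> \<mu> x"
    and T0: "tree V T0" "\<forall>v\<in>V. tree_deg T0 v = d v"
    and opt: "\<And>T. tree V T \<Longrightarrow> \<forall>v\<in>V. tree_deg T v = d v \<Longrightarrow> WIE V \<mu> T0 \<le> WIE V \<mu> T"
  shows "\<exists>T. tree V T \<and> (\<forall>v\<in>V. tree_deg T v = d v) \<and> WIE V \<mu> T \<le> WIE V \<mu> T0 \<and> (\<forall>s\<in>S. {m, s} \<in> T)"
proof -
  have Vne: "V \<noteq> {}" using m by auto
  obtain c par A where R: "rooted V par c A" and E0: "T0 = edges V par c"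
    and cent: "\<forall>p\<in>V - {c}. 2 * sw V A \<mu> p \<le> sum \<mu> V"
    using centroid[OF T0(1) Vne mu] by blast
  interpret rt V par c A by (rule rt.intro[OF R])
  have deg: "\<forall>v\<in>V. pdeg V par c v = d v" using T0(2) tree_deg_rt E0 by auto
  have WIE0: "WIE V \<mu> T0 = 2 * cst V c A \<mu>" using WIE_rt E0 by simp
  have ropt: "cst V c A \<mu> \<le> cst V c A' \<mu>"
    if R': "rooted V par' c A'" and d': "\<forall>x\<in>V. pdeg V par' c x = pdeg V par c x" for par' A'
  proof -
    interpret r': rt V par' c A' by (rule rt.intro[OF R'])
    have "tree V (edges V par' c)" by (rule r'.tree_edges)
    moreover have "\<forall>v\<in>V. tree_deg (edges V par' c) v = d v" using r'.tree_deg_rt d' deg by auto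
    ultimately have "WIE V \<mu> T0 \<le> WIE V \<mu> (edges V par' c)" by (rule opt)
    then show ?thesis using WIE0 r'.WIE_rt by simp
  qed
  have AMc: "\<forall>u\<in>V - {c}. \<forall>v\<in>V - {c}. h u < h v \<longrightarrow> sw V A \<mu> v \<le> sw V A \<mu> u"
    by (rule AM[OF mu cent]) (rule ropt)
  define W where "W = sum \<mu> V"
  define D where "D = Max (h ` V)"
  have hD: "\<forall>v\<in>V. h v \<le> D" unfolding D_def using finV by (auto intro: Max_ge)
  have "D \<in> h ` V" unfolding D_def by (rule Max_in) (use Vne in auto)
  then obtain vD where vD: "vD \<in> V" "h vD = D" by auto
  have "{v\<in>V. 2 \<le> d v} - {c} \<noteq> {}"
  proof
    assume "{v\<in>V. 2 \<le> d v} - {c} = {}"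
    then have "{v\<in>V. 2 \<le> d v} \<subseteq> {c}" by auto
    then have "card {v\<in>V. 2 \<le> d v} \<le> card {c}" by (rule card_mono[rotated]) simp
    then show False using M2 by simp
  qed
  then obtain k where k: "k \<in> V" "k \<noteq> c" "2 \<le> d k" by auto
  obtain wk where wk: "wk \<in> V - {c}" "par wk = k" using has_child[of k] k deg by auto
  have hwk: "h wk = Suc (h k)" using h_rec[of wk] wk by auto
  have hk: "h k \<ge> 1" using h_rec[of k] k by auto
  have D2: "D \<ge> 2" using hD wk hwk hk by fastforce
  have vDc: "vD \<noteq> c" using vD D2 by auto
  define x0 where "x0 = par vD"
  have x0: "x0 \<in> V" "h x0 + 1 = D" using parV[of vD] h_rec[of vD] vD vDc unfolding x0_def by auto
  define Q where "Q = {p \<in> V. h p + 1 = D \<and> (\<exists>w\<in>V - {c}. par w = p)}"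
  have x0Q: "x0 \<in> Q" unfolding Q_def using x0 vD vDc x0_def by auto
  have finQ: "finite Q" unfolding Q_def by simp
  define pm where "pm = Min (Pot V A \<mu> ` Q)"
  have "pm \<in> Pot V A \<mu> ` Q" unfolding pm_def using finQ x0Q by (intro Min_in) auto
  then obtain x where xQ: "x \<in> Q" and xpm: "Pot V A \<mu> x = pm" by auto
  have xmin: "Pot V A \<mu> x \<le> Pot V A \<mu> p" if "p \<in> Q" for p
    using xpm finQ that unfolding pm_def by (simp add: Min_le)
  have xV: "x \<in> V" "h x + 1 = D" and xch: "\<exists>w\<in>V - {c}. par w = x" using xQ Q_def by auto
  have xc: "x \<noteq> c" using xV D2 by auto
  obtain wx where wx: "wx \<in> V" "wx \<noteq> c" "par wx = x" using xch by auto
  have dx: "2 \<le> d x" using pdeg_child[OF xV(1) xc wx] deg xV by auto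
  have mux: "\<mu> m \<le> \<mu> x" "d m \<le> d x" using mmin xV dx by auto
  define C where "C = {u \<in> V - {c}. par u = x}"
  have finC: "finite C" unfolding C_def by simp
  have cardC: "card C = d x - 1" using deg xV xc unfolding C_def pdeg_def by auto
  have Cleaf: "u \<in> V \<and> u \<noteq> c \<and> par u = x \<and> h u = D \<and> (\<forall>w\<in>V - {c}. par w \<noteq> u) \<and> d u = 1"
    if u: "u \<in> C" for u
  proof -
    have u1: "u \<in> V" "u \<noteq> c" "par u = x" using u unfolding C_def by auto
    have hu: "h u = D" using h_rec[of u] u1 xV by simp
    have nc: "\<forall>w\<in>V - {c}. par w \<noteq> u" using maxh_nochild[OF hD u1(1) hu] .
    have "d u = 1" using pdeg_nochild[OF u1(1,2) nc] deg u1 by simp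
    then show ?thesis using u1 hu nc by simp
  qed
  have finS: "finite S" by (rule finite_subset[OF S(1) finV])
  have cSC: "card (S \<inter> C) \<le> d m - 1" using S(3) card_mono[OF finS, of "S \<inter> C"] by auto
  have cCS: "card (C - S) = card C - card (S \<inter> C)" using finC by (simp add: card_Diff_subset_Int Int_commute)
  have "d m - 1 - card (S \<inter> C) \<le> card (C - S)" using cCS cardC mux cSC by linarith
  then obtain E where E: "E \<subseteq> C - S" "card E = d m - 1 - card (S \<inter> C)" "finite E"
    by (rule obtain_subset_with_card_n)
  define C1 where "C1 = (S \<inter> C) \<union> E"
  have C1C: "C1 \<subseteq> C" using E unfolding C1_def by auto
  have SC1: "S \<inter> C \<subseteq> C1" unfolding C1_def by auto
  have cardC1: "card C1 = d m - 1"
  proof -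
    have "card C1 = card (S \<inter> C) + card E" unfolding C1_def
      by (rule card_Un_disjoint) (use finS E in auto)
    then show ?thesis using E cSC by simp
  qed
  define Rl where "Rl = C - C1"
  have RlC: "Rl \<subseteq> C" unfolding Rl_def by auto
  have cardR: "card Rl = d x - d m"
    unfolding Rl_def using card_Diff_subset[OF finite_subset[OF C1C finC] C1C] cardC cardC1 mux m(2) by simp
  define \<tau> where "\<tau> = tr m x"
  have tinv: "\<tau> (\<tau> y) = y" for y unfolding \<tau>_def by simp
  have tau: "\<forall>v\<in>V. \<tau> v \<in> V \<and> \<tau> (\<tau> v) = v" unfolding \<tau>_def using tr_in m xV by auto
  have tm: "\<tau> m = x" and tx: "\<tau> x = m" unfolding \<tau>_def by auto
  have tleaf: "\<tau> u = u" if "d u = 1" for u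
  proof -
    have "u \<noteq> m" "u \<noteq> x" using that m dx by auto
    then show ?thesis unfolding \<tau>_def by simp
  qed
  define par1 where "par1 v = \<tau> (par (\<tau> v))" for v
  define r1 where "r1 = \<tau> c"
  define A1 where "A1 v = \<tau> ` A (\<tau> v)" for v
  have R1: "rooted V par1 r1 A1" unfolding par1_def r1_def A1_def by (rule conj_rooted[OF tau])
  interpret t1: rt V par1 r1 A1 by (rule rt.intro[OF R1])
  have r1_iff: "(u = r1) = (\<tau> u = c)" for u unfolding r1_def using tinv by metis
  have lrp_inst: "lrp V par1 r1 A1 Rl m x"
  proof (unfold_locales)
    show "Rl \<subseteq> V - {r1}"
    proof
      fix u assume u: "u \<in> Rl"
      then have "u \<in> C" using RlC by auto
      then have "u \<in> V" "u \<noteq> c" "d u = 1" using Cleaf by auto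
      then show "u \<in> V - {r1}" using r1_iff tleaf by auto
    qed
    show "\<forall>w\<in>V - {r1}. par1 w \<notin> Rl"
    proof (intro ballI notI)
      fix w assume w: "w \<in> V - {r1}" and pw: "par1 w \<in> Rl"
      have tw: "\<tau> w \<in> V" "\<tau> w \<noteq> c" using w tau r1_iff by auto
      have l: "par1 w \<in> C" using pw RlC by auto
      then have "\<tau> (par1 w) = par1 w" using Cleaf tleaf by auto
      then have "par (\<tau> w) = par1 w" unfolding par1_def using tinv by simp
      then show False using Cleaf[OF l] tw by auto
    qed
    show "\<forall>u\<in>Rl. par1 u = m"
    proof
      fix u assume "u \<in> Rl"
      then have "u \<in> C" using RlC by auto
      then have "par u = x" "\<tau> u = u" using Cleaf tleaf by auto
      then show "par1 u = m" unfolding par1_def using tx by simp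
    qed
    show "x \<in> V" by (rule xV(1))
    show "x \<notin> Rl" using RlC Cleaf dx by fastforce
  qed
  interpret t2: lrp V par1 r1 A1 Rl m x by (rule lrp_inst)
  define \<epsilon> where "\<epsilon> = \<mu> x - \<mu> m + sum \<mu> Rl"
  have eps: "\<epsilon> \<ge> 0"
  proof -
    have "sum \<mu> Rl \<ge> 0" using mu RlC Cleaf by (intro sum_nonneg) auto
    then show ?thesis unfolding \<epsilon>_def using mux by simp
  qed
  define g where "g z = sw V A \<mu> z + \<epsilon> * (of_bool (z \<in> A m) - of_bool (z \<in> A x))" for z
  have sw2: "sw V t2.A'' \<mu> z' = g (\<tau> z')" if z': "z' \<in> V" for z'
  proof -
    have "sw V t2.A'' \<mu> z' = sw V A1 \<mu> z' + sum \<mu> Rl * (of_bool (z' \<in> A1 x) - of_bool (z' \<in> A1 m))"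
      by (rule t2.sw''[OF z'])
    also have "sw V A1 \<mu> z' = sw V A (\<mu> \<circ> \<tau>) (\<tau> z')" unfolding A1_def by (rule conj_sw[OF tau z'])
    also have "(z' \<in> A1 x) = (\<tau> z' \<in> A m)" unfolding A1_def using conj_mem[OF tau z' xV(1)] tx by simp
    also have "(z' \<in> A1 m) = (\<tau> z' \<in> A x)" unfolding A1_def using conj_mem[OF tau z' m(1)] tm by simp
    also have "sw V A (\<mu> \<circ> \<tau>) (\<tau> z') = sw V A \<mu> (\<tau> z') + (\<mu> x - \<mu> m) * (of_bool (\<tau> z' \<in> A m) - of_bool (\<tau> z' \<in> A x))"
      unfolding \<tau>_def by (rule sw_tr[OF m(1) xV(1)])
    finally show ?thesis unfolding g_def \<epsilon>_def by (simp add: algebra_simps)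
  qed
  define F where "F y = y * (W - y)" for y :: real
  have cst2: "cst V r1 t2.A'' \<mu> = (\<Sum>z\<in>V - {c}. F (g z))"
  proof -
    have "cst V r1 t2.A'' \<mu> = (\<Sum>p\<in>V - {\<tau> c}. F (g (\<tau> p)))"
      unfolding cst_def F_def W_def r1_def by (rule sum.cong[OF refl]) (simp add: sw2)
    also have "\<dots> = (\<Sum>z\<in>V - {c}. F (g z))" by (rule reindex_tau[OF tau])
    finally show ?thesis .
  qed
  have cst0: "cst V c A \<mu> = (\<Sum>z\<in>V - {c}. F (sw V A \<mu> z))" unfolding cst_def F_def W_def ..
  have diff: "cst V r1 t2.A'' \<mu> - cst V c A \<mu> =
     (\<Sum>z\<in>A m - A x. F (sw V A \<mu> z + \<epsilon>) - F (sw V A \<mu> z)) +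
     (\<Sum>z\<in>A x - A m. F (sw V A \<mu> z - \<epsilon>) - F (sw V A \<mu> z))"
    unfolding cst2 cst0 by (rule sum_transfer[OF xV(1) m(1)]) (simp add: g_def)
  have hmD: "h m + 1 \<le> D"
  proof (cases "m = c")
    case True then show ?thesis using D2 by simp
  next
    case False
    obtain w where "w \<in> V - {c}" "par w = m" using has_child[of m] m deg by auto
    then have "h w = Suc (h m)" using h_rec[of w] by auto
    then show ?thesis using hD \<open>w \<in> V - {c}\<close> by fastforce
  qed
  have cle: "cst V r1 t2.A'' \<mu> \<le> cst V c A \<mu>"
  proof (cases "h m < h x")
    case True
    define t where "t = h x - h m"
    have "(\<Sum>z\<in>A m - A x. F (sw V A \<mu> z + \<epsilon>) - F (sw V A \<mu> z)) +
       (\<Sum>z\<in>A x - A m. F (sw V A \<mu> z - \<epsilon>) - F (sw V A \<mu> z)) \<le> 0"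
    proof (rule pairing[OF m(1) xV(1), of t])
      show "h x = h m + t" unfolding t_def using True by simp
    next
      fix y z assume y: "y \<in> A m - A x" and z: "z \<in> A x - A m" and hz: "h z = h y + t"
      have yV: "y \<in> V - {c}" using y A_sub' m by auto
      have zV: "z \<in> V - {c}" using z A_sub' xV by auto
      have "h y < h z" using hz True t_def by simp
      then have "sw V A \<mu> z \<le> sw V A \<mu> y" using AMc yV zV by blast
      moreover have "F (sw V A \<mu> y + \<epsilon>) - F (sw V A \<mu> y) + (F (sw V A \<mu> z - \<epsilon>) - F (sw V A \<mu> z))
        = (2 * \<epsilon>) * (sw V A \<mu> z - sw V A \<mu> y - \<epsilon>)" unfolding F_def by (simp add: algebra_simps)
      ultimately show "F (sw V A \<mu> y + \<epsilon>) - F (sw V A \<mu> y) + (F (sw V A \<mu> z - \<epsilon>) - F (sw V A \<mu> z)) \<le> 0"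
        using eps mult_nonneg_nonpos[of "2 * \<epsilon>" "sw V A \<mu> z - sw V A \<mu> y - \<epsilon>"] by simp
    next
      fix z assume z: "z \<in> A x - A m"
      have zV: "z \<in> V - {c}" using z A_sub' xV by auto
      have "2 * sw V A \<mu> z \<le> W" using cent zV unfolding W_def by blast
      moreover have "F (sw V A \<mu> z - \<epsilon>) - F (sw V A \<mu> z) = - (\<epsilon> * (W - 2 * sw V A \<mu> z + \<epsilon>))"
        unfolding F_def by (simp add: algebra_simps)
      ultimately show "F (sw V A \<mu> z - \<epsilon>) - F (sw V A \<mu> z) \<le> 0"
        using eps mult_nonneg_nonneg[of \<epsilon> "W - 2 * sw V A \<mu> z + \<epsilon>"] by simp
    qed
    then show ?thesis using diff by simp
  next
    case False
    then have hmx: "h m = h x" using hmD xV by simp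
    then have mc: "m \<noteq> c" using xc h_rec[of x] xV by auto
    have "m \<in> Q" unfolding Q_def using m hmx xV has_child[of m] deg mc by auto
    then have pmx: "Pot V A \<mu> x \<le> Pot V A \<mu> m" by (rule xmin)
    have "cst V r1 t2.A'' \<mu> - cst V c A \<mu> =
        2 * \<epsilon> * ((\<Sum>z\<in>A x - A m. sw V A \<mu> z) - (\<Sum>z\<in>A m - A x. sw V A \<mu> z)) - 2 * real (card (A x - A m)) * \<epsilon>^2"
      unfolding diff F_def by (rule quad_transfer_eq[OF xV(1) m(1) hmx[symmetric]])
    also have "(\<Sum>z\<in>A x - A m. sw V A \<mu> z) - (\<Sum>z\<in>A m - A x. sw V A \<mu> z) = Pot V A \<mu> x - Pot V A \<mu> m"
      unfolding Pot_def by (rule sum_diff_Pot[OF xV(1) m(1)])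
    finally have "cst V r1 t2.A'' \<mu> - cst V c A \<mu> = 2 * \<epsilon> * (Pot V A \<mu> x - Pot V A \<mu> m) - 2 * real (card (A x - A m)) * \<epsilon>^2" .
    moreover have "2 * \<epsilon> * (Pot V A \<mu> x - Pot V A \<mu> m) \<le> 0" using eps pmx by (simp add: mult_nonneg_nonpos)
    moreover have "0 \<le> 2 * real (card (A x - A m)) * \<epsilon>^2" by simp
    ultimately show ?thesis by linarith
  qed
  have A''_nR: "t2.A'' v = A1 v" if "v \<notin> Rl" for v unfolding t2.A''_def using that by simp
  have par''_nR: "t2.par'' v = par1 v" if "v \<notin> Rl" for v unfolding t2.par''_def using that by simp
  have hA1: "card (A1 v) = h (\<tau> v)" if "v \<in> V" for v unfolding A1_def by (rule conj_h[OF tau that])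
  have mRl: "m \<notin> Rl" using RlC Cleaf m(2) by fastforce
  have xRl: "x \<notin> Rl" using RlC Cleaf dx by fastforce
  have deg2: "\<forall>v\<in>V. pdeg V t2.par'' r1 v = d v"
  proof
    fix v assume v: "v \<in> V"
    have e: "pdeg V t2.par'' r1 v + (if v = m \<and> Rl \<noteq> {} then card Rl else 0) =
        pdeg V par1 r1 v + (if v = x then card Rl else 0)" by (rule t2.pdeg''[OF v])
    have p1: "pdeg V par1 r1 v = d (\<tau> v)" unfolding par1_def r1_def using conj_pdeg[OF tau v] deg tau v by auto
    show "pdeg V t2.par'' r1 v = d v"
    proof (cases "m = x")
      case True
      then have "Rl = {}" using cardR finite_subset[OF RlC finC] by simp
      moreover have "\<tau> v = v" unfolding \<tau>_def using True by (simp add: tr_def)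
      ultimately show ?thesis using e p1 by simp
    next
      case False
      show ?thesis
      proof (cases "v = m")
        case True
        then have "\<tau> v = x" using tm by simp
        moreover have "Rl = {} \<Longrightarrow> d x = d m" using cardR mux finite_subset[OF RlC finC] by simp
        ultimately show ?thesis using e p1 True False cardR mux by (cases "Rl = {}") auto
      next
        case vm: False
        show ?thesis
        proof (cases "v = x")
          case True
          then have "\<tau> v = m" using tx by simp
          then show ?thesis using e p1 True False cardR mux by auto
        next
          case False
          then have "\<tau> v = v" unfolding \<tau>_def using vm by simp
          then show ?thesis using e p1 False vm by simp
        qed
      qed
    qed
  qed
  have mr1: "m \<noteq> r1" using r1_iff tm xc by simp
  have hD2: "\<forall>v\<in>V. card (t2.A'' v) \<le> D"
  proof
    fix v assume v: "v \<in> V"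
    show "card (t2.A'' v) \<le> D"
    proof (cases "v \<in> Rl")
      case True
      have "v \<notin> A1 x" using t2.x_notin_Ay[OF True] .
      then have "card (t2.A'' v) = Suc (card (A1 x))" unfolding t2.A''_def using True t1.finA[OF xV(1)] by simp
      also have "card (A1 x) = h m" using hA1[OF xV(1)] tx by simp
      finally show ?thesis using hmD by simp
    next
      case False
      then show ?thesis using A''_nR hA1[OF v] hD tau v by auto
    qed
  qed
  have hm2: "card (t2.A'' m) + 1 = D" using A''_nR[OF mRl] hA1[OF m(1)] tm xV by simp
  have ch2: "{u \<in> V - {r1}. t2.par'' u = m} = C1"
  proof
    show "{u \<in> V - {r1}. t2.par'' u = m} \<subseteq> C1"
    proof
      fix u assume u: "u \<in> {u \<in> V - {r1}. t2.par'' u = m}"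
      have uV: "u \<in> V" "u \<noteq> r1" "t2.par'' u = m" using u by auto
      have uR: "u \<notin> Rl"
      proof
        assume uR: "u \<in> Rl"
        then have "t2.par'' u = x" unfolding t2.par''_def by simp
        then have "m = x" using uV by simp
        then have "Rl = {}" using cardR finite_subset[OF RlC finC] by simp
        then show False using uR by simp
      qed
      then have "\<tau> (par (\<tau> u)) = m" using uV par''_nR unfolding par1_def by simp
      then have ptu: "par (\<tau> u) = x" using tinv[of "par (\<tau> u)"] tm by metis
      have tu: "\<tau> u \<in> V" "\<tau> u \<noteq> c" using uV tau r1_iff by auto
      then have tuC: "\<tau> u \<in> C" unfolding C_def using ptu by simp
      then have "\<tau> (\<tau> u) = \<tau> u" using Cleaf tleaf by auto
      then have "u \<in> C" using tuC tinv by simp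
      then show "u \<in> C1" using uR Rl_def by auto
    qed
  next
    show "C1 \<subseteq> {u \<in> V - {r1}. t2.par'' u = m}"
    proof
      fix u assume u: "u \<in> C1"
      then have uC: "u \<in> C" using C1C by auto
      have l: "u \<in> V" "u \<noteq> c" "par u = x" "d u = 1" using Cleaf[OF uC] by auto
      have tu: "\<tau> u = u" using tleaf l by simp
      have "u \<notin> Rl" using u Rl_def by auto
      then have "t2.par'' u = m" using par''_nR unfolding par1_def using tu l tx by simp
      moreover have "u \<noteq> r1" using r1_iff tu l by simp
      ultimately show "u \<in> {u \<in> V - {r1}. t2.par'' u = m}" using l by simp
    qed
  qed
  have cm2: "card {u \<in> V - {r1}. t2.par'' u = m} = card S" using ch2 cardC1 S(3) by simp
  have mis2: "\<forall>s\<in>S. \<not> (s \<noteq> r1 \<and> t2.par'' s = m) \<longrightarrow> (s \<noteq> r1 \<and> card (t2.A'' s) = D) \<or>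
         (\<forall>x'\<in>V - {r1}. t2.par'' x' = m \<and> x' \<notin> S \<longrightarrow> \<mu> s = \<mu> x')"
  proof (intro ballI impI)
    fix s assume sS: "s \<in> S" and nm: "\<not> (s \<noteq> r1 \<and> t2.par'' s = m)"
    have sV: "s \<in> V" "d s = 1" using sS S by auto
    have ts: "\<tau> s = s" using tleaf sV by simp
    have sRl: "s \<notin> Rl" using sS SC1 Rl_def by auto
    have sr1: "(s \<noteq> r1) = (s \<noteq> c)" using r1_iff ts by simp
    show "(s \<noteq> r1 \<and> card (t2.A'' s) = D) \<or> (\<forall>x'\<in>V - {r1}. t2.par'' x' = m \<and> x' \<notin> S \<longrightarrow> \<mu> s = \<mu> x')"
    proof (cases "s \<noteq> c \<and> h s = D")
      case True
      then have "card (t2.A'' s) = D" using A''_nR[OF sRl] hA1[OF sV(1)] ts by simp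
      then show ?thesis using True sr1 by simp
    next
      case False
      have "\<forall>x'\<in>V - {r1}. t2.par'' x' = m \<and> x' \<notin> S \<longrightarrow> \<mu> s = \<mu> x'"
      proof (intro ballI impI)
        fix x' assume x': "x' \<in> V - {r1}" and px': "t2.par'' x' = m \<and> x' \<notin> S"
        then have "x' \<in> C1" using ch2 by auto
        then have x'C: "x' \<in> C" using C1C by auto
        have lx: "x' \<in> V" "x' \<noteq> c" "h x' = D" "\<forall>w\<in>V - {c}. par w \<noteq> x'" "d x' = 1" using Cleaf[OF x'C] by auto
        have swx: "sw V A \<mu> x' = \<mu> x'" using sw_leaf[OF lx(1,2,4)] .
        have le1: "\<mu> s \<le> \<mu> x'" using light sS lx px' by blast
        have le2: "\<mu> x' \<le> \<mu> s"
        proof (cases "s = c")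
          case True
          have "pdeg V par c c = 1" using deg sV True by simp
          then have "sw V A \<mu> x' \<le> \<mu> c" using root_leaf_big[OF mu cent] lx by auto
          then show ?thesis using swx True by simp
        next
          case sc: False
          then have "h s < D" using False hD sV by fastforce
          then have "sw V A \<mu> x' \<le> sw V A \<mu> s" using AMc sV sc lx by auto
          moreover have "sw V A \<mu> s = \<mu> s" using sw_leaf[OF sV(1) sc] leaf_nochild[OF sV(1) sc sV(2) deg] by simp
          ultimately show ?thesis using swx by simp
        qed
        show "\<mu> s = \<mu> x'" using le1 le2 by simp
      qed
      then show ?thesis by blast
    qed
  qed
  define PG where "PG y = Pot V A \<mu> y + \<epsilon> * (real (card (A y \<inter> A m)) - real (card (A y \<inter> A x)))" for y
  have Pot2: "Pot V t2.A'' \<mu> q = PG (\<tau> q)" if q: "q \<in> V" "q \<notin> Rl" for q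
  proof -
    have dom: "t2.A'' q = \<tau> ` A (\<tau> q)" using A''_nR[OF q(2)] unfolding A1_def by simp
    have "Pot V t2.A'' \<mu> q = (\<Sum>z'\<in>t2.A'' q. sw V t2.A'' \<mu> z')" unfolding Pot_def ..
    also have "\<dots> = (\<Sum>z'\<in>\<tau> ` A (\<tau> q). g (\<tau> z'))"
      unfolding dom
    proof (rule sum.cong[OF refl])
      fix z' assume "z' \<in> \<tau> ` A (\<tau> q)"
      then have "z' \<in> V" using A_sub[of "\<tau> q"] tau q by auto
      then show "sw V t2.A'' \<mu> z' = g (\<tau> z')" by (rule sw2)
    qed
    also have "\<dots> = (\<Sum>z\<in>A (\<tau> q). g z)" by (rule sum_conj_image[OF tau q(1)])
    also have "\<dots> = PG (\<tau> q)" unfolding PG_def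
      by (rule Pot_transfer) (use tau q g_def in auto)
    finally show ?thesis .
  qed
  have pot2: "\<forall>p\<in>V. card (t2.A'' p) + 1 = D \<and> (\<exists>w\<in>V - {r1}. t2.par'' w = p) \<longrightarrow> Pot V t2.A'' \<mu> m \<le> Pot V t2.A'' \<mu> p"
  proof (intro ballI impI)
    fix p assume p: "p \<in> V" and hp: "card (t2.A'' p) + 1 = D \<and> (\<exists>w\<in>V - {r1}. t2.par'' w = p)"
    obtain w where w: "w \<in> V" "w \<noteq> r1" "t2.par'' w = p" using hp by auto
    have pR: "p \<notin> Rl"
    proof
      assume pR: "p \<in> Rl"
      show False
      proof (cases "w \<in> Rl")
        case True
        then have "p = x" using w unfolding t2.par''_def by simp
        then show False using pR xRl by simp
      next
        case False
        then have "par1 w = p" using w par''_nR by simp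
        then show False using t2.leaves w pR by auto
      qed
    qed
    have htp: "h (\<tau> p) + 1 = D" using hp A''_nR[OF pR] hA1[OF p] by simp
    have tpV: "\<tau> p \<in> V" using tau p by auto
    have tpch: "\<exists>w\<in>V - {c}. par w = \<tau> p"
    proof (cases "w \<in> Rl")
      case True
      then have "p = x" using w unfolding t2.par''_def by simp
      then have tp: "\<tau> p = m" using tx by simp
      have "h m \<ge> 1" using htp tp D2 hmD by simp
      then have "m \<noteq> c" by auto
      then show ?thesis using has_child[of m] m deg tp by auto
    next
      case False
      then have "\<tau> (par (\<tau> w)) = p" using w par''_nR unfolding par1_def by simp
      then have "par (\<tau> w) = \<tau> p" using tinv by metis
      moreover have "\<tau> w \<in> V" "\<tau> w \<noteq> c" using w tau r1_iff by auto
      ultimately show ?thesis by blast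
    qed
    have tpQ: "\<tau> p \<in> Q" unfolding Q_def using tpV htp tpch by simp
    have base: "Pot V A \<mu> x \<le> Pot V A \<mu> (\<tau> p)" by (rule xmin[OF tpQ])
    have ci: "card (A (\<tau> p) \<inter> A x) + card (A x \<inter> A m) \<le> card (A x) + card (A (\<tau> p) \<inter> A m)"
      by (rule card_int_ineq) (use tpV xV m in auto)
    have "\<epsilon> * (real (card (A x \<inter> A m)) - real (card (A x \<inter> A x))) \<le>
          \<epsilon> * (real (card (A (\<tau> p) \<inter> A m)) - real (card (A (\<tau> p) \<inter> A x)))"
      using ci eps by (intro mult_left_mono) simp_all
    then have "PG x \<le> PG (\<tau> p)" unfolding PG_def using base by linarith
    then show "Pot V t2.A'' \<mu> m \<le> Pot V t2.A'' \<mu> p" using Pot2[OF m(1) mRl] Pot2[OF p pR] tm by simp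
  qed
  have inv2: "S4inv V d \<mu> m D S t2.par'' r1 t2.A''"
    unfolding S4inv_def using t2.rooted'' deg2 m(1) mr1 hD2 hm2 cm2 S(1,2) light mis2 pot2
    by (intro conjI) assumption+
  obtain par3 r3 A3 where inv3: "S4inv V d \<mu> m D S par3 r3 A3" and c3: "cst V r3 A3 \<mu> \<le> cst V r1 t2.A'' \<mu>"
    and mis3: "misp S m par3 r3 = {}"
    using S4[OF inv2] by blast
  have R3: "rooted V par3 r3 A3" and deg3: "\<forall>v\<in>V. pdeg V par3 r3 v = d v" using inv3 unfolding S4inv_def by simp_all
  interpret t3: rt V par3 r3 A3 by (rule rt.intro[OF R3])
  define T where "T = edges V par3 r3"
  have "tree V T" unfolding T_def by (rule t3.tree_edges)
  moreover have "\<forall>v\<in>V. tree_deg T v = d v" unfolding T_def using t3.tree_deg_rt deg3 by simp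
  moreover have "WIE V \<mu> T \<le> WIE V \<mu> T0" unfolding T_def using t3.WIE_rt WIE0 c3 cle by simp
  moreover have "\<forall>s\<in>S. {m, s} \<in> T"
  proof
    fix s assume sS: "s \<in> S"
    then have "s \<noteq> r3" "par3 s = m" using mis3 unfolding misp_def by auto
    moreover have "s \<in> V" using sS S by auto
    ultimately have "{s, par3 s} \<in> T" unfolding T_def edges_def by auto
    then show "{m, s} \<in> T" using \<open>par3 s = m\<close> by (simp add: insert_commute)
  qed
  ultimately show ?thesis by blast
qed


section \<open>Attaching a star of leaves\<close>

lemma attach:
  fixes \<mu> :: "nat \<Rightarrow> real"
  assumes T1: "tree V' H1" and m1: "m1 \<in> V'" and SV: "S \<inter> V' = {}" and finS: "finite S"
  defines "V \<equiv> V' \<union> S" and "H \<equiv> H1 \<union> (\<lambda>s. {m1, s}) ` S" and "\<mu>' \<equiv> \<mu>(m1 := \<mu> m1 + sum \<mu> S)"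
  shows "tree V H"
    and "\<And>v. v \<in> V \<Longrightarrow> tree_deg H v = (if v \<in> S then 1 else if v = m1 then tree_deg H1 m1 + card S else tree_deg H1 v)"
    and "WIE V \<mu> H = WIE V' \<mu>' H1 + 2 * (\<Sum>s\<in>S. \<mu> s * (sum \<mu> V - \<mu> s))"
proof -
  obtain par1 A1 where R1: "rooted V' par1 m1 A1" and E1: "H1 = edges V' par1 m1"
    using tree_rooted[OF T1 m1] by blast
  interpret t1: rt V' par1 m1 A1 by (rule rt.intro[OF R1])
  define par where "par v = (if v \<in> S then m1 else par1 v)" for v
  define A where "A v = (if v \<in> S then {v} else A1 v)" for v
  have m1S: "m1 \<notin> S" using SV m1 by auto
  have finV: "finite V" unfolding V_def using finS by simp
  have R: "rooted V par m1 A"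
    unfolding rooted_def
  proof (intro conjI ballI)
    show "finite V" by (rule finV)
    show "m1 \<in> V" unfolding V_def using m1 by simp
    show "A m1 = {}" unfolding A_def using m1S by simp
    fix v assume v: "v \<in> V"
    show "A v \<subseteq> V" unfolding A_def V_def using t1.A_sub v V_def by auto
  next
    fix v assume v: "v \<in> V - {m1}"
    have g: "par v \<in> V \<and> A v = insert v (A (par v)) \<and> v \<notin> A (par v)"
    proof (cases "v \<in> S")
      case True
      then show ?thesis unfolding par_def A_def V_def using m1S m1 by simp
    next
      case False
      then have vV: "v \<in> V'" "v \<noteq> m1" using v V_def by auto
      have pv: "par1 v \<in> V'" using t1.parV vV by auto
      then have "par1 v \<notin> S" using SV by auto
      then show ?thesis unfolding par_def A_def V_def using False pv t1.A_rec[OF vV] t1.notin_Apar[OF vV] by simp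
    qed
    then show "par v \<in> V" "A v = insert v (A (par v))" "v \<notin> A (par v)" by auto
  qed
  interpret t: rt V par m1 A by (rule rt.intro[OF R])
  have EH: "H = edges V par m1"
  proof -
    have "V - {m1} = (V' - {m1}) \<union> S" unfolding V_def using m1S by auto
    then have "edges V par m1 = (\<lambda>v. {v, par v}) ` (V' - {m1}) \<union> (\<lambda>v. {v, par v}) ` S"
      unfolding edges_def by auto
    also have "(\<lambda>v. {v, par v}) ` (V' - {m1}) = edges V' par1 m1"
      unfolding edges_def par_def using SV by (intro image_cong) auto
    also have "(\<lambda>v. {v, par v}) ` S = (\<lambda>s. {m1, s}) ` S"
      unfolding par_def by (intro image_cong) (auto simp: insert_commute)
    finally show ?thesis unfolding H_def E1 by simp
  qed
  show "tree V H" unfolding EH by (rule t.tree_edges)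
  show "tree_deg H v = (if v \<in> S then 1 else if v = m1 then tree_deg H1 m1 + card S else tree_deg H1 v)"
    if v: "v \<in> V" for v
  proof -
    have ch: "{u \<in> V - {m1}. par u = v} = {u \<in> V' - {m1}. par1 u = v} \<union> (if v = m1 then S else {})"
      unfolding par_def V_def using SV m1S t1.parV by auto
    have chS: "{u \<in> V' - {m1}. par1 u = v} = {}" if "v \<in> S"
      using t1.parV SV that by auto
    have fin1: "finite {u \<in> V' - {m1}. par1 u = v}" by simp
    have disj: "{u \<in> V' - {m1}. par1 u = v} \<inter> S = {}" using SV by auto
    have "tree_deg H v = pdeg V par m1 v" unfolding EH by (rule t.tree_deg_rt[OF v])
    also have "\<dots> = card {u \<in> V' - {m1}. par1 u = v} + (if v = m1 then card S else 0) + (if v = m1 then 0 else 1)"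
    proof (cases "v = m1")
      case True
      have "card ({u \<in> V' - {m1}. par1 u = v} \<union> S) = card {u \<in> V' - {m1}. par1 u = v} + card S"
        by (rule card_Un_disjoint[OF fin1 finS disj])
      then show ?thesis unfolding pdeg_def ch using True by simp
    next
      case False
      then show ?thesis unfolding pdeg_def ch by simp
    qed
    finally have e: "tree_deg H v = card {u \<in> V' - {m1}. par1 u = v} + (if v = m1 then card S else 0) + (if v = m1 then 0 else 1)" .
    show ?thesis
    proof (cases "v \<in> S")
      case True then show ?thesis using e chS m1S by auto
    next
      case False
      then have vV: "v \<in> V'" using v V_def by auto
      have "tree_deg H1 v = pdeg V' par1 m1 v" unfolding E1 by (rule t1.tree_deg_rt[OF vV])
      then show ?thesis using e False unfolding pdeg_def by auto
    qed
  qed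
  have sw_S: "sw V A \<mu> p = \<mu> p" if "p \<in> S" for p
  proof -
    have "sw V A \<mu> p = (\<Sum>v\<in>V. if v = p then \<mu> v else 0)"
      unfolding sw_def A_def by (rule sum.cong[OF refl]) (use that t1.A_sub SV V_def in auto)
    also have "\<dots> = \<mu> p" using that finV unfolding V_def by (simp add: sum.delta)
    finally show ?thesis .
  qed
  have sw_V': "sw V A \<mu> p = sw V' A1 \<mu>' p" if "p \<in> V' - {m1}" for p
  proof -
    have "sw V A \<mu> p = (\<Sum>v\<in>V'. \<mu> v * of_bool (p \<in> A v)) + (\<Sum>v\<in>S. \<mu> v * of_bool (p \<in> A v))"
      unfolding sw_def V_def by (rule sum.union_disjoint) (use SV finS in auto)
    also have "(\<Sum>v\<in>S. \<mu> v * of_bool (p \<in> A v)) = 0"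
      unfolding A_def using that SV by (intro sum.neutral) auto
    also have "(\<Sum>v\<in>V'. \<mu> v * of_bool (p \<in> A v)) = (\<Sum>v\<in>V'. \<mu>' v * of_bool (p \<in> A1 v))"
      unfolding A_def \<mu>'_def using SV by (intro sum.cong refl) auto
    finally show ?thesis unfolding sw_def by simp
  qed
  have Wsum: "sum \<mu>' V' = sum \<mu> V"
  proof -
    have "sum \<mu>' V' = \<mu>' m1 + sum \<mu>' (V' - {m1})" by (rule sum.remove[OF t1.finV m1])
    also have "sum \<mu>' (V' - {m1}) = sum \<mu> (V' - {m1})" unfolding \<mu>'_def by (rule sum.cong) auto
    also have "\<mu>' m1 + sum \<mu> (V' - {m1}) = sum \<mu> S + (\<mu> m1 + sum \<mu> (V' - {m1}))" unfolding \<mu>'_def by simp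
    also have "\<mu> m1 + sum \<mu> (V' - {m1}) = sum \<mu> V'" by (rule sum.remove[OF t1.finV m1, symmetric])
    finally have "sum \<mu>' V' = sum \<mu> V' + sum \<mu> S" by simp
    also have "\<dots> = sum \<mu> V" unfolding V_def
      by (rule sum.union_disjoint[symmetric]) (use SV finS t1.finV in auto)
    finally show ?thesis .
  qed
  have "cst V m1 A \<mu> = cst V' m1 A1 \<mu>' + (\<Sum>s\<in>S. \<mu> s * (sum \<mu> V - \<mu> s))"
  proof -
    have split: "V - {m1} = (V' - {m1}) \<union> S" unfolding V_def using m1S by auto
    have "cst V m1 A \<mu> = (\<Sum>p\<in>V' - {m1}. sw V A \<mu> p * (sum \<mu> V - sw V A \<mu> p)) + (\<Sum>p\<in>S. sw V A \<mu> p * (sum \<mu> V - sw V A \<mu> p))"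
      unfolding cst_def split by (rule sum.union_disjoint) (use SV finS in auto)
    also have "(\<Sum>p\<in>V' - {m1}. sw V A \<mu> p * (sum \<mu> V - sw V A \<mu> p)) = cst V' m1 A1 \<mu>'"
      unfolding cst_def Wsum by (intro sum.cong refl) (simp add: sw_V')
    also have "(\<Sum>p\<in>S. sw V A \<mu> p * (sum \<mu> V - sw V A \<mu> p)) = (\<Sum>s\<in>S. \<mu> s * (sum \<mu> V - \<mu> s))"
      by (intro sum.cong refl) (simp add: sw_S)
    finally show ?thesis .
  qed
  then show "WIE V \<mu> H = WIE V' \<mu>' H1 + 2 * (\<Sum>s\<in>S. \<mu> s * (sum \<mu> V - \<mu> s))"
    unfolding EH t.WIE_rt E1 t1.WIE_rt by simp
qed

section \<open>Removing a star of leaves\<close>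

lemma remove_star:
  assumes T: "tree V T" and m1: "m1 \<in> V" and S: "S \<subseteq> V - {m1}"
    and Sd: "\<forall>s\<in>S. tree_deg T s = 1 \<and> {m1, s} \<in> T"
  shows "tree (V - S) (T - (\<lambda>s. {m1, s}) ` S)"
    and "T = (T - (\<lambda>s. {m1, s}) ` S) \<union> (\<lambda>s. {m1, s}) ` S"
proof -
  obtain par A where R: "rooted V par m1 A" and E: "T = edges V par m1"
    using tree_rooted[OF T m1] by blast
  interpret t: rt V par m1 A by (rule rt.intro[OF R])
  have ps: "par s = m1" if "s \<in> S" for s
  proof -
    have "{m1, s} \<in> edges V par m1" using Sd that E by auto
    then obtain v where v: "v \<in> V - {m1}" "{m1, s} = {v, par v}" unfolding edges_def by auto
    then show ?thesis by (auto simp: doubleton_eq_iff)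
  qed
  have snc: "\<forall>w\<in>V - {m1}. par w \<noteq> s" if "s \<in> S" for s
  proof -
    have "pdeg V par m1 s = 1" using Sd that t.tree_deg_rt[of s] S E by auto
    then show ?thesis using t.nochild_pdeg1[of s] S that by auto
  qed
  define V' where "V' = V - S"
  have R': "rooted V' par m1 A"
    unfolding rooted_def
  proof (intro conjI ballI)
    show "finite V'" unfolding V'_def by simp
    show "m1 \<in> V'" unfolding V'_def using m1 S by auto
    show "A m1 = {}" by simp
    fix v assume v: "v \<in> V'"
    show "A v \<subseteq> V'"
    proof
      fix z assume z: "z \<in> A v"
      have "z \<in> V" using t.A_sub v z V'_def by auto
      moreover have "z \<notin> S"
      proof
        assume zS: "z \<in> S"
        then have "v = z" using t.leaf_only[of z v] snc[OF zS] z v V'_def S by auto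
        then show False using v zS V'_def by simp
      qed
      ultimately show "z \<in> V'" unfolding V'_def by simp
    qed
  next
    fix v assume v: "v \<in> V' - {m1}"
    then have vV: "v \<in> V" "v \<noteq> m1" using V'_def by auto
    have "par v \<notin> S" using snc vV by blast
    then show "par v \<in> V'" "A v = insert v (A (par v))" "v \<notin> A (par v)"
      using t.parV[OF vV] t.A_rec[OF vV] t.notin_Apar[OF vV] V'_def by auto
  qed
  interpret t': rt V' par m1 A by (rule rt.intro[OF R'])
  have split: "V - {m1} = (V' - {m1}) \<union> S" unfolding V'_def using S by auto
  have Eu: "T = edges V' par m1 \<union> (\<lambda>s. {m1, s}) ` S"
  proof -
    have "T = (\<lambda>v. {v, par v}) ` (V' - {m1}) \<union> (\<lambda>v. {v, par v}) ` S" unfolding E edges_def split by auto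
    also have "(\<lambda>v. {v, par v}) ` S = (\<lambda>s. {m1, s}) ` S"
      by (intro image_cong) (auto simp: ps insert_commute)
    finally show ?thesis unfolding edges_def .
  qed
  have disj: "edges V' par m1 \<inter> (\<lambda>s. {m1, s}) ` S = {}"
  proof -
    have "e \<subseteq> V'" if "e \<in> edges V' par m1" for e using that t'.edges_sub by auto
    moreover have "\<not> e \<subseteq> V'" if "e \<in> (\<lambda>s. {m1, s}) ` S" for e using that V'_def by auto
    ultimately show ?thesis by blast
  qed
  have "T - (\<lambda>s. {m1, s}) ` S = edges V' par m1" using Eu disj by auto
  then show "tree (V - S) (T - (\<lambda>s. {m1, s}) ` S)" using t'.tree_edges V'_def by simp
  show "T = (T - (\<lambda>s. {m1, s}) ` S) \<union> (\<lambda>s. {m1, s}) ` S" using Eu by auto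
qed


definition hstep :: "(nat \<Rightarrow> nat) \<Rightarrow> (nat set \<times> nat set \<times> (nat \<Rightarrow> real) \<times> nat set set)
   \<Rightarrow> (nat set \<times> nat set \<times> (nat \<Rightarrow> real) \<times> nat set set) \<Rightarrow> bool" where
  "hstep d st st' \<longleftrightarrow> (\<exists>W M w E m S. st = (W, M, w, E) \<and> 2 \<le> card M \<and> m \<in> M \<and>
     (\<forall>k\<in>M. w m \<le> w k) \<and> (\<forall>k\<in>M. w k = w m \<longrightarrow> d m \<le> d k) \<and>
     S \<subseteq> W \<and> card S = d m - 1 \<and> (\<forall>s\<in>S. \<forall>x\<in>W - S. w s \<le> w x) \<and>
     st' = (insert m (W - S), M - {m}, w(m := w m + sum w S), E \<union> (\<lambda>s. {m, s}) ` S))"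

lemma no_step:
  assumes "card M < 2" "(hstep d)\<^sup>*\<^sup>* (W, M, w, E) st"
  shows "st = (W, M, w, E)"
  using assms(2)
proof (cases rule: converse_rtranclpE)
  case base then show ?thesis by simp
next
  case (step y)
  then show ?thesis using assms(1) unfolding hstep_def by auto
qed

lemma reach_sub:
  assumes "(hstep d)\<^sup>*\<^sup>* st st'"
  shows "fst (snd st') \<subseteq> fst (snd st) \<and> (fst (snd st) \<noteq> {} \<longrightarrow> fst (snd st') \<noteq> {})"
  using assms
proof (induction rule: rtranclp_induct)
  case base then show ?case by simp
next
  case (step y z)
  from step.hyps(2) obtain W M w E m S where y: "y = (W, M, w, E)" and c: "2 \<le> card M" "m \<in> M"
    and z: "z = (insert m (W - S), M - {m}, w(m := w m + sum w S), E \<union> (\<lambda>s. {m, s}) ` S)"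
    unfolding hstep_def by blast
  have "M - {m} \<noteq> {}"
  proof
    assume "M - {m} = {}"
    then have "M \<subseteq> {m}" by auto
    then have "card M \<le> 1" using card_mono[of "{m}" M] by simp
    then show False using c by simp
  qed
  then show ?case using step.IH y z by auto
qed

lemma hstep_shift:
  assumes "hstep d (W, M, w, E) st'"
  shows "\<exists>X W' M' w'. st' = (W', M', w', E \<union> X) \<and> (\<forall>F. hstep d (W, M, w, F) (W', M', w', F \<union> X))"
proof -
  from assms obtain m S where c: "2 \<le> card M" "m \<in> M" "\<forall>k\<in>M. w m \<le> w k" "\<forall>k\<in>M. w k = w m \<longrightarrow> d m \<le> d k"
    "S \<subseteq> W" "card S = d m - 1" "\<forall>s\<in>S. \<forall>x\<in>W - S. w s \<le> w x"
    and st': "st' = (insert m (W - S), M - {m}, w(m := w m + sum w S), E \<union> (\<lambda>s. {m, s}) ` S)"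
    unfolding hstep_def by blast
  show ?thesis
    apply (rule exI[of _ "(\<lambda>s. {m, s}) ` S"], rule exI[of _ "insert m (W - S)"], rule exI[of _ "M - {m}"],
        rule exI[of _ "w(m := w m + sum w S)"])
    using c st' unfolding hstep_def by blast
qed

lemma reach_shift:
  assumes "(hstep d)\<^sup>*\<^sup>* (W, M, w, E0) st"
  shows "\<exists>E1. (hstep d)\<^sup>*\<^sup>* (W, M, w, {}) (fst st, fst (snd st), fst (snd (snd st)), E1) \<and> snd (snd (snd st)) = E0 \<union> E1"
  using assms
proof (induction rule: rtranclp_induct)
  case base then show ?case by auto
next
  case (step y z)
  obtain E1 where E1: "(hstep d)\<^sup>*\<^sup>* (W, M, w, {}) (fst y, fst (snd y), fst (snd (snd y)), E1)"
    "snd (snd (snd y)) = E0 \<union> E1" using step.IH by blast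
  obtain W1 M1 w1 Ey where y: "y = (W1, M1, w1, Ey)" by (cases y) auto
  obtain X W' M' w' where z: "z = (W', M', w', Ey \<union> X)" and h: "\<forall>F. hstep d (W1, M1, w1, F) (W', M', w', F \<union> X)"
    using hstep_shift[of d W1 M1 w1 Ey z] step.hyps(2) y by blast
  have "(hstep d)\<^sup>*\<^sup>* (W, M, w, {}) (W', M', w', E1 \<union> X)"
    using E1(1) h y by (auto intro: rtranclp.rtrancl_into_rtrancl)
  moreover have "snd (snd (snd z)) = E0 \<union> (E1 \<union> X)" using z E1(2) y by auto
  ultimately show ?case using z by auto
qed

lemma reach_dchange:
  assumes "(hstep d)\<^sup>*\<^sup>* (W, M, w, E) st" and "\<forall>k\<in>M. d' k = d k"
  shows "(hstep d')\<^sup>*\<^sup>* (W, M, w, E) st"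
  using assms(1)
proof (induction rule: rtranclp_induct)
  case base then show ?case by simp
next
  case (step y z)
  have sub: "fst (snd y) \<subseteq> M" using reach_sub[OF step.hyps(1)] by simp
  from step.hyps(2) obtain W1 M1 w1 E1 m S where y: "y = (W1, M1, w1, E1)" and c: "2 \<le> card M1" "m \<in> M1"
    "\<forall>k\<in>M1. w1 m \<le> w1 k" "\<forall>k\<in>M1. w1 k = w1 m \<longrightarrow> d m \<le> d k"
    "S \<subseteq> W1" "card S = d m - 1" "\<forall>s\<in>S. \<forall>x\<in>W1 - S. w1 s \<le> w1 x"
    and z: "z = (insert m (W1 - S), M1 - {m}, w1(m := w1 m + sum w1 S), E1 \<union> (\<lambda>s. {m, s}) ` S)"
    unfolding hstep_def by blast
  have M1M: "M1 \<subseteq> M" using sub y by simp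
  have dk: "\<forall>k\<in>M1. d' k = d k" using M1M assms(2) by auto
  then have dm: "d' m = d m" using c(2) by auto
  have c4: "\<forall>k\<in>M1. w1 k = w1 m \<longrightarrow> d' m \<le> d' k" using c(4) dk dm by auto
  have "hstep d' y z" unfolding hstep_def
    apply (rule exI[of _ W1], rule exI[of _ M1], rule exI[of _ w1], rule exI[of _ E1], rule exI[of _ m], rule exI[of _ S])
    using c(1,2,3,5,6,7) c4 y z dm by auto
  then show ?case using step.IH by (rule rtranclp.rtrancl_into_rtrancl[rotated])
qed


lemma base_star:
  assumes T: "tree V T" and deg: "\<forall>v\<in>V. tree_deg T v = d v" and m: "m \<in> V"
    and M: "{i\<in>V. 2 \<le> d i} = {m}"
  shows "T = (\<lambda>s. {m, s}) ` {i\<in>V. d i = 1}"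
proof -
  obtain par A where R: "rooted V par m A" and E: "T = edges V par m" using tree_rooted[OF T m] by blast
  interpret rt V par m A by (rule rt.intro[OF R])
  have pd: "pdeg V par m v = d v" if v: "v \<in> V" for v
  proof -
    have "tree_deg T v = d v" using deg v by blast
    moreover have "tree_deg T v = pdeg V par m v" unfolding E by (rule tree_deg_rt[OF v])
    ultimately show ?thesis by simp
  qed
  have leaf: "d v = 1 \<and> par v = m" if v: "v \<in> V" "v \<noteq> m" for v
  proof -
    have "d v < 2"
    proof (rule ccontr)
      assume "\<not> d v < 2"
      then have "v \<in> {i\<in>V. 2 \<le> d i}" using v by simp
      then show False using M v by simp
    qed
    moreover have "pdeg V par m v \<ge> 1" unfolding pdeg_def using v by simp
    ultimately have dv: "d v = 1" using pd[OF v(1)] by simp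
    have pv: "par v \<in> V" using parV v by auto
    have "par v = m"
    proof (rule ccontr)
      assume pm: "par v \<noteq> m"
      have "d (par v) < 2"
      proof (rule ccontr)
        assume "\<not> d (par v) < 2"
        then have "par v \<in> {i\<in>V. 2 \<le> d i}" using pv by simp
        then show False using M pm by simp
      qed
      moreover have "pdeg V par m (par v) \<ge> 2" using pdeg_child[OF pv pm v refl] .
      ultimately show False using pd[OF pv] by simp
    qed
    then show ?thesis using dv by simp
  qed
  have L: "{i\<in>V. d i = 1} = V - {m}"
  proof
    show "{i\<in>V. d i = 1} \<subseteq> V - {m}" using M by auto
    show "V - {m} \<subseteq> {i\<in>V. d i = 1}" using leaf by auto
  qed
  have "edges V par m = (\<lambda>s. {m, s}) ` (V - {m})"
    unfolding edges_def by (intro image_cong refl) (use leaf in \<open>auto simp: insert_commute\<close>)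
  then show ?thesis using E L by simp
qed

lemma base_pair:
  assumes T: "tree V T" and deg: "\<forall>v\<in>V. tree_deg T v = d v"
    and M: "{i\<in>V. 2 \<le> d i} = {}" and L: "{i\<in>V. d i = 1} = {a, b}" and ab: "a \<noteq> b"
  shows "T = insert {a, b} {}"
proof -
  have aV: "a \<in> V" using L by auto
  obtain par A where R: "rooted V par a A" and E: "T = edges V par a" using tree_rooted[OF T aV] by blast
  interpret rt V par a A by (rule rt.intro[OF R])
  have pd: "pdeg V par a v = d v" if v: "v \<in> V" for v
  proof -
    have "tree_deg T v = d v" using deg v by blast
    moreover have "tree_deg T v = pdeg V par a v" unfolding E by (rule tree_deg_rt[OF v])
    ultimately show ?thesis by simp
  qed
  have vb: "v = b" if v: "v \<in> V" "v \<noteq> a" for v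
  proof -
    have "d v < 2"
    proof (rule ccontr)
      assume "\<not> d v < 2"
      then have "v \<in> {i\<in>V. 2 \<le> d i}" using v by simp
      then show False using M v by simp
    qed
    moreover have "pdeg V par a v \<ge> 1" unfolding pdeg_def using v by simp
    ultimately have "d v = 1" using pd[OF v(1)] by simp
    then show ?thesis using L v by auto
  qed
  have bV: "b \<in> V" using L by auto
  have Va: "V - {a} = {b}"
  proof
    show "V - {a} \<subseteq> {b}"
    proof
      fix v assume "v \<in> V - {a}"
      then have "v = b" using vb[of v] by blast
      then show "v \<in> {b}" by simp
    qed
    show "{b} \<subseteq> V - {a}" using bV ab by simp
  qed
  have pb: "par b = a"
  proof (rule ccontr)
    assume "par b \<noteq> a"
    moreover have "par b \<in> V" using parV[of b] bV ab by simp
    ultimately have "par b = b" using vb[of "par b"] by blast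
    then show False using par_ne[of b] bV ab by simp
  qed
  have "edges V par a = {{b, par b}}" unfolding edges_def Va by simp
  then show ?thesis using E pb by (simp add: insert_commute)
qed

lemma finite_trees: "finite V \<Longrightarrow> finite {T. tree V T \<and> P T}"
proof -
  assume fin: "finite V"
  have "{T. tree V T \<and> P T} \<subseteq> Pow (Pow V)" unfolding tree_def by auto
  then show ?thesis using fin by (meson finite_Pow_iff finite_subset)
qed

lemma OPT_main:
  "\<forall>V \<mu> d W Mf w E T H m a b. finite V \<and> (\<forall>v\<in>V. 0 \<le> \<mu> v) \<and>
     (\<forall>i\<in>V. \<forall>j\<in>V. 1 < d i \<and> d i < d j \<longrightarrow> \<mu> i \<le> \<mu> j) \<and> card {i\<in>V. 2 \<le> d i} = n \<and>
     (hstep d)\<^sup>*\<^sup>* ({i\<in>V. d i = 1}, {i\<in>V. 2 \<le> d i}, \<mu>, {}) (W, Mf, w, E) \<and>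
     tree V T \<and> (\<forall>v\<in>V. tree_deg T v = d v) \<and>
     ((Mf = {m} \<and> H = E \<union> (\<lambda>s. {m, s}) ` W) \<or> (Mf = {} \<and> W = {a, b} \<and> a \<noteq> b \<and> H = insert {a, b} E))
     \<longrightarrow> tree V H \<and> (\<forall>v\<in>V. tree_deg H v = d v) \<and> WIE V \<mu> H \<le> WIE V \<mu> T"
proof (induction n rule: less_induct)
  case (less n)
  show ?case
  proof (intro allI impI, elim conjE)
    fix V \<mu> d W Mf w E T H m a b
    assume fin: "finite V" and mu: "\<forall>v\<in>V. 0 \<le> (\<mu>::nat\<Rightarrow>real) v"
      and mono: "\<forall>i\<in>V. \<forall>j\<in>V. 1 < d i \<and> d i < d j \<longrightarrow> \<mu> i \<le> \<mu> j"
      and cM: "card {i\<in>V. 2 \<le> d i} = n"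
      and reach: "(hstep d)\<^sup>*\<^sup>* ({i\<in>V. d i = 1}, {i\<in>V. 2 \<le> d i}, \<mu>, {}) (W, Mf, w, E)"
      and T: "tree V T" and Td: "\<forall>v\<in>V. tree_deg T v = d v"
      and Hf: "(Mf = {m} \<and> H = E \<union> (\<lambda>s. {m, s}) ` W) \<or> (Mf = {} \<and> W = {a, b} \<and> a \<noteq> b \<and> H = insert {a, b} E)"
    define M0 where "M0 = {i\<in>V. 2 \<le> d i}"
    define L0 where "L0 = {i\<in>V. d i = 1}"
    show "tree V H \<and> (\<forall>v\<in>V. tree_deg H v = d v) \<and> WIE V \<mu> H \<le> WIE V \<mu> T"
    proof (cases "card M0 < 2")
      case True
      have st: "(W, Mf, w, E) = (L0, M0, \<mu>, {})" using no_step[OF True] reach unfolding M0_def L0_def by blast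
      have "H = T"
      proof (cases "Mf = {m} \<and> H = E \<union> (\<lambda>s. {m, s}) ` W")
        case True
        then have "M0 = {m}" "H = (\<lambda>s. {m, s}) ` L0" using st by auto
        moreover have "m \<in> V" using \<open>M0 = {m}\<close> M0_def by auto
        ultimately show ?thesis using base_star[OF T Td] M0_def L0_def by simp
      next
        case False
        then have "Mf = {} \<and> W = {a, b} \<and> a \<noteq> b \<and> H = insert {a, b} E" using Hf by blast
        then have "M0 = {}" "L0 = {a, b}" "a \<noteq> b" "H = insert {a, b} {}" using st by auto
        then show ?thesis using base_pair[OF T Td] M0_def L0_def by simp
      qed
      then show ?thesis using T Td by simp
    next
      case False
      then have M2: "2 \<le> card M0" by simp
      from reach have reach0: "(hstep d)\<^sup>*\<^sup>* (L0, M0, \<mu>, {}) (W, Mf, w, E)" unfolding L0_def M0_def .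
      then show ?thesis
      proof (cases rule: converse_rtranclpE)
        case base
        then have "Mf = M0" by simp
        moreover have "card Mf \<le> 1" using Hf by auto
        ultimately show ?thesis using M2 by simp
      next
        case (step s1)
        from step(1)[unfolded hstep_def] obtain W' M' w' E' m1 S where
          eq: "(L0, M0, \<mu>, {}) = (W', M', w', E')" and c: "2 \<le> card M'" "m1 \<in> M'" "\<forall>k\<in>M'. w' m1 \<le> w' k"
          "\<forall>k\<in>M'. w' k = w' m1 \<longrightarrow> d m1 \<le> d k" "S \<subseteq> W'" "card S = d m1 - 1" "\<forall>s\<in>S. \<forall>x\<in>W' - S. w' s \<le> w' x"
          and s1: "s1 = (insert m1 (W' - S), M' - {m1}, w'(m1 := w' m1 + sum w' S), E' \<union> (\<lambda>s. {m1, s}) ` S)"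
          by blast
        have eqs: "W' = L0" "M' = M0" "w' = \<mu>" "E' = {}" using eq by auto
        note c = c[unfolded eqs]
        note s1 = s1[unfolded eqs]
        define V' where "V' = V - S"
        define \<mu>' where "\<mu>' = \<mu>(m1 := \<mu> m1 + sum \<mu> S)"
        define d' where "d' = d(m1 := 1)"
        have m1V: "m1 \<in> V" "2 \<le> d m1" using c(2) M0_def by auto
        have SL: "S \<subseteq> V" "\<forall>s\<in>S. d s = 1" using c(5) L0_def by auto
        have m1S: "m1 \<notin> S" using SL m1V by auto
        have finS: "finite S" using finite_subset[OF SL(1) fin] .
        have mmin: "\<forall>k\<in>V. 2 \<le> d k \<longrightarrow> \<mu> m1 \<le> \<mu> k \<and> d m1 \<le> d k"
        proof (intro ballI impI)
          fix k assume k: "k \<in> V" "2 \<le> d k"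
          then have kM: "k \<in> M0" unfolding M0_def by simp
          have mk: "\<mu> m1 \<le> \<mu> k" using c(3) kM by blast
          have "d m1 \<le> d k"
          proof (rule ccontr)
            assume nk: "\<not> d m1 \<le> d k"
            then have "1 < d k \<and> d k < d m1" using k by simp
            then have "\<mu> k \<le> \<mu> m1" using mono k m1V by blast
            then have "\<mu> k = \<mu> m1" using mk by simp
            then have "d m1 \<le> d k" using c(4) kM by blast
            then show False using nk by simp
          qed
          then show "\<mu> m1 \<le> \<mu> k \<and> d m1 \<le> d k" using mk by simp
        qed
        have light: "\<forall>s\<in>S. \<forall>x\<in>V. d x = 1 \<and> x \<notin> S \<longrightarrow> \<mu> s \<le> \<mu> x" using c(7) L0_def by auto
        define Tr where "Tr = {T. tree V T \<and> (\<forall>v\<in>V. tree_deg T v = d v)}"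
        have finTr: "finite Tr" unfolding Tr_def by (rule finite_trees[OF fin])
        have TTr: "T \<in> Tr" unfolding Tr_def using T Td by simp
        define wm where "wm = Min (WIE V \<mu> ` Tr)"
        have "wm \<in> WIE V \<mu> ` Tr" unfolding wm_def using finTr TTr by (intro Min_in) auto
        then obtain T0 where T0: "T0 \<in> Tr" "WIE V \<mu> T0 = wm" by auto
        have T0min: "WIE V \<mu> T0 \<le> WIE V \<mu> T'" if "T' \<in> Tr" for T'
          using T0 finTr that unfolding wm_def by (simp add: Min_le)
        have T0t: "tree V T0" "\<forall>v\<in>V. tree_deg T0 v = d v" using T0 Tr_def by auto
        have opt0: "WIE V \<mu> T0 \<le> WIE V \<mu> T'" if "tree V T'" "\<forall>v\<in>V. tree_deg T' v = d v" for T'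
          using T0min that Tr_def by auto
        have M2': "2 \<le> card {v\<in>V. 2 \<le> d v}" using M2 M0_def by simp
        obtain T2 where T2: "tree V T2" "\<forall>v\<in>V. tree_deg T2 v = d v" "WIE V \<mu> T2 \<le> WIE V \<mu> T0"
            "\<forall>s\<in>S. {m1, s} \<in> T2"
          using exchange[OF mu M2' m1V mmin SL c(6) light T0t opt0] by blast
        have SV': "S \<subseteq> V - {m1}" using SL m1S by auto
        have Sd2: "\<forall>s\<in>S. tree_deg T2 s = 1 \<and> {m1, s} \<in> T2" using T2 SL by auto
        define T3 where "T3 = T2 - (\<lambda>s. {m1, s}) ` S"
        have T3: "tree V' T3" unfolding T3_def V'_def by (rule remove_star(1)[OF T2(1) m1V(1) SV' Sd2])
        have T23: "T2 = T3 \<union> (\<lambda>s. {m1, s}) ` S" unfolding T3_def by (rule remove_star(2)[OF T2(1) m1V(1) SV' Sd2])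
        have m1V': "m1 \<in> V'" using m1V m1S V'_def by auto
        have SV'': "S \<inter> V' = {}" unfolding V'_def by auto
        have VV: "V' \<union> S = V" unfolding V'_def using SL by auto
        have att3_2: "tree_deg (T3 \<union> (\<lambda>s. {m1, s}) ` S) v = (if v \<in> S then 1 else if v = m1 then tree_deg T3 m1 + card S else tree_deg T3 v)"
          if "v \<in> V" for v
          using attach(2)[OF T3 m1V' SV'' finS, of v] that VV by simp
        have att3_3: "WIE V \<mu> (T3 \<union> (\<lambda>s. {m1, s}) ` S) = WIE V' \<mu>' T3 + 2 * (\<Sum>s\<in>S. \<mu> s * (sum \<mu> V - \<mu> s))"
          using attach(3)[OF T3 m1V' SV'' finS, of \<mu>] VV unfolding \<mu>'_def by simp
        have T3d: "\<forall>v\<in>V'. tree_deg T3 v = d' v"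
        proof
          fix v assume v: "v \<in> V'"
          have vV: "v \<in> V" "v \<notin> S" using v V'_def by auto
          have e: "tree_deg T2 v = (if v = m1 then tree_deg T3 m1 + card S else tree_deg T3 v)"
            using att3_2[OF vV(1)] T23 vV(2) by simp
          show "tree_deg T3 v = d' v"
          proof (cases "v = m1")
            case True
            then have "tree_deg T3 m1 + card S = d m1" using e T2(2) vV by simp
            then show ?thesis using True c(6) m1V d'_def by simp
          next
            case False
            then show ?thesis using e T2(2) vV d'_def by simp
          qed
        qed
        have WT2: "WIE V \<mu> T2 = WIE V' \<mu>' T3 + 2 * (\<Sum>s\<in>S. \<mu> s * (sum \<mu> V - \<mu> s))"
          using att3_3 T23 by simp
        have s1': "s1 = (insert m1 (L0 - S), M0 - {m1}, \<mu>', {} \<union> (\<lambda>s. {m1, s}) ` S)" using s1 \<mu>'_def by simp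
        obtain E1 where E1: "(hstep d)\<^sup>*\<^sup>* (insert m1 (L0 - S), M0 - {m1}, \<mu>', {}) (W, Mf, w, E1)"
            "E = {} \<union> (\<lambda>s. {m1, s}) ` S \<union> E1"
          using reach_shift[of d "insert m1 (L0 - S)" "M0 - {m1}" \<mu>' "{} \<union> (\<lambda>s. {m1, s}) ` S" "(W, Mf, w, E)"]
            step(2) s1' by auto
        have L': "{i\<in>V'. d' i = 1} = insert m1 (L0 - S)" unfolding V'_def d'_def L0_def using m1V m1S by auto
        have M': "{i\<in>V'. 2 \<le> d' i} = M0 - {m1}" unfolding V'_def d'_def M0_def using SL by auto
        have reach': "(hstep d')\<^sup>*\<^sup>* ({i\<in>V'. d' i = 1}, {i\<in>V'. 2 \<le> d' i}, \<mu>', {}) (W, Mf, w, E1)"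
          unfolding L' M' by (rule reach_dchange[OF E1(1)]) (simp add: d'_def)
        define H1 where "H1 = (if Mf = {m} \<and> H = E \<union> (\<lambda>s. {m, s}) ` W then E1 \<union> (\<lambda>s. {m, s}) ` W else insert {a, b} E1)"
        have Hf1: "(Mf = {m} \<and> H1 = E1 \<union> (\<lambda>s. {m, s}) ` W) \<or> (Mf = {} \<and> W = {a, b} \<and> a \<noteq> b \<and> H1 = insert {a, b} E1)"
          using Hf H1_def by auto
        have HH1: "H = H1 \<union> (\<lambda>s. {m1, s}) ` S" using Hf H1_def E1(2) by auto
        have finM0: "finite M0" unfolding M0_def using fin by simp
        have cM': "card {i\<in>V'. 2 \<le> d' i} < n" unfolding M' using cM M0_def c(2) card_Diff1_less[OF finM0] by auto
        have fin': "finite V'" using fin V'_def by simp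
        have mu': "\<forall>v\<in>V'. 0 \<le> \<mu>' v"
        proof
          fix v assume v: "v \<in> V'"
          have "0 \<le> sum \<mu> S" using mu SL by (intro sum_nonneg) auto
          then show "0 \<le> \<mu>' v" using mu v V'_def m1V unfolding \<mu>'_def by auto
        qed
        have mono': "\<forall>i\<in>V'. \<forall>j\<in>V'. 1 < d' i \<and> d' i < d' j \<longrightarrow> \<mu>' i \<le> \<mu>' j"
        proof (intro ballI impI)
          fix i j assume ij: "i \<in> V'" "j \<in> V'" "1 < d' i \<and> d' i < d' j"
          then have "i \<noteq> m1" "j \<noteq> m1" unfolding d'_def by auto
          then show "\<mu>' i \<le> \<mu>' j" using mono ij V'_def unfolding d'_def \<mu>'_def by auto
        qed
        have IH: "tree V' H1 \<and> (\<forall>v\<in>V'. tree_deg H1 v = d' v) \<and> WIE V' \<mu>' H1 \<le> WIE V' \<mu>' T3"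
        proof (rule less.IH[OF cM', rule_format, where V=V' and \<mu>=\<mu>' and d=d' and W=W and Mf=Mf and w=w and E=E1 and T=T3 and H=H1 and m=m and a=a and b=b])
          show "finite V' \<and> (\<forall>v\<in>V'. 0 \<le> \<mu>' v) \<and> (\<forall>i\<in>V'. \<forall>j\<in>V'. 1 < d' i \<and> d' i < d' j \<longrightarrow> \<mu>' i \<le> \<mu>' j) \<and>
            card {i\<in>V'. 2 \<le> d' i} = card {i\<in>V'. 2 \<le> d' i} \<and>
            (hstep d')\<^sup>*\<^sup>* ({i\<in>V'. d' i = 1}, {i\<in>V'. 2 \<le> d' i}, \<mu>', {}) (W, Mf, w, E1) \<and>
            tree V' T3 \<and> (\<forall>v\<in>V'. tree_deg T3 v = d' v) \<and>
            ((Mf = {m} \<and> H1 = E1 \<union> (\<lambda>s. {m, s}) ` W) \<or> (Mf = {} \<and> W = {a, b} \<and> a \<noteq> b \<and> H1 = insert {a, b} E1))"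
            using fin' mu' mono' reach' T3 T3d Hf1 by (intro conjI) simp_all
        qed
        have att1_2: "tree_deg (H1 \<union> (\<lambda>s. {m1, s}) ` S) v = (if v \<in> S then 1 else if v = m1 then tree_deg H1 m1 + card S else tree_deg H1 v)"
          if "v \<in> V" for v
          using attach(2)[of V' H1 m1 S v] IH m1V' SV'' finS that VV by simp
        have att1_3: "WIE V \<mu> (H1 \<union> (\<lambda>s. {m1, s}) ` S) = WIE V' \<mu>' H1 + 2 * (\<Sum>s\<in>S. \<mu> s * (sum \<mu> V - \<mu> s))"
          using attach(3)[of V' H1 m1 S \<mu>] IH m1V' SV'' finS VV unfolding \<mu>'_def by simp
        have "tree V H" using attach(1)[of V' H1 m1 S] IH m1V' SV'' finS VV HH1 by simp
        moreover have "\<forall>v\<in>V. tree_deg H v = d v"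
        proof
          fix v assume v: "v \<in> V"
          show "tree_deg H v = d v"
          proof (cases "v \<in> S")
            case True then show ?thesis using att1_2[OF v] HH1 SL by simp
          next
            case False
            then have vV': "v \<in> V'" using v V'_def by simp
            show ?thesis
            proof (cases "v = m1")
              case True
              have "tree_deg H1 m1 = 1" using IH m1V' d'_def by simp
              then show ?thesis using att1_2[OF v] HH1 True m1S c(6) m1V by simp
            next
              case nm: False
              then show ?thesis using att1_2[OF v] HH1 False IH vV' d'_def by simp
            qed
          qed
        qed
        moreover have "WIE V \<mu> H \<le> WIE V \<mu> T"
        proof -
          have "WIE V \<mu> H = WIE V' \<mu>' H1 + 2 * (\<Sum>s\<in>S. \<mu> s * (sum \<mu> V - \<mu> s))" using att1_3 HH1 by simp
          also have "\<dots> \<le> WIE V' \<mu>' T3 + 2 * (\<Sum>s\<in>S. \<mu> s * (sum \<mu> V - \<mu> s))" using IH by simp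
          also have "\<dots> = WIE V \<mu> T2" using WT2 by simp
          also have "\<dots> \<le> WIE V \<mu> T0" by (rule T2(3))
          also have "\<dots> \<le> WIE V \<mu> T" by (rule T0min[OF TTr])
          finally show ?thesis .
        qed
        ultimately show ?thesis by blast
      qed
    qed
  qed
qed


lemma huff_reach_hstep:
  "huff_reach n mu d W M w E \<Longrightarrow>
   (hstep d)\<^sup>*\<^sup>* ({i \<in> {1..n}. d i = 1}, {i \<in> {1..n}. d i \<ge> 2}, mu, {}) (W, M, w, E)"
proof (induction rule: huff_reach.induct)
  case init then show ?case by simp
next
  case (step W M w E m S)
  have "hstep d (W, M, w, E) (insert m (W - S), M - {m}, w(m := w m + sum w S), E \<union> (\<lambda>s. {m, s}) ` S)"
    unfolding hstep_def using step.hyps by blast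
  then show ?case using step.IH by (rule rtranclp.rtrancl_into_rtrancl[rotated])
qed

lemma OPT:
  assumes "finite V" "\<forall>v\<in>V. 0 \<le> \<mu> v" "\<forall>i\<in>V. \<forall>j\<in>V. 1 < d i \<and> d i < d j \<longrightarrow> \<mu> i \<le> \<mu> j"
    "(hstep d)\<^sup>*\<^sup>* ({i\<in>V. d i = 1}, {i\<in>V. 2 \<le> d i}, \<mu>, {}) (W, Mf, w, E)"
    "tree V T" "\<forall>v\<in>V. tree_deg T v = d v"
    "(Mf = {m} \<and> H = E \<union> (\<lambda>s. {m, s}) ` W) \<or> (Mf = {} \<and> W = {a, b} \<and> a \<noteq> b \<and> H = insert {a, b} E)"
  shows "tree V H \<and> (\<forall>v\<in>V. tree_deg H v = d v) \<and> WIE V \<mu> H \<le> WIE V \<mu> T"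
  by (rule OPT_main[rule_format, where V=V and \<mu>=\<mu> and d=d and W=W and Mf=Mf and w=w and E=E and T=T and H=H and m=m and a=a and b=b])
    (use assms in \<open>intro conjI, simp_all\<close>)

lemma is_tree_tree: "is_tree n E \<longleftrightarrow> tree {1..n} E"
  unfolding is_tree_def tree_def by simp

lemma OPT_frozen:
  assumes mu: "\<forall>i\<in>{1..n}. mu i \<ge> 0"
    and mono: "\<forall>i\<in>{1..n}. \<forall>j\<in>{1..n}. 1 < d i \<and> d i < d j \<longrightarrow> mu i \<le> mu j"
    and T: "T \<in> trees_deg n d" and H: "H \<in> huffman_trees n mu d"
  shows "WIE {1..n} mu H \<le> WIE {1..n} mu T"
proof -
  have T': "tree {1..n} T" "\<forall>v\<in>{1..n}. tree_deg T v = d v"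
    using T unfolding trees_deg_def by (auto simp: is_tree_tree)
  have eq: "{i \<in> {1..n}. d i \<ge> 2} = {i \<in> {1..n}. 2 \<le> d i}" by simp
  from H show ?thesis
    unfolding huffman_trees_def
  proof (elim UnE CollectE exE conjE)
    fix W m w E assume r: "huff_reach n mu d W {m} w E" and HH: "H = E \<union> (\<lambda>s. {m, s}) ` W"
    show ?thesis
      using OPT[of "{1..n}" mu d W "{m}" w E T m H] huff_reach_hstep[OF r] T' mu mono HH by auto
  next
    fix W w E a b assume r: "huff_reach n mu d W {} w E" and HH: "W = {a, b}" "a \<noteq> b" "H = insert {a, b} E"
    show ?thesis
      using OPT[of "{1..n}" mu d W "{}" w E T _ H a b] huff_reach_hstep[OF r] T' mu mono HH by auto
  qed
qed

context rt
begin

lemma gram: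
  assumes "i \<in> V" "j \<in> V"
  shows "(real (card V) - 1) / 2 - real (tdist (edges V par r) i j) =
     (\<Sum>p\<in>V - {r}. (1 - 2 * of_bool (p \<in> A i)) * (1 - 2 * of_bool (p \<in> A j))) / 2"
proof -
  have c0: "card (V - {r}) = card V - 1" using rV finV by (simp add: card_Diff_singleton)
  have c1: "card V \<ge> 1" using rV finV card_0_eq by (metis empty_iff less_one not_less)
  have c: "real (card (V - {r})) = real (card V) - 1" using c0 c1 by (simp add: of_nat_diff)
  define g where "g p = (of_bool (p \<in> A i) + of_bool (p \<in> A j) - 2 * of_bool (p \<in> A i) * of_bool (p \<in> A j) :: real)" for p
  have "(\<Sum>p\<in>V - {r}. (1 - 2 * of_bool (p \<in> A i)) * (1 - 2 * of_bool (p \<in> A j)) :: real)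
     = (\<Sum>p\<in>V - {r}. 1 - 2 * g p)"
    unfolding g_def by (rule sum.cong) (auto simp: algebra_simps)
  also have "\<dots> = (\<Sum>p\<in>V - {r}. 1) - 2 * (\<Sum>p\<in>V - {r}. g p)"
    by (simp only: sum_subtractf sum_distrib_left)
  also have "(\<Sum>p\<in>V - {r}. g p) = real (card (sd (A i) (A j)))"
    using card_sd_sum[OF assms] unfolding g_def by simp
  also have "(\<Sum>p\<in>V - {r}. (1::real)) = real (card (V - {r}))" by simp
  finally show ?thesis using tdist_rt[OF assms] c by simp
qed

end

lemma trace_nonneg:
  assumes T: "tree {1..n} T" and psd: "psd_on n M"
  shows "(\<Sum>i=1..n. \<Sum>j=1..n. Pmat n T i j * M i j) \<ge> 0"
proof (cases "n = 0")
  case True then show ?thesis by simp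
next
  case False
  then have "1 \<in> {1..n}" by simp
  then obtain par A where R: "rooted {1..n} par 1 A" and E: "T = edges {1..n} par 1"
    using tree_rooted[OF T] by blast
  interpret rt "{1..n}" par 1 A by (rule rt.intro[OF R])
  define \<sigma> where "\<sigma> p i = (1 - 2 * of_bool (p \<in> A i) :: real)" for p i
  have P: "Pmat n T i j = (\<Sum>p\<in>{1..n} - {1}. \<sigma> p i * \<sigma> p j) / 2" if "i \<in> {1..n}" "j \<in> {1..n}" for i j
    using gram[OF that] unfolding Pmat_def E \<sigma>_def by simp
  have "(\<Sum>i=1..n. \<Sum>j=1..n. Pmat n T i j * M i j) =
      (\<Sum>i=1..n. \<Sum>j=1..n. (\<Sum>p\<in>{1..n} - {1}. \<sigma> p i * M i j * \<sigma> p j) / 2)"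
  proof (intro sum.cong refl)
    fix i j assume i: "i \<in> {1..n}" and j: "j \<in> {1..n}"
    have "Pmat n T i j * M i j = ((\<Sum>p\<in>{1..n} - {1}. \<sigma> p i * \<sigma> p j) / 2) * M i j"
      using P[OF i j] by simp
    also have "\<dots> = (\<Sum>p\<in>{1..n} - {1}. \<sigma> p i * \<sigma> p j * M i j) / 2"
      by (simp only: times_divide_eq_left sum_distrib_right)
    also have "\<dots> = (\<Sum>p\<in>{1..n} - {1}. \<sigma> p i * M i j * \<sigma> p j) / 2"
      by (simp add: mult_ac)
    finally show "Pmat n T i j * M i j = (\<Sum>p\<in>{1..n} - {1}. \<sigma> p i * M i j * \<sigma> p j) / 2" .
  qed
  also have "\<dots> = (\<Sum>p\<in>{1..n} - {1}. (\<Sum>i=1..n. \<Sum>j=1..n. \<sigma> p i * M i j * \<sigma> p j)) / 2"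
  proof -
    have "(\<Sum>i=1..n. \<Sum>j=1..n. (\<Sum>p\<in>{1..n} - {1}. \<sigma> p i * M i j * \<sigma> p j) / 2)
        = (\<Sum>i=1..n. \<Sum>j=1..n. \<Sum>p\<in>{1..n} - {1}. \<sigma> p i * M i j * \<sigma> p j) / 2"
      by (simp only: sum_divide_distrib)
    also have "(\<Sum>i=1..n. \<Sum>j=1..n. \<Sum>p\<in>{1..n} - {1}. \<sigma> p i * M i j * \<sigma> p j)
        = (\<Sum>i=1..n. \<Sum>p\<in>{1..n} - {1}. \<Sum>j=1..n. \<sigma> p i * M i j * \<sigma> p j)"
      by (rule sum.cong[OF refl], rule sum.swap)
    also have "\<dots> = (\<Sum>p\<in>{1..n} - {1}. \<Sum>i=1..n. \<Sum>j=1..n. \<sigma> p i * M i j * \<sigma> p j)"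
      by (rule sum.swap)
    finally show ?thesis .
  qed
  also have "\<dots> \<ge> 0"
  proof (rule divide_nonneg_pos[OF sum_nonneg])
    fix p show "0 \<le> (\<Sum>i = 1..n. \<Sum>j = 1..n. \<sigma> p i * M i j * \<sigma> p j)"
      using psd unfolding psd_on_def by blast
  qed simp
  finally show ?thesis .
qed

theorem theorem2:
  fixes n :: nat and d :: "nat \<Rightarrow> nat" and A :: "nat \<Rightarrow> nat \<Rightarrow> real"
    and alpha mu :: "nat \<Rightarrow> real" and T H :: "nat set set"
  assumes gen: "generating_deg_seq n d"
    and A_sym: "\<forall>i\<in>{1..n}. \<forall>j\<in>{1..n}. A i j = A j i"
    and A_nonneg: "\<forall>i\<in>{1..n}. \<forall>j\<in>{1..n}. A i j \<ge> 0"
    and mu_nonneg: "\<forall>i\<in>{1..n}. mu i \<ge> 0"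
    and mono: "\<forall>i\<in>{1..n}. \<forall>j\<in>{1..n}. 1 < d i \<and> d i < d j \<longrightarrow> mu i \<le> mu j"
    and psd: "psd_on n (\<lambda>i j. (if i = j then alpha i else 0) + mu i * mu j - A i j)"
    and T: "T \<in> trees_deg n d"
    and H: "H \<in> huffman_trees n mu d"
  shows "cost n A T \<ge> LB n A alpha mu H"
proof -
  define c where "c = (real n - 1) / 2"
  have Tt: "tree {1..n} T" using T unfolding trees_deg_def by (auto simp: is_tree_tree)
  have tr: "(\<Sum>i=1..n. \<Sum>j=1..n. Pmat n T i j * ((if i = j then alpha i else 0) + mu i * mu j - A i j)) \<ge> 0"
    using trace_nonneg[OF Tt psd] by simp
  have split: "(\<Sum>i=1..n. \<Sum>j=1..n. Pmat n T i j * ((if i = j then alpha i else 0) + mu i * mu j - A i j))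
     = c * (\<Sum>i=1..n. alpha i) + quad_form n mu (Pmat n T) - c * (\<Sum>i=1..n. \<Sum>j=1..n. A i j) + cost n A T"
  proof -
    have pw: "Pmat n T i j * ((if i = j then alpha i else 0) + mu i * mu j - A i j)
       = Pmat n T i j * (if i = j then alpha i else 0) + mu i * Pmat n T i j * mu j
         - c * A i j + A i j * real (tdist T i j)" for i j
      unfolding Pmat_def c_def by (simp add: algebra_simps)
    have "(\<Sum>i=1..n. \<Sum>j=1..n. Pmat n T i j * ((if i = j then alpha i else 0) + mu i * mu j - A i j))
      = (\<Sum>i=1..n. \<Sum>j=1..n. Pmat n T i j * (if i = j then alpha i else 0))
        + (\<Sum>i=1..n. \<Sum>j=1..n. mu i * Pmat n T i j * mu j)
        - (\<Sum>i=1..n. \<Sum>j=1..n. c * A i j) + (\<Sum>i=1..n. \<Sum>j=1..n. A i j * real (tdist T i j))"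
      by (simp only: pw sum.distrib sum_subtractf)
    also have "(\<Sum>i=1..n. \<Sum>j=1..n. Pmat n T i j * (if i = j then alpha i else 0)) = c * (\<Sum>i=1..n. alpha i)"
    proof -
      have "(\<Sum>i=1..n. \<Sum>j=1..n. Pmat n T i j * (if i = j then alpha i else 0)) = (\<Sum>i=1..n. Pmat n T i i * alpha i)"
        by (intro sum.cong refl) (simp add: if_distrib sum.delta cong: if_cong)
      also have "\<dots> = (\<Sum>i=1..n. c * alpha i)" unfolding Pmat_def c_def by simp
      finally show ?thesis by (simp only: sum_distrib_left)
    qed
    also have "(\<Sum>i=1..n. \<Sum>j=1..n. c * A i j) = c * (\<Sum>i=1..n. \<Sum>j=1..n. A i j)"
      by (simp only: sum_distrib_left)
    finally show ?thesis unfolding quad_form_def cost_def by (simp add: mult.assoc)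
  qed
  have qf: "quad_form n mu (Pmat n E) = c * (\<Sum>i=1..n. mu i) ^ 2 - WIE {1..n} mu E" for E
  proof -
    have "quad_form n mu (Pmat n E) = (\<Sum>i=1..n. \<Sum>j=1..n. c * (mu i * mu j) - mu i * mu j * real (tdist E i j))"
      unfolding quad_form_def Pmat_def c_def by (intro sum.cong refl) (simp add: algebra_simps)
    also have "\<dots> = c * (\<Sum>i=1..n. mu i) ^ 2 - WIE {1..n} mu E"
    proof -
      have "(\<Sum>i=1..n. \<Sum>j=1..n. c * (mu i * mu j) - mu i * mu j * real (tdist E i j))
          = c * (\<Sum>i=1..n. \<Sum>j=1..n. mu i * mu j) - WIE {1..n} mu E"
        unfolding WIE_def by (simp only: sum_subtractf sum_distrib_left)
      also have "(\<Sum>i=1..n. \<Sum>j=1..n. mu i * mu j) = (\<Sum>i=1..n. mu i) ^ 2"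
        by (simp only: power2_eq_square sum_product)
      finally show ?thesis .
    qed
    finally show ?thesis .
  qed
  have "WIE {1..n} mu H \<le> WIE {1..n} mu T" using OPT_frozen[OF mu_nonneg mono T H] .
  then have "quad_form n mu (Pmat n T) \<le> quad_form n mu (Pmat n H)" using qf by simp
  then show ?thesis using tr split unfolding LB_def c_def by linarith
qed


end
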